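(* Let $P:\mathcal C^{op}\to\mathbf{Heyt}$ be a weak hyperdoctrine with comprehensive diagonals and let $A$ be an object of $\mathcal C$. Then $P$ satisfies the Axiom of Choice on $A$ if and only if its elementary quotient completion $\overline P$ satisfies the Axiom of Choice on $(A,\delta_A)$.
   Context: An elementary doctrine on $\mathcal C$ with finite products is $P:\mathcal C^{op}\to\mathbf{InfSL}$ with equality predicates $\delta_A\in P(A\times A)$ (written $a=_Aa'$) such that $\alpha\mapsto P_{\langle pr_1,pr_2\rangle}(\alpha)\wedge P_{\langle pr_2,pr_3\rangle}(\delta_A)$ is left adjoint to $P_{\langle pr_1,pr_2,pr_2\rangle}$. A weak hyperdoctrine is an elementary doctrine such that $\mathcal C$ is weakly cartesian closed (for all $A,B$ there is $W$ and $ev:W\times A\to B$ such that every $C\times A\to B$ is $ev\circ(g\times\mathrm{id}_A)$ for some, not necessarily unique, $g$), the fibres are Heyting algebras with Heyting reindexing, and reindexing along projections has left and right adjoints $\exists,\forall$ satisfying Beck–Chevalley. Comprehensive diagonals: $f,g:X\to Y$ are equal whenever $x:X\mid\top\vdash f(x)=_Yg(x)$. The Axiom of Choice holds on $A$ if for every object $B$ and $R\in P(A\times B)$: $\forall a:A.\exists b:B.R(a,b)\vdash\exists f:W.\forall a:A.R(a,ev(f,a))$ with $ev:W\times A\to B$ a weak evaluation. The elementary quotient completion $\overline P:\mathcal Q_P^{op}\to\mathbf{InfSL}$ has objects $(A,\rho)$ with $\rho$ a $P$-equivalence relation, arrows equivalence classes of $\rho$-$\sigma$-preserving arrows (with $f\sim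 g$ iff $\rho(a,a')\vdash\sigma(f(a),g(a'))$), and $\overline P(A,\rho)=\{\alpha\in P(A)\mid\alpha(a)\wedge\rho(a,a')\vdash\alpha(a')\}$. *)

theory Defs
  imports Main
begin

section \<open>Categories with (chosen) finite products\<close>

record ('o,'a) cat =
  cObj  :: "'o set"
  cArr  :: "'a set"
  cdom  :: "'a \<Rightarrow> 'o"
  ccod  :: "'a \<Rightarrow> 'o"
  ccomp :: "'a \<Rightarrow> 'a \<Rightarrow> 'a"   (* ccomp g f = g o f *)
  cid   :: "'o \<Rightarrow> 'a"
  cprod :: "'o \<Rightarrow> 'o \<Rightarrow> 'o"
  cpr1  :: "'o \<Rightarrow> 'o \<Rightarrow> 'a"
  cpr2  :: "'o \<Rightarrow> 'o \<Rightarrow> 'a"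
  cpair :: "'a \<Rightarrow> 'a \<Rightarrow> 'a"
  cterm :: "'o"
  cbang :: "'o \<Rightarrow> 'a"

definition hom :: "('o,'a) cat \<Rightarrow> 'o \<Rightarrow> 'o \<Rightarrow> 'a set" where
  "hom C X Y = {f \<in> cArr C. cdom C f = X \<and> ccod C f = Y}"

definition cat_fp :: "('o,'a) cat \<Rightarrow> bool" where
  "cat_fp C \<longleftrightarrow>
    (\<forall>f\<in>cArr C. cdom C f \<in> cObj C \<and> ccod C f \<in> cObj C) \<and>
    (\<forall>X\<in>cObj C. cid C X \<in> hom C X X) \<and>
    (\<forall>X Y Z f g. f \<in> hom C X Y \<longrightarrow> g \<in> hom C Y Z \<longrightarrow> ccomp C g f \<in> hom C X Z) \<and>
    (\<forall>X Y f. f \<in> hom C X Y \<longrightarrow> ccomp C f (cid C X) = f \<and> ccomp C (cid C Y) f = f) \<and>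
    (\<forall>f g h. f \<in> cArr C \<longrightarrow> g \<in> cArr C \<longrightarrow> h \<in> cArr C \<longrightarrow>
        ccod C f = cdom C g \<longrightarrow> ccod C g = cdom C h \<longrightarrow>
        ccomp C h (ccomp C g f) = ccomp C (ccomp C h g) f) \<and>
    cterm C \<in> cObj C \<and>
    (\<forall>X\<in>cObj C. cbang C X \<in> hom C X (cterm C) \<and> (\<forall>f\<in>hom C X (cterm C). f = cbang C X)) \<and>
    (\<forall>X\<in>cObj C. \<forall>Y\<in>cObj C.
        cprod C X Y \<in> cObj C \<and>
        cpr1 C X Y \<in> hom C (cprod C X Y) X \<and> cpr2 C X Y \<in> hom C (cprod C X Y) Y \<and>
        (\<forall>Z f g. f \<in> hom C Z X \<longrightarrow> g \<in> hom C Z Y \<longrightarrow>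
            cpair C f g \<in> hom C Z (cprod C X Y) \<and>
            ccomp C (cpr1 C X Y) (cpair C f g) = f \<and> ccomp C (cpr2 C X Y) (cpair C f g) = g) \<and>
        (\<forall>Z h. h \<in> hom C Z (cprod C X Y) \<longrightarrow>
            h = cpair C (ccomp C (cpr1 C X Y) h) (ccomp C (cpr2 C X Y) h)))"

definition ptimes :: "('o,'a) cat \<Rightarrow> 'o \<Rightarrow> 'o \<Rightarrow> 'a \<Rightarrow> 'a \<Rightarrow> 'a" where
  "ptimes C A B f g = cpair C (ccomp C f (cpr1 C A B)) (ccomp C g (cpr2 C A B))"

definition weak_eval :: "('o,'a) cat \<Rightarrow> 'o \<Rightarrow> 'o \<Rightarrow> 'o \<Rightarrow> 'a \<Rightarrow> bool" where
  "weak_eval C A B W ev \<longleftrightarrow> W \<in> cObj C \<and> ev \<in> hom C (cprod C W A) B \<and>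
     (\<forall>Z\<in>cObj C. \<forall>h\<in>hom C (cprod C Z A) B. \<exists>g\<in>hom C Z W.
        h = ccomp C ev (ptimes C Z A g (cid C A)))"

definition weakly_cc :: "('o,'a) cat \<Rightarrow> bool" where
  "weakly_cc C \<longleftrightarrow> (\<forall>A\<in>cObj C. \<forall>B\<in>cObj C. \<exists>W ev. weak_eval C A B W ev)"

section \<open>Doctrines (fibres given as posets, reindexing contravariant)\<close>

record ('o,'a,'p) doctrine =
  dPr  :: "'o \<Rightarrow> 'p set"
  dle  :: "'o \<Rightarrow> 'p \<Rightarrow> 'p \<Rightarrow> bool"
  dre  :: "'a \<Rightarrow> 'p \<Rightarrow> 'p"
  deq  :: "'o \<Rightarrow> 'p"              (* equality predicate delta_A in P(A x A) *)

definition ptop :: "('o,'a,'p) doctrine \<Rightarrow> 'o \<Rightarrow> 'p" where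
  "ptop D X = (THE t. t \<in> dPr D X \<and> (\<forall>a\<in>dPr D X. dle D X a t))"
definition pbot :: "('o,'a,'p) doctrine \<Rightarrow> 'o \<Rightarrow> 'p" where
  "pbot D X = (THE t. t \<in> dPr D X \<and> (\<forall>a\<in>dPr D X. dle D X t a))"
definition pmeet :: "('o,'a,'p) doctrine \<Rightarrow> 'o \<Rightarrow> 'p \<Rightarrow> 'p \<Rightarrow> 'p" where
  "pmeet D X a b = (THE c. c \<in> dPr D X \<and>
     (\<forall>x\<in>dPr D X. dle D X x c \<longleftrightarrow> dle D X x a \<and> dle D X x b))"
definition pjoin :: "('o,'a,'p) doctrine \<Rightarrow> 'o \<Rightarrow> 'p \<Rightarrow> 'p \<Rightarrow> 'p" where
  "pjoin D X a b = (THE c. c \<in> dPr D X \<and>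
     (\<forall>x\<in>dPr D X. dle D X c x \<longleftrightarrow> dle D X a x \<and> dle D X b x))"
definition pimp :: "('o,'a,'p) doctrine \<Rightarrow> 'o \<Rightarrow> 'p \<Rightarrow> 'p \<Rightarrow> 'p" where
  "pimp D X a b = (THE c. c \<in> dPr D X \<and>
     (\<forall>x\<in>dPr D X. dle D X x c \<longleftrightarrow> dle D X (pmeet D X x a) b))"

definition infsl_fibre :: "('o,'a,'p) doctrine \<Rightarrow> 'o \<Rightarrow> bool" where
  "infsl_fibre D X \<longleftrightarrow>
    (\<forall>a\<in>dPr D X. dle D X a a) \<and>
    (\<forall>a\<in>dPr D X. \<forall>b\<in>dPr D X. \<forall>c\<in>dPr D X. dle D X a b \<longrightarrow> dle D X b c \<longrightarrow> dle D X a c) \<and>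
    (\<forall>a\<in>dPr D X. \<forall>b\<in>dPr D X. dle D X a b \<longrightarrow> dle D X b a \<longrightarrow> a = b) \<and>
    (\<exists>t\<in>dPr D X. \<forall>a\<in>dPr D X. dle D X a t) \<and>
    (\<forall>a\<in>dPr D X. \<forall>b\<in>dPr D X. \<exists>c\<in>dPr D X.
        \<forall>x\<in>dPr D X. dle D X x c \<longleftrightarrow> dle D X x a \<and> dle D X x b)"

definition heyting_fibre :: "('o,'a,'p) doctrine \<Rightarrow> 'o \<Rightarrow> bool" where
  "heyting_fibre D X \<longleftrightarrow> infsl_fibre D X \<and>
    (\<exists>t\<in>dPr D X. \<forall>a\<in>dPr D X. dle D X t a) \<and>
    (\<forall>a\<in>dPr D X. \<forall>b\<in>dPr D X. \<exists>c\<in>dPr D X.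
        \<forall>x\<in>dPr D X. dle D X c x \<longleftrightarrow> dle D X a x \<and> dle D X b x) \<and>
    (\<forall>a\<in>dPr D X. \<forall>b\<in>dPr D X. \<exists>c\<in>dPr D X.
        \<forall>x\<in>dPr D X. dle D X x c \<longleftrightarrow> dle D X (pmeet D X x a) b)"

definition doctrine :: "('o,'a) cat \<Rightarrow> ('o,'a,'p) doctrine \<Rightarrow> bool" where
  "doctrine C D \<longleftrightarrow> cat_fp C \<and>
    (\<forall>X\<in>cObj C. infsl_fibre D X) \<and>
    (\<forall>X Y f. f \<in> hom C X Y \<longrightarrow>
        (\<forall>a\<in>dPr D Y. dre D f a \<in> dPr D X) \<and>
        (\<forall>a\<in>dPr D Y. \<forall>b\<in>dPr D Y. dle D Y a b \<longrightarrow> dle D X (dre D f a) (dre D f b)) \<and>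
        dre D f (ptop D Y) = ptop D X \<and>
        (\<forall>a\<in>dPr D Y. \<forall>b\<in>dPr D Y. dre D f (pmeet D Y a b) = pmeet D X (dre D f a) (dre D f b))) \<and>
    (\<forall>X\<in>cObj C. \<forall>a\<in>dPr D X. dre D (cid C X) a = a) \<and>
    (\<forall>X Y Z f g. f \<in> hom C X Y \<longrightarrow> g \<in> hom C Y Z \<longrightarrow>
        (\<forall>a\<in>dPr D Z. dre D (ccomp C g f) a = dre D f (dre D g a)))"

text \<open>Elementary doctrine: for all X, A, the map
  alpha |-> P_<pr1,pr2>(alpha) /\ P_<pr2,pr3>(delta_A) : P(X x A) -> P((X x A) x A)
  is left adjoint to P_<pr1,pr2,pr2>.\<close>
definition elementary :: "('o,'a) cat \<Rightarrow> ('o,'a,'p) doctrine \<Rightarrow> bool" where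
  "elementary C D \<longleftrightarrow> doctrine C D \<and>
    (\<forall>A\<in>cObj C. deq D A \<in> dPr D (cprod C A A)) \<and>
    (\<forall>X\<in>cObj C. \<forall>A\<in>cObj C.
      (let XA = cprod C X A; XAA = cprod C XA A in
       \<forall>\<alpha>\<in>dPr D XA. \<forall>\<beta>\<in>dPr D XAA.
         dle D XAA (pmeet D XAA (dre D (cpr1 C XA A) \<alpha>)
                      (dre D (cpair C (ccomp C (cpr2 C X A) (cpr1 C XA A)) (cpr2 C XA A)) (deq D A))) \<beta>
         \<longleftrightarrow> dle D XA \<alpha> (dre D (cpair C (cid C XA) (cpr2 C X A)) \<beta>)))"

text \<open>Left and right adjoints to reindexing along f (unique when they exist, fibres being posets).\<close>
definition exL :: "('o,'a) cat \<Rightarrow> ('o,'a,'p) doctrine \<Rightarrow> 'a \<Rightarrow> 'p \<Rightarrow> 'p" where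
  "exL C D f \<alpha> = (THE \<beta>. \<beta> \<in> dPr D (ccod C f) \<and>
     (\<forall>\<gamma>\<in>dPr D (ccod C f). dle D (ccod C f) \<beta> \<gamma> \<longleftrightarrow> dle D (cdom C f) \<alpha> (dre D f \<gamma>)))"
definition allL :: "('o,'a) cat \<Rightarrow> ('o,'a,'p) doctrine \<Rightarrow> 'a \<Rightarrow> 'p \<Rightarrow> 'p" where
  "allL C D f \<alpha> = (THE \<beta>. \<beta> \<in> dPr D (ccod C f) \<and>
     (\<forall>\<gamma>\<in>dPr D (ccod C f). dle D (ccod C f) \<gamma> \<beta> \<longleftrightarrow> dle D (cdom C f) (dre D f \<gamma>) \<alpha>))"
definition has_exL :: "('o,'a) cat \<Rightarrow> ('o,'a,'p) doctrine \<Rightarrow> 'a \<Rightarrow> bool" where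
  "has_exL C D f \<longleftrightarrow> (\<forall>\<alpha>\<in>dPr D (cdom C f). \<exists>\<beta>\<in>dPr D (ccod C f).
     \<forall>\<gamma>\<in>dPr D (ccod C f). dle D (ccod C f) \<beta> \<gamma> \<longleftrightarrow> dle D (cdom C f) \<alpha> (dre D f \<gamma>))"
definition has_allL :: "('o,'a) cat \<Rightarrow> ('o,'a,'p) doctrine \<Rightarrow> 'a \<Rightarrow> bool" where
  "has_allL C D f \<longleftrightarrow> (\<forall>\<alpha>\<in>dPr D (cdom C f). \<exists>\<beta>\<in>dPr D (ccod C f).
     \<forall>\<gamma>\<in>dPr D (ccod C f). dle D (ccod C f) \<gamma> \<beta> \<longleftrightarrow> dle D (cdom C f) (dre D f \<gamma>) \<alpha>)"

definition weak_hyperdoctrine :: "('o,'a) cat \<Rightarrow> ('o,'a,'p) doctrine \<Rightarrow> bool" where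
  "weak_hyperdoctrine C D \<longleftrightarrow> elementary C D \<and> weakly_cc C \<and>
    (\<forall>X\<in>cObj C. heyting_fibre D X) \<and>
    (\<forall>X Y f. f \<in> hom C X Y \<longrightarrow>
        dre D f (pbot D Y) = pbot D X \<and>
        (\<forall>a\<in>dPr D Y. \<forall>b\<in>dPr D Y.
            dre D f (pjoin D Y a b) = pjoin D X (dre D f a) (dre D f b) \<and>
            dre D f (pimp D Y a b) = pimp D X (dre D f a) (dre D f b))) \<and>
    (\<forall>X\<in>cObj C. \<forall>Y\<in>cObj C.
        has_exL C D (cpr1 C X Y) \<and> has_allL C D (cpr1 C X Y) \<and>
        has_exL C D (cpr2 C X Y) \<and> has_allL C D (cpr2 C X Y)) \<and>
    (\<forall>X\<in>cObj C. \<forall>Y\<in>cObj C. \<forall>Z f. f \<in> hom C Z X \<longrightarrow>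
       (\<forall>\<alpha>\<in>dPr D (cprod C X Y).
          dre D f (exL C D (cpr1 C X Y) \<alpha>) = exL C D (cpr1 C Z Y) (dre D (ptimes C Z Y f (cid C Y)) \<alpha>) \<and>
          dre D f (allL C D (cpr1 C X Y) \<alpha>) = allL C D (cpr1 C Z Y) (dre D (ptimes C Z Y f (cid C Y)) \<alpha>))) \<and>
    (\<forall>X\<in>cObj C. \<forall>Y\<in>cObj C. \<forall>Z f. f \<in> hom C Z Y \<longrightarrow>
       (\<forall>\<alpha>\<in>dPr D (cprod C X Y).
          dre D f (exL C D (cpr2 C X Y) \<alpha>) = exL C D (cpr2 C X Z) (dre D (ptimes C X Z (cid C X) f) \<alpha>) \<and>
          dre D f (allL C D (cpr2 C X Y) \<alpha>) = allL C D (cpr2 C X Z) (dre D (ptimes C X Z (cid C X) f) \<alpha>)))"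

definition comprehensive_diagonals :: "('o,'a) cat \<Rightarrow> ('o,'a,'p) doctrine \<Rightarrow> bool" where
  "comprehensive_diagonals C D \<longleftrightarrow>
    (\<forall>X Y f g. f \<in> hom C X Y \<longrightarrow> g \<in> hom C X Y \<longrightarrow>
       dle D X (ptop D X) (dre D (cpair C f g) (deq D Y)) \<longrightarrow> f = g)"

text \<open>Axiom of Choice on A, as a sequent in the fibre over the terminal object:
  forall a:A. exists b:B. R(a,b) |- exists f:W. forall a:A. R(a, ev(f,a)),
  for every B, R in P(A x B) and every weak evaluation ev : W x A -> B.\<close>
definition AC :: "('o,'a) cat \<Rightarrow> ('o,'a,'p) doctrine \<Rightarrow> 'o \<Rightarrow> bool" where
  "AC C D A \<longleftrightarrow> (\<forall>B\<in>cObj C. \<forall>R\<in>dPr D (cprod C A B). \<forall>W ev. weak_eval C A B W ev \<longrightarrow>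
     dle D (cterm C)
       (allL C D (cbang C A) (exL C D (cpr1 C A B) R))
       (exL C D (cbang C W) (allL C D (cpr1 C W A) (dre D (cpair C (cpr2 C W A) ev) R))))"

section \<open>Elementary quotient completion\<close>

definition per_equiv :: "('o,'a) cat \<Rightarrow> ('o,'a,'p) doctrine \<Rightarrow> 'o \<Rightarrow> 'p \<Rightarrow> bool" where
  "per_equiv C D A \<rho> \<longleftrightarrow> \<rho> \<in> dPr D (cprod C A A) \<and>
    dle D A (ptop D A) (dre D (cpair C (cid C A) (cid C A)) \<rho>) \<and>
    dle D (cprod C A A) \<rho> (dre D (cpair C (cpr2 C A A) (cpr1 C A A)) \<rho>) \<and>
    (let AA = cprod C A A; AAA = cprod C AA A;
         p1 = ccomp C (cpr1 C A A) (cpr1 C AA A);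
         p2 = ccomp C (cpr2 C A A) (cpr1 C AA A);
         p3 = cpr2 C AA A in
     dle D AAA (pmeet D AAA (dre D (cpair C p1 p2) \<rho>) (dre D (cpair C p2 p3) \<rho>))
               (dre D (cpair C p1 p3) \<rho>))"

definition qobjs :: "('o,'a) cat \<Rightarrow> ('o,'a,'p) doctrine \<Rightarrow> ('o \<times> 'p) set" where
  "qobjs C D = {(A, \<rho>). A \<in> cObj C \<and> per_equiv C D A \<rho>}"

definition qrel :: "('o,'a) cat \<Rightarrow> ('o,'a,'p) doctrine \<Rightarrow> 'o \<times> 'p \<Rightarrow> 'o \<times> 'p \<Rightarrow> 'a \<Rightarrow> 'a \<Rightarrow> bool" where
  "qrel C D X Y f g \<longleftrightarrow> dle D (cprod C (fst X) (fst X)) (snd X)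
      (dre D (ptimes C (fst X) (fst X) f g) (snd Y))"

definition qpres :: "('o,'a) cat \<Rightarrow> ('o,'a,'p) doctrine \<Rightarrow> 'o \<times> 'p \<Rightarrow> 'o \<times> 'p \<Rightarrow> 'a \<Rightarrow> bool" where
  "qpres C D X Y f \<longleftrightarrow> f \<in> hom C (fst X) (fst Y) \<and> qrel C D X Y f f"

definition qclass :: "('o,'a) cat \<Rightarrow> ('o,'a,'p) doctrine \<Rightarrow> 'o \<times> 'p \<Rightarrow> 'o \<times> 'p \<Rightarrow> 'a \<Rightarrow> 'a set" where
  "qclass C D X Y f = {g. qpres C D X Y g \<and> qrel C D X Y g f}"

definition qarrs :: "('o,'a) cat \<Rightarrow> ('o,'a,'p) doctrine \<Rightarrow> (('o \<times> 'p) \<times> ('o \<times> 'p) \<times> 'a set) set" where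
  "qarrs C D = {(X, Y, S). X \<in> qobjs C D \<and> Y \<in> qobjs C D \<and>
                 (\<exists>f. qpres C D X Y f \<and> S = qclass C D X Y f)}"

definition qrep :: "('o \<times> 'p) \<times> ('o \<times> 'p) \<times> 'a set \<Rightarrow> 'a" where
  "qrep F = (SOME f. f \<in> snd (snd F))"

definition qcomp :: "('o,'a) cat \<Rightarrow> ('o,'a,'p) doctrine \<Rightarrow>
    ('o \<times> 'p) \<times> ('o \<times> 'p) \<times> 'a set \<Rightarrow> ('o \<times> 'p) \<times> ('o \<times> 'p) \<times> 'a set \<Rightarrow> ('o \<times> 'p) \<times> ('o \<times> 'p) \<times> 'a set" where
  "qcomp C D G F = (fst F, fst (snd G), qclass C D (fst F) (fst (snd G)) (ccomp C (qrep G) (qrep F)))"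

definition qid :: "('o,'a) cat \<Rightarrow> ('o,'a,'p) doctrine \<Rightarrow> 'o \<times> 'p \<Rightarrow> ('o \<times> 'p) \<times> ('o \<times> 'p) \<times> 'a set" where
  "qid C D X = (X, X, qclass C D X X (cid C (fst X)))"

definition qprodrel :: "('o,'a) cat \<Rightarrow> ('o,'a,'p) doctrine \<Rightarrow> 'o \<Rightarrow> 'o \<Rightarrow> 'p \<Rightarrow> 'p \<Rightarrow> 'p" where
  "qprodrel C D A B \<rho> \<sigma> = (let P = cprod C A B; PP = cprod C P P in
     pmeet D PP (dre D (ptimes C P P (cpr1 C A B) (cpr1 C A B)) \<rho>)
                (dre D (ptimes C P P (cpr2 C A B) (cpr2 C A B)) \<sigma>))"

definition qprod :: "('o,'a) cat \<Rightarrow> ('o,'a,'p) doctrine \<Rightarrow> 'o \<times> 'p \<Rightarrow> 'o \<times> 'p \<Rightarrow> 'o \<times> 'p" where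
  "qprod C D X Y = (cprod C (fst X) (fst Y), qprodrel C D (fst X) (fst Y) (snd X) (snd Y))"

definition qpr1 :: "('o,'a) cat \<Rightarrow> ('o,'a,'p) doctrine \<Rightarrow> 'o \<times> 'p \<Rightarrow> 'o \<times> 'p \<Rightarrow> ('o \<times> 'p) \<times> ('o \<times> 'p) \<times> 'a set" where
  "qpr1 C D X Y = (qprod C D X Y, X, qclass C D (qprod C D X Y) X (cpr1 C (fst X) (fst Y)))"

definition qpr2 :: "('o,'a) cat \<Rightarrow> ('o,'a,'p) doctrine \<Rightarrow> 'o \<times> 'p \<Rightarrow> 'o \<times> 'p \<Rightarrow> ('o \<times> 'p) \<times> ('o \<times> 'p) \<times> 'a set" where
  "qpr2 C D X Y = (qprod C D X Y, Y, qclass C D (qprod C D X Y) Y (cpr2 C (fst X) (fst Y)))"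

definition qpair :: "('o,'a) cat \<Rightarrow> ('o,'a,'p) doctrine \<Rightarrow>
    ('o \<times> 'p) \<times> ('o \<times> 'p) \<times> 'a set \<Rightarrow> ('o \<times> 'p) \<times> ('o \<times> 'p) \<times> 'a set \<Rightarrow> ('o \<times> 'p) \<times> ('o \<times> 'p) \<times> 'a set" where
  "qpair C D F G = (let Z = fst F; P = qprod C D (fst (snd F)) (fst (snd G)) in
     (Z, P, qclass C D Z P (cpair C (qrep F) (qrep G))))"

definition qterm :: "('o,'a) cat \<Rightarrow> ('o,'a,'p) doctrine \<Rightarrow> 'o \<times> 'p" where
  "qterm C D = (cterm C, deq D (cterm C))"

definition qbang :: "('o,'a) cat \<Rightarrow> ('o,'a,'p) doctrine \<Rightarrow> 'o \<times> 'p \<Rightarrow> ('o \<times> 'p) \<times> ('o \<times> 'p) \<times> 'a set" where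
  "qbang C D X = (X, qterm C D, qclass C D X (qterm C D) (cbang C (fst X)))"

definition qcat :: "('o,'a) cat \<Rightarrow> ('o,'a,'p) doctrine \<Rightarrow> ('o \<times> 'p, ('o \<times> 'p) \<times> ('o \<times> 'p) \<times> 'a set) cat" where
  "qcat C D = \<lparr> cObj = qobjs C D, cArr = qarrs C D, cdom = fst, ccod = (\<lambda>F. fst (snd F)),
     ccomp = qcomp C D, cid = qid C D, cprod = qprod C D, cpr1 = qpr1 C D, cpr2 = qpr2 C D,
     cpair = qpair C D, cterm = qterm C D, cbang = qbang C D \<rparr>"

text \<open>The doctrine overline P on Q_P: descent predicates, order and reindexing from P,
  equality on (A,rho) given by rho.\<close>
definition qdoc :: "('o,'a) cat \<Rightarrow> ('o,'a,'p) doctrine \<Rightarrow> ('o \<times> 'p, ('o \<times> 'p) \<times> ('o \<times> 'p) \<times> 'a set, 'p) doctrine" where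
  "qdoc C D = \<lparr> dPr = (\<lambda>X. {\<alpha> \<in> dPr D (fst X).
        dle D (cprod C (fst X) (fst X))
          (pmeet D (cprod C (fst X) (fst X)) (dre D (cpr1 C (fst X) (fst X)) \<alpha>) (snd X))
          (dre D (cpr2 C (fst X) (fst X)) \<alpha>)}),
     dle = (\<lambda>X. dle D (fst X)),
     dre = (\<lambda>F. dre D (qrep F)),
     deq = snd \<rparr>"

end

theory Submission
  imports Defs
begin


locale WH =
  fixes C :: "('o,'a) cat" and D :: "('o,'a,'p) doctrine"
  assumes WH: "weak_hyperdoctrine C D" and CD: "comprehensive_diagonals C D"
begin

lemma elem: "elementary C D" using WH unfolding weak_hyperdoctrine_def by simp
lemma doc: "doctrine C D" using elem unfolding elementary_def by simp
lemma cfp: "cat_fp C" using doc unfolding doctrine_def by simp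

lemmas cfp_all = cfp[unfolded cat_fp_def]
lemmas cf1 = cfp_all[THEN conjunct1]
lemmas cf2 = cfp_all[THEN conjunct2, THEN conjunct1]
lemmas cf3 = cfp_all[THEN conjunct2, THEN conjunct2, THEN conjunct1]
lemmas cf4 = cfp_all[THEN conjunct2, THEN conjunct2, THEN conjunct2, THEN conjunct1]
lemmas cf5 = cfp_all[THEN conjunct2, THEN conjunct2, THEN conjunct2, THEN conjunct2, THEN conjunct1]
lemmas cf6 = cfp_all[THEN conjunct2, THEN conjunct2, THEN conjunct2, THEN conjunct2, THEN conjunct2, THEN conjunct1]
lemmas cf7 = cfp_all[THEN conjunct2, THEN conjunct2, THEN conjunct2, THEN conjunct2, THEN conjunct2, THEN conjunct2, THEN conjunct1]
lemmas cf8 = cfp_all[THEN conjunct2, THEN conjunct2, THEN conjunct2, THEN conjunct2, THEN conjunct2, THEN conjunct2, THEN conjunct2]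

lemma arr_dom[simp]: "f \<in> cArr C \<Longrightarrow> cdom C f \<in> cObj C"
  using cf1 by blast
lemma arr_cod[simp]: "f \<in> cArr C \<Longrightarrow> ccod C f \<in> cObj C"
  using cf1 by blast
lemma hom_iff: "f \<in> hom C X Y \<longleftrightarrow> f \<in> cArr C \<and> cdom C f = X \<and> ccod C f = Y"
  unfolding hom_def by simp

lemma id_arr[simp]: "X \<in> cObj C \<Longrightarrow> cid C X \<in> cArr C"
  and id_dom[simp]: "X \<in> cObj C \<Longrightarrow> cdom C (cid C X) = X"
  and id_cod[simp]: "X \<in> cObj C \<Longrightarrow> ccod C (cid C X) = X"
  using cf2 unfolding hom_def by auto

lemma comp_hom: "f \<in> cArr C \<Longrightarrow> g \<in> cArr C \<Longrightarrow> ccod C f = cdom C g \<Longrightarrow>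
   ccomp C g f \<in> hom C (cdom C f) (ccod C g)"
  using cf3 unfolding hom_def by blast
lemma comp_arr[simp]: "f \<in> cArr C \<Longrightarrow> g \<in> cArr C \<Longrightarrow> ccod C f = cdom C g \<Longrightarrow> ccomp C g f \<in> cArr C"
  and comp_dom[simp]: "f \<in> cArr C \<Longrightarrow> g \<in> cArr C \<Longrightarrow> ccod C f = cdom C g \<Longrightarrow> cdom C (ccomp C g f) = cdom C f"
  and comp_cod[simp]: "f \<in> cArr C \<Longrightarrow> g \<in> cArr C \<Longrightarrow> ccod C f = cdom C g \<Longrightarrow> ccod C (ccomp C g f) = ccod C g"
  using comp_hom[of f g] unfolding hom_def by auto

lemma comp_id_r[simp]: "f \<in> cArr C \<Longrightarrow> X = cdom C f \<Longrightarrow> ccomp C f (cid C X) = f"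
  and comp_id_l[simp]: "f \<in> cArr C \<Longrightarrow> Y = ccod C f \<Longrightarrow> ccomp C (cid C Y) f = f"
  using cf4 unfolding hom_def by auto

lemma comp_assoc[simp]: "f \<in> cArr C \<Longrightarrow> g \<in> cArr C \<Longrightarrow> h \<in> cArr C \<Longrightarrow>
  ccod C f = cdom C g \<Longrightarrow> ccod C g = cdom C h \<Longrightarrow> ccomp C (ccomp C h g) f = ccomp C h (ccomp C g f)"
  by (rule cf5[rule_format, symmetric])

lemma term_obj[simp]: "cterm C \<in> cObj C" using cf6 by blast
lemma bang_arr[simp]: "X \<in> cObj C \<Longrightarrow> cbang C X \<in> cArr C"
  and bang_dom[simp]: "X \<in> cObj C \<Longrightarrow> cdom C (cbang C X) = X"
  and bang_cod[simp]: "X \<in> cObj C \<Longrightarrow> ccod C (cbang C X) = cterm C"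
  using cf7 unfolding hom_def by auto
lemma bang_uniq: "f \<in> cArr C \<Longrightarrow> ccod C f = cterm C \<Longrightarrow> f = cbang C (cdom C f)"
  using cf7 arr_dom unfolding hom_def by blast
lemma bang_comp[simp]: "f \<in> cArr C \<Longrightarrow> Y = ccod C f \<Longrightarrow> ccomp C (cbang C Y) f = cbang C (cdom C f)"
proof -
  assume a: "f \<in> cArr C" "Y = ccod C f"
  have "ccomp C (cbang C Y) f \<in> cArr C" "ccod C (ccomp C (cbang C Y) f) = cterm C"
    "cdom C (ccomp C (cbang C Y) f) = cdom C f" using a by simp_all
  then show ?thesis using bang_uniq by metis
qed

lemma prod_obj[simp]: "X \<in> cObj C \<Longrightarrow> Y \<in> cObj C \<Longrightarrow> cprod C X Y \<in> cObj C"
  using cf8 by blast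
lemma pr1_arr[simp]: "X \<in> cObj C \<Longrightarrow> Y \<in> cObj C \<Longrightarrow> cpr1 C X Y \<in> cArr C"
  and pr1_dom[simp]: "X \<in> cObj C \<Longrightarrow> Y \<in> cObj C \<Longrightarrow> cdom C (cpr1 C X Y) = cprod C X Y"
  and pr1_cod[simp]: "X \<in> cObj C \<Longrightarrow> Y \<in> cObj C \<Longrightarrow> ccod C (cpr1 C X Y) = X"
  and pr2_arr[simp]: "X \<in> cObj C \<Longrightarrow> Y \<in> cObj C \<Longrightarrow> cpr2 C X Y \<in> cArr C"
  and pr2_dom[simp]: "X \<in> cObj C \<Longrightarrow> Y \<in> cObj C \<Longrightarrow> cdom C (cpr2 C X Y) = cprod C X Y"
  and pr2_cod[simp]: "X \<in> cObj C \<Longrightarrow> Y \<in> cObj C \<Longrightarrow> ccod C (cpr2 C X Y) = Y"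
  using cf8 unfolding hom_def by auto

lemma cf8_pair: "X \<in> cObj C \<Longrightarrow> Y \<in> cObj C \<Longrightarrow> f \<in> hom C Z X \<Longrightarrow> g \<in> hom C Z Y \<Longrightarrow>
            cpair C f g \<in> hom C Z (cprod C X Y) \<and>
            ccomp C (cpr1 C X Y) (cpair C f g) = f \<and> ccomp C (cpr2 C X Y) (cpair C f g) = g"
proof -
  assume a: "X \<in> cObj C" "Y \<in> cObj C" "f \<in> hom C Z X" "g \<in> hom C Z Y"
  note cf8[rule_format, OF a(1,2)]
  note this[THEN conjunct2, THEN conjunct2, THEN conjunct2, THEN conjunct1, rule_format, OF a(3,4)]
  then show ?thesis .
qed
lemma cf8_eta: "X \<in> cObj C \<Longrightarrow> Y \<in> cObj C \<Longrightarrow> h \<in> hom C Z (cprod C X Y) \<Longrightarrow>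
            h = cpair C (ccomp C (cpr1 C X Y) h) (ccomp C (cpr2 C X Y) h)"
proof -
  assume a: "X \<in> cObj C" "Y \<in> cObj C" "h \<in> hom C Z (cprod C X Y)"
  note cf8[rule_format, OF a(1,2)]
  note this[THEN conjunct2, THEN conjunct2, THEN conjunct2, THEN conjunct2, rule_format, OF a(3)]
  then show ?thesis .
qed

lemma pair_props: "f \<in> cArr C \<Longrightarrow> g \<in> cArr C \<Longrightarrow> cdom C f = cdom C g \<Longrightarrow>
  cpair C f g \<in> hom C (cdom C f) (cprod C (ccod C f) (ccod C g)) \<and>
  ccomp C (cpr1 C (ccod C f) (ccod C g)) (cpair C f g) = f \<and>
  ccomp C (cpr2 C (ccod C f) (ccod C g)) (cpair C f g) = g"
  by (rule cf8_pair) (simp_all add: hom_def)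

lemma pair_arr[simp]: "f \<in> cArr C \<Longrightarrow> g \<in> cArr C \<Longrightarrow> cdom C f = cdom C g \<Longrightarrow> cpair C f g \<in> cArr C"
  and pair_dom[simp]: "f \<in> cArr C \<Longrightarrow> g \<in> cArr C \<Longrightarrow> cdom C f = cdom C g \<Longrightarrow> cdom C (cpair C f g) = cdom C f"
  and pair_cod[simp]: "f \<in> cArr C \<Longrightarrow> g \<in> cArr C \<Longrightarrow> cdom C f = cdom C g \<Longrightarrow> ccod C (cpair C f g) = cprod C (ccod C f) (ccod C g)"
  using pair_props[of f g] unfolding hom_def by auto

lemma pr1_pair[simp]: "f \<in> cArr C \<Longrightarrow> g \<in> cArr C \<Longrightarrow> cdom C f = cdom C g \<Longrightarrow> X = ccod C f \<Longrightarrow> Y = ccod C g \<Longrightarrow>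
   ccomp C (cpr1 C X Y) (cpair C f g) = f"
  and pr2_pair[simp]: "f \<in> cArr C \<Longrightarrow> g \<in> cArr C \<Longrightarrow> cdom C f = cdom C g \<Longrightarrow> X = ccod C f \<Longrightarrow> Y = ccod C g \<Longrightarrow>
   ccomp C (cpr2 C X Y) (cpair C f g) = g"
  using pair_props[of f g] by auto

lemma pair_eta_gen: "h \<in> cArr C \<Longrightarrow> ccod C h = cprod C X Y \<Longrightarrow> X \<in> cObj C \<Longrightarrow> Y \<in> cObj C \<Longrightarrow>
   cpair C (ccomp C (cpr1 C X Y) h) (ccomp C (cpr2 C X Y) h) = h"
  by (rule cf8_eta[symmetric]) (simp_all add: hom_def)

lemma pair_eta[simp]: "h \<in> cArr C \<Longrightarrow> ccod C h = cprod C X Y \<Longrightarrow> X \<in> cObj C \<Longrightarrow> Y \<in> cObj C \<Longrightarrow>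
   cpair C (ccomp C (cpr1 C X Y) h) (ccomp C (cpr2 C X Y) h) = h"
  by (rule pair_eta_gen)

lemma pair_eta_id[simp]: "X \<in> cObj C \<Longrightarrow> Y \<in> cObj C \<Longrightarrow> cpair C (cpr1 C X Y) (cpr2 C X Y) = cid C (cprod C X Y)"
  using pair_eta_gen[of "cid C (cprod C X Y)" X Y] by simp

lemma pair_comp[simp]: "f \<in> cArr C \<Longrightarrow> g \<in> cArr C \<Longrightarrow> cdom C f = cdom C g \<Longrightarrow> h \<in> cArr C \<Longrightarrow> ccod C h = cdom C f \<Longrightarrow>
  ccomp C (cpair C f g) h = cpair C (ccomp C f h) (ccomp C g h)"
proof -
  assume a: "f \<in> cArr C" "g \<in> cArr C" "cdom C f = cdom C g" "h \<in> cArr C" "ccod C h = cdom C f"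
  let ?k = "ccomp C (cpair C f g) h"
  have "?k = cpair C (ccomp C (cpr1 C (ccod C f) (ccod C g)) ?k) (ccomp C (cpr2 C (ccod C f) (ccod C g)) ?k)"
    using a by (intro pair_eta_gen[symmetric]) auto
  also have "\<dots> = cpair C (ccomp C f h) (ccomp C g h)"
    using a by (subst (1 2) comp_assoc[symmetric]) auto
  finally show ?thesis .
qed

lemma pair_eq_iff: "f \<in> cArr C \<Longrightarrow> g \<in> cArr C \<Longrightarrow> cdom C f = cdom C g \<Longrightarrow>
  f' \<in> cArr C \<Longrightarrow> g' \<in> cArr C \<Longrightarrow> cdom C f' = cdom C g' \<Longrightarrow> ccod C f = ccod C f' \<Longrightarrow> ccod C g = ccod C g' \<Longrightarrow>
  cpair C f g = cpair C f' g' \<longleftrightarrow> f = f' \<and> g = g'"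
proof
  assume a: "f \<in> cArr C" "g \<in> cArr C" "cdom C f = cdom C g"
  "f' \<in> cArr C" "g' \<in> cArr C" "cdom C f' = cdom C g'" "ccod C f = ccod C f'" "ccod C g = ccod C g'"
  "cpair C f g = cpair C f' g'"
  have "f = ccomp C (cpr1 C (ccod C f) (ccod C g)) (cpair C f g)" using a(1-3) by simp
  also have "\<dots> = ccomp C (cpr1 C (ccod C f') (ccod C g')) (cpair C f' g')" using a(7-9) by simp
  also have "\<dots> = f'" using a(4-6) by simp
  finally have 1: "f = f'" .
  have "g = ccomp C (cpr2 C (ccod C f) (ccod C g)) (cpair C f g)" using a(1-3) by simp
  also have "\<dots> = ccomp C (cpr2 C (ccod C f') (ccod C g')) (cpair C f' g')" using a(7-9) by simp
  also have "\<dots> = g'" using a(4-6) by simp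
  finally show "f = f' \<and> g = g'" using 1 by simp
qed simp

end



context WH begin

lemmas docd = doc[unfolded doctrine_def]
lemmas dc2 = docd[THEN conjunct2, THEN conjunct1]
lemmas dc3 = docd[THEN conjunct2, THEN conjunct2, THEN conjunct1]
lemmas dc4 = docd[THEN conjunct2, THEN conjunct2, THEN conjunct2, THEN conjunct1]
lemmas dc5 = docd[THEN conjunct2, THEN conjunct2, THEN conjunct2, THEN conjunct2]
lemma infsl: "X \<in> cObj C \<Longrightarrow> infsl_fibre D X" using dc2 by blast
lemma reX: "f \<in> hom C X Y \<Longrightarrow>
        (\<forall>a\<in>dPr D Y. dre D f a \<in> dPr D X) \<and>
        (\<forall>a\<in>dPr D Y. \<forall>b\<in>dPr D Y. dle D Y a b \<longrightarrow> dle D X (dre D f a) (dre D f b)) \<and>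
        dre D f (ptop D Y) = ptop D X \<and>
        (\<forall>a\<in>dPr D Y. \<forall>b\<in>dPr D Y. dre D f (pmeet D Y a b) = pmeet D X (dre D f a) (dre D f b))"
  by (rule dc3[rule_format])
lemma re_id[simp]: "X \<in> cObj C \<Longrightarrow> a \<in> dPr D X \<Longrightarrow> dre D (cid C X) a = a" by (rule dc4[rule_format])
lemma re_comp0: "f \<in> hom C X Y \<Longrightarrow> g \<in> hom C Y Z \<Longrightarrow> a \<in> dPr D Z \<Longrightarrow> dre D (ccomp C g f) a = dre D f (dre D g a)"
  by (rule dc5[rule_format])

lemma re_Pr[simp]: "f \<in> cArr C \<Longrightarrow> X = cdom C f \<Longrightarrow> a \<in> dPr D (ccod C f) \<Longrightarrow> dre D f a \<in> dPr D X"
  using reX[of f "cdom C f" "ccod C f"] by (simp add: hom_def)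
lemma re_mono: "f \<in> cArr C \<Longrightarrow> a \<in> dPr D (ccod C f) \<Longrightarrow> b \<in> dPr D (ccod C f) \<Longrightarrow>
   dle D (ccod C f) a b \<Longrightarrow> dle D (cdom C f) (dre D f a) (dre D f b)"
  using reX[of f "cdom C f" "ccod C f"] by (simp add: hom_def)
lemma re_top[simp]: "f \<in> cArr C \<Longrightarrow> Y = ccod C f \<Longrightarrow> dre D f (ptop D Y) = ptop D (cdom C f)"
  using reX[of f "cdom C f" "ccod C f"] by (simp add: hom_def)
lemma re_meet[simp]: "f \<in> cArr C \<Longrightarrow> Y = ccod C f \<Longrightarrow> a \<in> dPr D Y \<Longrightarrow> b \<in> dPr D Y \<Longrightarrow>
  dre D f (pmeet D Y a b) = pmeet D (cdom C f) (dre D f a) (dre D f b)"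
  using reX[of f "cdom C f" "ccod C f"] by (simp add: hom_def)
lemma re_comp[simp]: "f \<in> cArr C \<Longrightarrow> g \<in> cArr C \<Longrightarrow> ccod C f = cdom C g \<Longrightarrow> a \<in> dPr D (ccod C g) \<Longrightarrow>
   dre D f (dre D g a) = dre D (ccomp C g f) a"
  using re_comp0[of f "cdom C f" "ccod C f" g "ccod C g" a] by (simp add: hom_def)

lemma le_refl[simp]: "X \<in> cObj C \<Longrightarrow> a \<in> dPr D X \<Longrightarrow> dle D X a a"
  using infsl[of X] unfolding infsl_fibre_def by blast
lemma le_trans: "X \<in> cObj C \<Longrightarrow> a \<in> dPr D X \<Longrightarrow> b \<in> dPr D X \<Longrightarrow> c \<in> dPr D X \<Longrightarrow>
  dle D X a b \<Longrightarrow> dle D X b c \<Longrightarrow> dle D X a c"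
  using infsl[of X] unfolding infsl_fibre_def by blast
lemma le_antisym: "X \<in> cObj C \<Longrightarrow> a \<in> dPr D X \<Longrightarrow> b \<in> dPr D X \<Longrightarrow>
  dle D X a b \<Longrightarrow> dle D X b a \<Longrightarrow> a = b"
  using infsl[of X] unfolding infsl_fibre_def by blast

lemma top_props: "X \<in> cObj C \<Longrightarrow> ptop D X \<in> dPr D X \<and> (\<forall>a\<in>dPr D X. dle D X a (ptop D X))"
proof -
  assume X: "X \<in> cObj C"
  obtain t where t: "t \<in> dPr D X" "\<forall>a\<in>dPr D X. dle D X a t" using infsl[OF X] unfolding infsl_fibre_def by blast
  have "ptop D X = t" unfolding ptop_def
    by (rule the_equality) (use t le_antisym[OF X] in auto)
  then show ?thesis using t by simp
qed
lemma top_Pr[simp]: "X \<in> cObj C \<Longrightarrow> ptop D X \<in> dPr D X" using top_props by blast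
lemma le_top[simp]: "X \<in> cObj C \<Longrightarrow> a \<in> dPr D X \<Longrightarrow> dle D X a (ptop D X)" using top_props by blast

lemma meet_props: "X \<in> cObj C \<Longrightarrow> a \<in> dPr D X \<Longrightarrow> b \<in> dPr D X \<Longrightarrow> pmeet D X a b \<in> dPr D X \<and>
   (\<forall>x\<in>dPr D X. dle D X x (pmeet D X a b) \<longleftrightarrow> dle D X x a \<and> dle D X x b)"
proof -
  assume X: "X \<in> cObj C" and ab: "a \<in> dPr D X" "b \<in> dPr D X"
  obtain c where c: "c \<in> dPr D X" "\<forall>x\<in>dPr D X. dle D X x c \<longleftrightarrow> dle D X x a \<and> dle D X x b"
    using infsl[OF X, unfolded infsl_fibre_def, THEN conjunct2, THEN conjunct2, THEN conjunct2, THEN conjunct2, rule_format, OF ab] by blast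
  have "pmeet D X a b = c" unfolding pmeet_def
  proof (rule the_equality)
    fix d assume d: "d \<in> dPr D X \<and> (\<forall>x\<in>dPr D X. dle D X x d \<longleftrightarrow> dle D X x a \<and> dle D X x b)"
    have "dle D X d c" using d c le_refl[OF X] by blast
    moreover have "dle D X c d" using d c le_refl[OF X] by blast
    ultimately show "d = c" using le_antisym[OF X] c d by blast
  qed (use c in auto)
  then show ?thesis using c by simp
qed
lemma meet_Pr[simp]: "X \<in> cObj C \<Longrightarrow> a \<in> dPr D X \<Longrightarrow> b \<in> dPr D X \<Longrightarrow> pmeet D X a b \<in> dPr D X"
  using meet_props by blast
lemma le_meet_iff: "X \<in> cObj C \<Longrightarrow> a \<in> dPr D X \<Longrightarrow> b \<in> dPr D X \<Longrightarrow> x \<in> dPr D X \<Longrightarrow>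
  dle D X x (pmeet D X a b) \<longleftrightarrow> dle D X x a \<and> dle D X x b"
  using meet_props by blast
lemma le_meetI: "X \<in> cObj C \<Longrightarrow> a \<in> dPr D X \<Longrightarrow> b \<in> dPr D X \<Longrightarrow> x \<in> dPr D X \<Longrightarrow>
  dle D X x a \<Longrightarrow> dle D X x b \<Longrightarrow> dle D X x (pmeet D X a b)"
  using le_meet_iff by blast
lemma meet_le1: "X \<in> cObj C \<Longrightarrow> a \<in> dPr D X \<Longrightarrow> b \<in> dPr D X \<Longrightarrow> dle D X (pmeet D X a b) a"
  using le_meet_iff[of X a b "pmeet D X a b"] by simp
lemma meet_le2: "X \<in> cObj C \<Longrightarrow> a \<in> dPr D X \<Longrightarrow> b \<in> dPr D X \<Longrightarrow> dle D X (pmeet D X a b) b"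
  using le_meet_iff[of X a b "pmeet D X a b"] by simp
lemma meet_mono: "X \<in> cObj C \<Longrightarrow> a \<in> dPr D X \<Longrightarrow> b \<in> dPr D X \<Longrightarrow> a' \<in> dPr D X \<Longrightarrow> b' \<in> dPr D X \<Longrightarrow>
  dle D X a a' \<Longrightarrow> dle D X b b' \<Longrightarrow> dle D X (pmeet D X a b) (pmeet D X a' b')"
  by (meson le_meetI le_trans meet_Pr meet_le1 meet_le2)
lemma meet_top1[simp]: "X \<in> cObj C \<Longrightarrow> a \<in> dPr D X \<Longrightarrow> pmeet D X (ptop D X) a = a"
  by (rule le_antisym, auto intro: le_meetI meet_le2)
lemma meet_top2[simp]: "X \<in> cObj C \<Longrightarrow> a \<in> dPr D X \<Longrightarrow> pmeet D X a (ptop D X) = a"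
  by (rule le_antisym, auto intro: le_meetI meet_le1)
lemma meet_comm: "X \<in> cObj C \<Longrightarrow> a \<in> dPr D X \<Longrightarrow> b \<in> dPr D X \<Longrightarrow> pmeet D X a b = pmeet D X b a"
  by (rule le_antisym, auto intro: le_meetI meet_le1 meet_le2)
lemma top_le: "X \<in> cObj C \<Longrightarrow> a \<in> dPr D X \<Longrightarrow> dle D X (ptop D X) a \<Longrightarrow> a = ptop D X"
  by (rule le_antisym) auto
lemma le_trans_meet: "X \<in> cObj C \<Longrightarrow> a \<in> dPr D X \<Longrightarrow> b \<in> dPr D X \<Longrightarrow> c \<in> dPr D X \<Longrightarrow> d \<in> dPr D X \<Longrightarrow>
  dle D X x a \<Longrightarrow> dle D X x b \<Longrightarrow> dle D X (pmeet D X a b) c \<Longrightarrow> x \<in> dPr D X \<Longrightarrow> dle D X x c"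
  by (meson le_meetI le_trans meet_Pr)

end



context WH begin

lemmas eld = elem[unfolded elementary_def]
lemma deq_Pr[simp]: "A \<in> cObj C \<Longrightarrow> deq D A \<in> dPr D (cprod C A A)"
  using eld[THEN conjunct2, THEN conjunct1] by blast
lemma elem_adj: "X \<in> cObj C \<Longrightarrow> A \<in> cObj C \<Longrightarrow> \<alpha> \<in> dPr D (cprod C X A) \<Longrightarrow>
  \<beta> \<in> dPr D (cprod C (cprod C X A) A) \<Longrightarrow>
  dle D (cprod C (cprod C X A) A) (pmeet D (cprod C (cprod C X A) A) (dre D (cpr1 C (cprod C X A) A) \<alpha>)
       (dre D (cpair C (ccomp C (cpr2 C X A) (cpr1 C (cprod C X A) A)) (cpr2 C (cprod C X A) A)) (deq D A))) \<beta>
   \<longleftrightarrow> dle D (cprod C X A) \<alpha> (dre D (cpair C (cid C (cprod C X A)) (cpr2 C X A)) \<beta>)"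
proof -
  assume a: "X \<in> cObj C" "A \<in> cObj C" "\<alpha> \<in> dPr D (cprod C X A)" "\<beta> \<in> dPr D (cprod C (cprod C X A) A)"
  note eld[THEN conjunct2, THEN conjunct2, rule_format, OF a(1,2), unfolded Let_def]
  note this[rule_format, OF a(3,4)]
  then show ?thesis .
qed

lemma leib0: "X \<in> cObj C \<Longrightarrow> A \<in> cObj C \<Longrightarrow> \<alpha> \<in> dPr D (cprod C X A) \<Longrightarrow>
  dle D (cprod C (cprod C X A) A) (pmeet D (cprod C (cprod C X A) A) (dre D (cpr1 C (cprod C X A) A) \<alpha>)
       (dre D (cpair C (ccomp C (cpr2 C X A) (cpr1 C (cprod C X A) A)) (cpr2 C (cprod C X A) A)) (deq D A)))
   (dre D (cpair C (ccomp C (cpr1 C X A) (cpr1 C (cprod C X A) A)) (cpr2 C (cprod C X A) A)) \<alpha>)"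
  by (subst elem_adj) simp_all

lemma leib: "U \<in> cObj C \<Longrightarrow> Y \<in> cObj C \<Longrightarrow> \<phi> \<in> dPr D (cprod C U Y) \<Longrightarrow>
  u \<in> cArr C \<Longrightarrow> y \<in> cArr C \<Longrightarrow> y' \<in> cArr C \<Longrightarrow> cdom C y = cdom C u \<Longrightarrow> cdom C y' = cdom C u \<Longrightarrow>
  ccod C u = U \<Longrightarrow> ccod C y = Y \<Longrightarrow> ccod C y' = Y \<Longrightarrow>
  dle D (cdom C u) (pmeet D (cdom C u) (dre D (cpair C u y) \<phi>) (dre D (cpair C y y') (deq D Y))) (dre D (cpair C u y') \<phi>)"
proof -
  assume a: "U \<in> cObj C" "Y \<in> cObj C" "\<phi> \<in> dPr D (cprod C U Y)"
  "u \<in> cArr C" "y \<in> cArr C" "y' \<in> cArr C" "cdom C y = cdom C u" "cdom C y' = cdom C u"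
  "ccod C u = U" "ccod C y = Y" "ccod C y' = Y"
  let ?m = "cpair C (cpair C u y) y'"
  have m: "?m \<in> cArr C" "cdom C ?m = cdom C u" "ccod C ?m = cprod C (cprod C U Y) Y" using a by simp_all
  have "dle D (cdom C ?m) (dre D ?m (pmeet D (cprod C (cprod C U Y) Y) (dre D (cpr1 C (cprod C U Y) Y) \<phi>)
       (dre D (cpair C (ccomp C (cpr2 C U Y) (cpr1 C (cprod C U Y) Y)) (cpr2 C (cprod C U Y) Y)) (deq D Y))))
   (dre D ?m (dre D (cpair C (ccomp C (cpr1 C U Y) (cpr1 C (cprod C U Y) Y)) (cpr2 C (cprod C U Y) Y)) \<phi>))"
    by (rule re_mono) (use a m leib0[of U Y \<phi>] in simp_all)
  then show ?thesis using a by simp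
qed

lemma eq_refl0: "A \<in> cObj C \<Longrightarrow> dle D A (ptop D A) (dre D (cpair C (cid C A) (cid C A)) (deq D A))"
proof -
  assume A: "A \<in> cObj C"
  let ?T = "cterm C"
  have "dle D (cprod C ?T A) (ptop D (cprod C ?T A))
    (dre D (cpair C (cid C (cprod C ?T A)) (cpr2 C ?T A))
      (dre D (cpair C (ccomp C (cpr2 C ?T A) (cpr1 C (cprod C ?T A) A)) (cpr2 C (cprod C ?T A) A)) (deq D A)))"
    by (subst elem_adj[symmetric]) (use A in \<open>simp_all add: meet_le2\<close>)
  then have 1: "dle D (cprod C ?T A) (ptop D (cprod C ?T A)) (dre D (cpair C (cpr2 C ?T A) (cpr2 C ?T A)) (deq D A))"
    using A by simp
  let ?n = "cpair C (cbang C A) (cid C A)"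
  have "dle D (cdom C ?n) (dre D ?n (ptop D (cprod C ?T A))) (dre D ?n (dre D (cpair C (cpr2 C ?T A) (cpr2 C ?T A)) (deq D A)))"
    by (rule re_mono) (use A 1 in simp_all)
  then show ?thesis using A by simp
qed

lemma eq_refl: "y \<in> cArr C \<Longrightarrow> Y = ccod C y \<Longrightarrow> dle D (cdom C y) (ptop D (cdom C y)) (dre D (cpair C y y) (deq D Y))"
proof -
  assume a: "y \<in> cArr C" "Y = ccod C y"
  have "dle D (cdom C y) (dre D y (ptop D Y)) (dre D y (dre D (cpair C (cid C Y) (cid C Y)) (deq D Y)))"
    by (rule re_mono) (use a eq_refl0[of Y] in simp_all)
  then show ?thesis using a by simp
qed

lemma eq_sym: "y \<in> cArr C \<Longrightarrow> y' \<in> cArr C \<Longrightarrow> cdom C y' = cdom C y \<Longrightarrow> ccod C y = Y \<Longrightarrow> ccod C y' = Y \<Longrightarrow>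
  dle D (cdom C y) (dre D (cpair C y y') (deq D Y)) (dre D (cpair C y' y) (deq D Y))"
proof -
  assume a: "y \<in> cArr C" "y' \<in> cArr C" "cdom C y' = cdom C y" "ccod C y = Y" "ccod C y' = Y"
  let ?X = "cdom C y"
  have Y: "Y \<in> cObj C" using a by auto
  let ?phi = "dre D (cpair C (cpr2 C Y Y) (cpr1 C Y Y)) (deq D Y)"
  have 1: "dle D ?X (pmeet D ?X (dre D (cpair C y y) ?phi) (dre D (cpair C y y') (deq D Y))) (dre D (cpair C y y') ?phi)"
    by (rule leib) (use a Y in simp_all)
  have 2: "dre D (cpair C y y) ?phi = dre D (cpair C y y) (deq D Y)" "dre D (cpair C y y') ?phi = dre D (cpair C y' y) (deq D Y)"
    using a Y by simp_all
  have 3: "dle D ?X (ptop D ?X) (dre D (cpair C y y) (deq D Y))" using eq_refl[of y Y] a by simp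
  have 4: "dle D ?X (dre D (cpair C y y') (deq D Y)) (dre D (cpair C y y) (deq D Y))"
    by (rule le_trans[OF _ _ _ _ le_top 3]) (use a Y in simp_all)
  show ?thesis
    apply (rule le_trans[OF _ _ _ _ _ 1[unfolded 2]])
    using a Y 4 by (auto intro!: le_meetI)
qed

lemma eq_trans: "y1 \<in> cArr C \<Longrightarrow> y2 \<in> cArr C \<Longrightarrow> y3 \<in> cArr C \<Longrightarrow> cdom C y2 = cdom C y1 \<Longrightarrow> cdom C y3 = cdom C y1 \<Longrightarrow>
  ccod C y1 = Y \<Longrightarrow> ccod C y2 = Y \<Longrightarrow> ccod C y3 = Y \<Longrightarrow>
  dle D (cdom C y1) (pmeet D (cdom C y1) (dre D (cpair C y1 y2) (deq D Y)) (dre D (cpair C y2 y3) (deq D Y)))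
     (dre D (cpair C y1 y3) (deq D Y))"
  by (rule leib) auto

lemma meet4: "X \<in> cObj C \<Longrightarrow> a \<in> dPr D X \<Longrightarrow> b \<in> dPr D X \<Longrightarrow> c \<in> dPr D X \<Longrightarrow> d \<in> dPr D X \<Longrightarrow>
  e \<in> dPr D X \<Longrightarrow> f \<in> dPr D X \<Longrightarrow>
  dle D X (pmeet D X a c) e \<Longrightarrow> dle D X (pmeet D X b d) f \<Longrightarrow>
  dle D X (pmeet D X (pmeet D X a b) (pmeet D X c d)) (pmeet D X e f)"
proof -
  assume a: "X \<in> cObj C" "a \<in> dPr D X" "b \<in> dPr D X" "c \<in> dPr D X" "d \<in> dPr D X"
  "e \<in> dPr D X" "f \<in> dPr D X" "dle D X (pmeet D X a c) e" "dle D X (pmeet D X b d) f"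
  let ?m = "pmeet D X (pmeet D X a b) (pmeet D X c d)"
  have m: "?m \<in> dPr D X" using a by simp
  have "dle D X ?m (pmeet D X a b)" "dle D X ?m (pmeet D X c d)" using a by (simp_all add: meet_le1 meet_le2)
  then have "dle D X ?m a" "dle D X ?m b" "dle D X ?m c" "dle D X ?m d"
    using a m by (simp_all add: le_meet_iff)
  then have "dle D X ?m (pmeet D X a c)" "dle D X ?m (pmeet D X b d)" using a m by (simp_all add: le_meet_iff)
  then have "dle D X ?m e" "dle D X ?m f"
    using le_trans[of X ?m "pmeet D X a c" e] le_trans[of X ?m "pmeet D X b d" f] a m by auto
  then show ?thesis using a m by (simp add: le_meet_iff)
qed

lemmas pe_unf = per_equiv_def[unfolded Let_def]

lemma pe_Pr: "per_equiv C D A \<rho> \<Longrightarrow> \<rho> \<in> dPr D (cprod C A A)" unfolding per_equiv_def by simp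

lemma pe_refl: "per_equiv C D A \<rho> \<Longrightarrow> A \<in> cObj C \<Longrightarrow> y \<in> cArr C \<Longrightarrow> ccod C y = A \<Longrightarrow>
   dle D (cdom C y) (ptop D (cdom C y)) (dre D (cpair C y y) \<rho>)"
proof -
  assume a: "per_equiv C D A \<rho>" "A \<in> cObj C" "y \<in> cArr C" "ccod C y = A"
  have r: "\<rho> \<in> dPr D (cprod C A A)" "dle D A (ptop D A) (dre D (cpair C (cid C A) (cid C A)) \<rho>)"
    using a(1) unfolding per_equiv_def by auto
  have "dle D (cdom C y) (dre D y (ptop D A)) (dre D y (dre D (cpair C (cid C A) (cid C A)) \<rho>))"
    by (rule re_mono) (use a r in simp_all)
  then show ?thesis using a r by simp
qed

lemma pe_sym: "per_equiv C D A \<rho> \<Longrightarrow> A \<in> cObj C \<Longrightarrow> y \<in> cArr C \<Longrightarrow> y' \<in> cArr C \<Longrightarrow> cdom C y' = cdom C y \<Longrightarrow>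
   ccod C y = A \<Longrightarrow> ccod C y' = A \<Longrightarrow>
   dle D (cdom C y) (dre D (cpair C y y') \<rho>) (dre D (cpair C y' y) \<rho>)"
proof -
  assume a: "per_equiv C D A \<rho>" "A \<in> cObj C" "y \<in> cArr C" "y' \<in> cArr C" "cdom C y' = cdom C y"
   "ccod C y = A" "ccod C y' = A"
  have r: "\<rho> \<in> dPr D (cprod C A A)" "dle D (cprod C A A) \<rho> (dre D (cpair C (cpr2 C A A) (cpr1 C A A)) \<rho>)"
    using a(1) unfolding per_equiv_def by auto
  have "dle D (cdom C (cpair C y y')) (dre D (cpair C y y') \<rho>) (dre D (cpair C y y') (dre D (cpair C (cpr2 C A A) (cpr1 C A A)) \<rho>))"
    by (rule re_mono) (use a r in simp_all)
  then show ?thesis using a r by simp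
qed

lemma pe_trans: "per_equiv C D A \<rho> \<Longrightarrow> A \<in> cObj C \<Longrightarrow> y1 \<in> cArr C \<Longrightarrow> y2 \<in> cArr C \<Longrightarrow> y3 \<in> cArr C \<Longrightarrow>
   cdom C y2 = cdom C y1 \<Longrightarrow> cdom C y3 = cdom C y1 \<Longrightarrow> ccod C y1 = A \<Longrightarrow> ccod C y2 = A \<Longrightarrow> ccod C y3 = A \<Longrightarrow>
   dle D (cdom C y1) (pmeet D (cdom C y1) (dre D (cpair C y1 y2) \<rho>) (dre D (cpair C y2 y3) \<rho>)) (dre D (cpair C y1 y3) \<rho>)"
proof -
  assume a: "per_equiv C D A \<rho>" "A \<in> cObj C" "y1 \<in> cArr C" "y2 \<in> cArr C" "y3 \<in> cArr C"
   "cdom C y2 = cdom C y1" "cdom C y3 = cdom C y1" "ccod C y1 = A" "ccod C y2 = A" "ccod C y3 = A"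
  let ?AA = "cprod C A A"
  let ?AAA = "cprod C ?AA A"
  let ?p1 = "ccomp C (cpr1 C A A) (cpr1 C ?AA A)" and ?p2 = "ccomp C (cpr2 C A A) (cpr1 C ?AA A)" and ?p3 = "cpr2 C ?AA A"
  have r: "\<rho> \<in> dPr D ?AA" "dle D ?AAA (pmeet D ?AAA (dre D (cpair C ?p1 ?p2) \<rho>) (dre D (cpair C ?p2 ?p3) \<rho>))
               (dre D (cpair C ?p1 ?p3) \<rho>)"
    using a(1) unfolding pe_unf by auto
  let ?m = "cpair C (cpair C y1 y2) y3"
  have "dle D (cdom C ?m) (dre D ?m (pmeet D ?AAA (dre D (cpair C ?p1 ?p2) \<rho>) (dre D (cpair C ?p2 ?p3) \<rho>)))
               (dre D ?m (dre D (cpair C ?p1 ?p3) \<rho>))"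
    by (rule re_mono) (use a r in simp_all)
  then show ?thesis using a r by simp
qed

lemma pe_intro: "A \<in> cObj C \<Longrightarrow> \<rho> \<in> dPr D (cprod C A A) \<Longrightarrow>
   (\<And>y. y \<in> cArr C \<Longrightarrow> ccod C y = A \<Longrightarrow> dle D (cdom C y) (ptop D (cdom C y)) (dre D (cpair C y y) \<rho>)) \<Longrightarrow>
   (\<And>y y'. y \<in> cArr C \<Longrightarrow> y' \<in> cArr C \<Longrightarrow> cdom C y' = cdom C y \<Longrightarrow> ccod C y = A \<Longrightarrow> ccod C y' = A \<Longrightarrow>
      dle D (cdom C y) (dre D (cpair C y y') \<rho>) (dre D (cpair C y' y) \<rho>)) \<Longrightarrow>
   (\<And>y1 y2 y3. y1 \<in> cArr C \<Longrightarrow> y2 \<in> cArr C \<Longrightarrow> y3 \<in> cArr C \<Longrightarrow>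
   cdom C y2 = cdom C y1 \<Longrightarrow> cdom C y3 = cdom C y1 \<Longrightarrow> ccod C y1 = A \<Longrightarrow> ccod C y2 = A \<Longrightarrow> ccod C y3 = A \<Longrightarrow>
   dle D (cdom C y1) (pmeet D (cdom C y1) (dre D (cpair C y1 y2) \<rho>) (dre D (cpair C y2 y3) \<rho>)) (dre D (cpair C y1 y3) \<rho>))
   \<Longrightarrow> per_equiv C D A \<rho>"
proof -
  assume a: "A \<in> cObj C" "\<rho> \<in> dPr D (cprod C A A)"
   and R: "\<And>y. y \<in> cArr C \<Longrightarrow> ccod C y = A \<Longrightarrow> dle D (cdom C y) (ptop D (cdom C y)) (dre D (cpair C y y) \<rho>)"
   and S: "\<And>y y'. y \<in> cArr C \<Longrightarrow> y' \<in> cArr C \<Longrightarrow> cdom C y' = cdom C y \<Longrightarrow> ccod C y = A \<Longrightarrow> ccod C y' = A \<Longrightarrow>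
      dle D (cdom C y) (dre D (cpair C y y') \<rho>) (dre D (cpair C y' y) \<rho>)"
   and T: "\<And>y1 y2 y3. y1 \<in> cArr C \<Longrightarrow> y2 \<in> cArr C \<Longrightarrow> y3 \<in> cArr C \<Longrightarrow>
   cdom C y2 = cdom C y1 \<Longrightarrow> cdom C y3 = cdom C y1 \<Longrightarrow> ccod C y1 = A \<Longrightarrow> ccod C y2 = A \<Longrightarrow> ccod C y3 = A \<Longrightarrow>
   dle D (cdom C y1) (pmeet D (cdom C y1) (dre D (cpair C y1 y2) \<rho>) (dre D (cpair C y2 y3) \<rho>)) (dre D (cpair C y1 y3) \<rho>)"
  let ?AA = "cprod C A A"
  let ?AAA = "cprod C ?AA A"
  have 1: "dle D A (ptop D A) (dre D (cpair C (cid C A) (cid C A)) \<rho>)" using R[of "cid C A"] a by simp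
  have 2: "dle D ?AA \<rho> (dre D (cpair C (cpr2 C A A) (cpr1 C A A)) \<rho>)" using S[of "cpr1 C A A" "cpr2 C A A"] a by simp
  have 3: "dle D ?AAA (pmeet D ?AAA (dre D (cpair C (ccomp C (cpr1 C A A) (cpr1 C ?AA A)) (ccomp C (cpr2 C A A) (cpr1 C ?AA A))) \<rho>)
     (dre D (cpair C (ccomp C (cpr2 C A A) (cpr1 C ?AA A)) (cpr2 C ?AA A)) \<rho>))
     (dre D (cpair C (ccomp C (cpr1 C A A) (cpr1 C ?AA A)) (cpr2 C ?AA A)) \<rho>)"
    using T[of "ccomp C (cpr1 C A A) (cpr1 C ?AA A)" "ccomp C (cpr2 C A A) (cpr1 C ?AA A)" "cpr2 C ?AA A"] a by simp
  show ?thesis unfolding pe_unf using a 1 2 3 by simp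
qed

lemma deq_pe: "A \<in> cObj C \<Longrightarrow> per_equiv C D A (deq D A)"
  apply (rule pe_intro)
  subgoal by simp
  subgoal by simp
  subgoal by (rule eq_refl) simp_all
  subgoal by (rule eq_sym) simp_all
  subgoal by (rule eq_trans) simp_all
  done

definition desc :: "'o \<Rightarrow> 'p \<Rightarrow> 'p \<Rightarrow> bool" where
  "desc A \<rho> \<alpha> \<longleftrightarrow> \<alpha> \<in> dPr D A \<and> dle D (cprod C A A) (pmeet D (cprod C A A) (dre D (cpr1 C A A) \<alpha>) \<rho>) (dre D (cpr2 C A A) \<alpha>)"

lemma desc_gen: "desc A \<rho> \<alpha> \<Longrightarrow> A \<in> cObj C \<Longrightarrow> \<rho> \<in> dPr D (cprod C A A) \<Longrightarrow> y \<in> cArr C \<Longrightarrow> y' \<in> cArr C \<Longrightarrow>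
  cdom C y' = cdom C y \<Longrightarrow> ccod C y = A \<Longrightarrow> ccod C y' = A \<Longrightarrow>
  dle D (cdom C y) (pmeet D (cdom C y) (dre D y \<alpha>) (dre D (cpair C y y') \<rho>)) (dre D y' \<alpha>)"
proof -
  assume a: "desc A \<rho> \<alpha>" "A \<in> cObj C" "\<rho> \<in> dPr D (cprod C A A)" "y \<in> cArr C" "y' \<in> cArr C"
  "cdom C y' = cdom C y" "ccod C y = A" "ccod C y' = A"
  have d: "\<alpha> \<in> dPr D A" "dle D (cprod C A A) (pmeet D (cprod C A A) (dre D (cpr1 C A A) \<alpha>) \<rho>) (dre D (cpr2 C A A) \<alpha>)"
    using a(1) unfolding desc_def by auto
  have "dle D (cdom C (cpair C y y')) (dre D (cpair C y y') (pmeet D (cprod C A A) (dre D (cpr1 C A A) \<alpha>) \<rho>))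
     (dre D (cpair C y y') (dre D (cpr2 C A A) \<alpha>))"
    by (rule re_mono) (use a d in simp_all)
  then show ?thesis using a d by simp
qed

lemma desc_intro: "A \<in> cObj C \<Longrightarrow> \<rho> \<in> dPr D (cprod C A A) \<Longrightarrow> \<alpha> \<in> dPr D A \<Longrightarrow>
  dle D (cprod C A A) (pmeet D (cprod C A A) (dre D (cpr1 C A A) \<alpha>) (dre D (cpair C (cpr1 C A A) (cpr2 C A A)) \<rho>)) (dre D (cpr2 C A A) \<alpha>)
  \<Longrightarrow> desc A \<rho> \<alpha>"
  unfolding desc_def by simp

lemma desc_deq: "A \<in> cObj C \<Longrightarrow> \<alpha> \<in> dPr D A \<Longrightarrow> desc A (deq D A) \<alpha>"
proof -
  assume a: "A \<in> cObj C" "\<alpha> \<in> dPr D A"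
  let ?AA = "cprod C A A"
  have "dle D (cdom C (cbang C ?AA)) (pmeet D (cdom C (cbang C ?AA)) (dre D (cpair C (cbang C ?AA) (cpr1 C A A)) (dre D (cpr2 C (cterm C) A) \<alpha>))
     (dre D (cpair C (cpr1 C A A) (cpr2 C A A)) (deq D A))) (dre D (cpair C (cbang C ?AA) (cpr2 C A A)) (dre D (cpr2 C (cterm C) A) \<alpha>))"
    by (rule leib) (use a in simp_all)
  then show ?thesis using a unfolding desc_def by simp
qed

lemma qprodrel_Pr[simp]: "A \<in> cObj C \<Longrightarrow> B \<in> cObj C \<Longrightarrow> \<rho> \<in> dPr D (cprod C A A) \<Longrightarrow> \<sigma> \<in> dPr D (cprod C B B) \<Longrightarrow>
  qprodrel C D A B \<rho> \<sigma> \<in> dPr D (cprod C (cprod C A B) (cprod C A B))"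
  unfolding qprodrel_def Let_def ptimes_def by simp

lemma qprodrel_gen: "A \<in> cObj C \<Longrightarrow> B \<in> cObj C \<Longrightarrow> \<rho> \<in> dPr D (cprod C A A) \<Longrightarrow> \<sigma> \<in> dPr D (cprod C B B) \<Longrightarrow>
  x \<in> cArr C \<Longrightarrow> x' \<in> cArr C \<Longrightarrow> cdom C x' = cdom C x \<Longrightarrow> ccod C x = cprod C A B \<Longrightarrow> ccod C x' = cprod C A B \<Longrightarrow>
  dre D (cpair C x x') (qprodrel C D A B \<rho> \<sigma>) = pmeet D (cdom C x)
    (dre D (cpair C (ccomp C (cpr1 C A B) x) (ccomp C (cpr1 C A B) x')) \<rho>)
    (dre D (cpair C (ccomp C (cpr2 C A B) x) (ccomp C (cpr2 C A B) x')) \<sigma>)"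
  unfolding qprodrel_def Let_def ptimes_def by simp

lemma qprodrel_pe: "A \<in> cObj C \<Longrightarrow> B \<in> cObj C \<Longrightarrow> per_equiv C D A \<rho> \<Longrightarrow> per_equiv C D B \<sigma> \<Longrightarrow>
  per_equiv C D (cprod C A B) (qprodrel C D A B \<rho> \<sigma>)"
proof -
  assume a: "A \<in> cObj C" "B \<in> cObj C" "per_equiv C D A \<rho>" "per_equiv C D B \<sigma>"
  note P = pe_Pr[OF a(3)] pe_Pr[OF a(4)]
  show ?thesis
  proof (rule pe_intro)
    fix y assume y: "y \<in> cArr C" "ccod C y = cprod C A B"
    show "dle D (cdom C y) (ptop D (cdom C y)) (dre D (cpair C y y) (qprodrel C D A B \<rho> \<sigma>))"
      using y a P pe_refl[OF a(3) a(1), of "ccomp C (cpr1 C A B) y"] pe_refl[OF a(4) a(2), of "ccomp C (cpr2 C A B) y"]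
      by (simp add: qprodrel_gen le_meetI)
  next
    fix y y' assume y: "y \<in> cArr C" "y' \<in> cArr C" "cdom C y' = cdom C y" "ccod C y = cprod C A B" "ccod C y' = cprod C A B"
    show "dle D (cdom C y) (dre D (cpair C y y') (qprodrel C D A B \<rho> \<sigma>)) (dre D (cpair C y' y) (qprodrel C D A B \<rho> \<sigma>))"
      using y a P pe_sym[OF a(3) a(1), of "ccomp C (cpr1 C A B) y" "ccomp C (cpr1 C A B) y'"]
         pe_sym[OF a(4) a(2), of "ccomp C (cpr2 C A B) y" "ccomp C (cpr2 C A B) y'"]
      by (simp add: qprodrel_gen meet_mono)
  next
    fix y1 y2 y3 assume y: "y1 \<in> cArr C" "y2 \<in> cArr C" "y3 \<in> cArr C"
   "cdom C y2 = cdom C y1" "cdom C y3 = cdom C y1" "ccod C y1 = cprod C A B" "ccod C y2 = cprod C A B" "ccod C y3 = cprod C A B"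
    show "dle D (cdom C y1) (pmeet D (cdom C y1) (dre D (cpair C y1 y2) (qprodrel C D A B \<rho> \<sigma>)) (dre D (cpair C y2 y3) (qprodrel C D A B \<rho> \<sigma>)))
      (dre D (cpair C y1 y3) (qprodrel C D A B \<rho> \<sigma>))"
      using y a P pe_trans[OF a(3) a(1), of "ccomp C (cpr1 C A B) y1" "ccomp C (cpr1 C A B) y2" "ccomp C (cpr1 C A B) y3"]
         pe_trans[OF a(4) a(2), of "ccomp C (cpr2 C A B) y1" "ccomp C (cpr2 C A B) y2" "ccomp C (cpr2 C A B) y3"]
      by (simp add: qprodrel_gen meet4)
  qed (use a P in simp_all)
qed

end



context WH begin

lemmas whd = WH[unfolded weak_hyperdoctrine_def]
lemmas wcc = whd[THEN conjunct2, THEN conjunct1]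
lemmas wadj = whd[THEN conjunct2, THEN conjunct2, THEN conjunct2, THEN conjunct2, THEN conjunct1]
lemmas wbc1 = whd[THEN conjunct2, THEN conjunct2, THEN conjunct2, THEN conjunct2, THEN conjunct2, THEN conjunct1]

lemma THE_ex: "Y \<in> cObj C \<Longrightarrow> \<beta> \<in> dPr D Y \<Longrightarrow> (\<forall>\<gamma>\<in>dPr D Y. dle D Y \<beta> \<gamma> \<longleftrightarrow> Q \<gamma>) \<Longrightarrow>
  (THE \<beta>. \<beta> \<in> dPr D Y \<and> (\<forall>\<gamma>\<in>dPr D Y. dle D Y \<beta> \<gamma> \<longleftrightarrow> Q \<gamma>)) = \<beta>"
proof (rule the_equality)
  fix b assume a: "Y \<in> cObj C" "\<beta> \<in> dPr D Y" "\<forall>\<gamma>\<in>dPr D Y. dle D Y \<beta> \<gamma> \<longleftrightarrow> Q \<gamma>"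
    and b: "b \<in> dPr D Y \<and> (\<forall>\<gamma>\<in>dPr D Y. dle D Y b \<gamma> \<longleftrightarrow> Q \<gamma>)"
  have "Q \<beta>" "Q b" using a b le_refl[of Y] by blast+
  then have "dle D Y b \<beta>" "dle D Y \<beta> b" using a b by blast+
  then show "b = \<beta>" using le_antisym a b by blast
qed auto

lemma THE_all: "Y \<in> cObj C \<Longrightarrow> \<beta> \<in> dPr D Y \<Longrightarrow> (\<forall>\<gamma>\<in>dPr D Y. dle D Y \<gamma> \<beta> \<longleftrightarrow> Q \<gamma>) \<Longrightarrow>
  (THE \<beta>. \<beta> \<in> dPr D Y \<and> (\<forall>\<gamma>\<in>dPr D Y. dle D Y \<gamma> \<beta> \<longleftrightarrow> Q \<gamma>)) = \<beta>"
proof (rule the_equality)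
  fix b assume a: "Y \<in> cObj C" "\<beta> \<in> dPr D Y" "\<forall>\<gamma>\<in>dPr D Y. dle D Y \<gamma> \<beta> \<longleftrightarrow> Q \<gamma>"
    and b: "b \<in> dPr D Y \<and> (\<forall>\<gamma>\<in>dPr D Y. dle D Y \<gamma> b \<longleftrightarrow> Q \<gamma>)"
  have "Q \<beta>" "Q b" using a b le_refl[of Y] by blast+
  then have "dle D Y b \<beta>" "dle D Y \<beta> b" using a b by blast+
  then show "b = \<beta>" using le_antisym a b by blast
qed auto

lemma exL_char: "f \<in> cArr C \<Longrightarrow> has_exL C D f \<Longrightarrow> \<alpha> \<in> dPr D (cdom C f) \<Longrightarrow>
   exL C D f \<alpha> \<in> dPr D (ccod C f) \<and> (\<forall>\<gamma>\<in>dPr D (ccod C f). dle D (ccod C f) (exL C D f \<alpha>) \<gamma> \<longleftrightarrow> dle D (cdom C f) \<alpha> (dre D f \<gamma>))"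
proof -
  assume a: "f \<in> cArr C" "has_exL C D f" "\<alpha> \<in> dPr D (cdom C f)"
  obtain \<beta> where b: "\<beta> \<in> dPr D (ccod C f)" "\<forall>\<gamma>\<in>dPr D (ccod C f). dle D (ccod C f) \<beta> \<gamma> \<longleftrightarrow> dle D (cdom C f) \<alpha> (dre D f \<gamma>)"
    using a unfolding has_exL_def by blast
  have "exL C D f \<alpha> = \<beta>" unfolding exL_def by (rule THE_ex) (use a b in auto)
  then show ?thesis using b by simp
qed

lemma allL_char: "f \<in> cArr C \<Longrightarrow> has_allL C D f \<Longrightarrow> \<alpha> \<in> dPr D (cdom C f) \<Longrightarrow>
   allL C D f \<alpha> \<in> dPr D (ccod C f) \<and> (\<forall>\<gamma>\<in>dPr D (ccod C f). dle D (ccod C f) \<gamma> (allL C D f \<alpha>) \<longleftrightarrow> dle D (cdom C f) (dre D f \<gamma>) \<alpha>)"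
proof -
  assume a: "f \<in> cArr C" "has_allL C D f" "\<alpha> \<in> dPr D (cdom C f)"
  obtain \<beta> where b: "\<beta> \<in> dPr D (ccod C f)" "\<forall>\<gamma>\<in>dPr D (ccod C f). dle D (ccod C f) \<gamma> \<beta> \<longleftrightarrow> dle D (cdom C f) (dre D f \<gamma>) \<alpha>"
    using a unfolding has_allL_def by blast
  have "allL C D f \<alpha> = \<beta>" unfolding allL_def by (rule THE_all) (use a b in auto)
  then show ?thesis using b by simp
qed

lemma has_ex1: "X \<in> cObj C \<Longrightarrow> Y \<in> cObj C \<Longrightarrow> has_exL C D (cpr1 C X Y)" using wadj by blast
lemma has_all1: "X \<in> cObj C \<Longrightarrow> Y \<in> cObj C \<Longrightarrow> has_allL C D (cpr1 C X Y)" using wadj by blast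

lemma ex1_char: "X \<in> cObj C \<Longrightarrow> Y \<in> cObj C \<Longrightarrow> \<alpha> \<in> dPr D (cprod C X Y) \<Longrightarrow>
   exL C D (cpr1 C X Y) \<alpha> \<in> dPr D X \<and> (\<forall>\<gamma>\<in>dPr D X. dle D X (exL C D (cpr1 C X Y) \<alpha>) \<gamma> \<longleftrightarrow> dle D (cprod C X Y) \<alpha> (dre D (cpr1 C X Y) \<gamma>))"
  using exL_char[of "cpr1 C X Y" \<alpha>] has_ex1[of X Y] by simp
lemma all1_char: "X \<in> cObj C \<Longrightarrow> Y \<in> cObj C \<Longrightarrow> \<alpha> \<in> dPr D (cprod C X Y) \<Longrightarrow>
   allL C D (cpr1 C X Y) \<alpha> \<in> dPr D X \<and> (\<forall>\<gamma>\<in>dPr D X. dle D X \<gamma> (allL C D (cpr1 C X Y) \<alpha>) \<longleftrightarrow> dle D (cprod C X Y) (dre D (cpr1 C X Y) \<gamma>) \<alpha>)"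
  using allL_char[of "cpr1 C X Y" \<alpha>] has_all1[of X Y] by simp

lemma ex1_Pr[simp]: "X \<in> cObj C \<Longrightarrow> Y \<in> cObj C \<Longrightarrow> \<alpha> \<in> dPr D (cprod C X Y) \<Longrightarrow> exL C D (cpr1 C X Y) \<alpha> \<in> dPr D X"
  using ex1_char by blast
lemma all1_Pr[simp]: "X \<in> cObj C \<Longrightarrow> Y \<in> cObj C \<Longrightarrow> \<alpha> \<in> dPr D (cprod C X Y) \<Longrightarrow> allL C D (cpr1 C X Y) \<alpha> \<in> dPr D X"
  using all1_char by blast

lemma BC_all: "X \<in> cObj C \<Longrightarrow> Y \<in> cObj C \<Longrightarrow> f \<in> cArr C \<Longrightarrow> ccod C f = X \<Longrightarrow> \<alpha> \<in> dPr D (cprod C X Y) \<Longrightarrow>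
  dre D f (allL C D (cpr1 C X Y) \<alpha>) = allL C D (cpr1 C (cdom C f) Y) (dre D (cpair C (ccomp C f (cpr1 C (cdom C f) Y)) (cpr2 C (cdom C f) Y)) \<alpha>)"
proof -
  assume a: "X \<in> cObj C" "Y \<in> cObj C" "f \<in> cArr C" "ccod C f = X" "\<alpha> \<in> dPr D (cprod C X Y)"
  have "f \<in> hom C (cdom C f) X" using a by (simp add: hom_def)
  note wbc1[rule_format, OF a(1,2) this a(5)]
  then show ?thesis using a by (simp add: ptimes_def)
qed

lemma all_elim: "U \<in> cObj C \<Longrightarrow> A \<in> cObj C \<Longrightarrow> \<Phi> \<in> dPr D (cprod C U A) \<Longrightarrow> u \<in> cArr C \<Longrightarrow> a \<in> cArr C \<Longrightarrow>
  cdom C a = cdom C u \<Longrightarrow> ccod C u = U \<Longrightarrow> ccod C a = A \<Longrightarrow>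
  dle D (cdom C u) (dre D u (allL C D (cpr1 C U A) \<Phi>)) (dre D (cpair C u a) \<Phi>)"
proof -
  assume h: "U \<in> cObj C" "A \<in> cObj C" "\<Phi> \<in> dPr D (cprod C U A)" "u \<in> cArr C" "a \<in> cArr C"
  "cdom C a = cdom C u" "ccod C u = U" "ccod C a = A"
  have c: "dle D (cprod C U A) (dre D (cpr1 C U A) (allL C D (cpr1 C U A) \<Phi>)) \<Phi>"
    using all1_char[OF h(1-3)] le_refl[of U] h by auto
  have "dle D (cdom C (cpair C u a)) (dre D (cpair C u a) (dre D (cpr1 C U A) (allL C D (cpr1 C U A) \<Phi>))) (dre D (cpair C u a) \<Phi>)"
    by (rule re_mono) (use h c in simp_all)
  then show ?thesis using h by simp
qed

lemma all_intro: "U \<in> cObj C \<Longrightarrow> A \<in> cObj C \<Longrightarrow> \<Phi> \<in> dPr D (cprod C U A) \<Longrightarrow> u \<in> cArr C \<Longrightarrow> ccod C u = U \<Longrightarrow>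
  \<psi> \<in> dPr D (cdom C u) \<Longrightarrow>
  dle D (cprod C (cdom C u) A) (dre D (cpr1 C (cdom C u) A) \<psi>) (dre D (cpair C (ccomp C u (cpr1 C (cdom C u) A)) (cpr2 C (cdom C u) A)) \<Phi>) \<Longrightarrow>
  dle D (cdom C u) \<psi> (dre D u (allL C D (cpr1 C U A) \<Phi>))"
proof -
  assume h: "U \<in> cObj C" "A \<in> cObj C" "\<Phi> \<in> dPr D (cprod C U A)" "u \<in> cArr C" "ccod C u = U"
    "\<psi> \<in> dPr D (cdom C u)"
    "dle D (cprod C (cdom C u) A) (dre D (cpr1 C (cdom C u) A) \<psi>) (dre D (cpair C (ccomp C u (cpr1 C (cdom C u) A)) (cpr2 C (cdom C u) A)) \<Phi>)"
  have e: "dre D u (allL C D (cpr1 C U A) \<Phi>) = allL C D (cpr1 C (cdom C u) A) (dre D (cpair C (ccomp C u (cpr1 C (cdom C u) A)) (cpr2 C (cdom C u) A)) \<Phi>)"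
    using BC_all h by simp
  show ?thesis unfolding e using all1_char[of "cdom C u" A "dre D (cpair C (ccomp C u (cpr1 C (cdom C u) A)) (cpr2 C (cdom C u) A)) \<Phi>"] h
    by simp
qed

lemma pr1_term: "X \<in> cObj C \<Longrightarrow> cpr1 C (cterm C) X = cbang C (cprod C (cterm C) X)"
  using bang_uniq[of "cpr1 C (cterm C) X"] by simp

lemma exbang_char: "X \<in> cObj C \<Longrightarrow> \<alpha> \<in> dPr D X \<Longrightarrow>
   exL C D (cbang C X) \<alpha> \<in> dPr D (cterm C) \<and> (\<forall>\<gamma>\<in>dPr D (cterm C). dle D (cterm C) (exL C D (cbang C X) \<alpha>) \<gamma> \<longleftrightarrow> dle D X \<alpha> (dre D (cbang C X) \<gamma>))"
proof -
  assume a: "X \<in> cObj C" "\<alpha> \<in> dPr D X"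
  let ?T = "cterm C"
  let ?\<beta> = "exL C D (cpr1 C ?T X) (dre D (cpr2 C ?T X) \<alpha>)"
  have ch: "?\<beta> \<in> dPr D ?T" "\<forall>\<gamma>\<in>dPr D ?T. dle D ?T ?\<beta> \<gamma> \<longleftrightarrow> dle D (cprod C ?T X) (dre D (cpr2 C ?T X) \<alpha>) (dre D (cpr1 C ?T X) \<gamma>)"
    using ex1_char[of ?T X "dre D (cpr2 C ?T X) \<alpha>"] a by simp_all
  have eq: "\<forall>\<gamma>\<in>dPr D ?T. dle D ?T ?\<beta> \<gamma> \<longleftrightarrow> dle D X \<alpha> (dre D (cbang C X) \<gamma>)"
  proof
    fix \<gamma> assume g: "\<gamma> \<in> dPr D ?T"
    show "dle D ?T ?\<beta> \<gamma> \<longleftrightarrow> dle D X \<alpha> (dre D (cbang C X) \<gamma>)"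
    proof
      assume "dle D ?T ?\<beta> \<gamma>"
      then have 1: "dle D (cprod C ?T X) (dre D (cpr2 C ?T X) \<alpha>) (dre D (cpr1 C ?T X) \<gamma>)" using ch g by simp
      let ?n = "cpair C (cbang C X) (cid C X)"
      have "dle D (cdom C ?n) (dre D ?n (dre D (cpr2 C ?T X) \<alpha>)) (dre D ?n (dre D (cpr1 C ?T X) \<gamma>))"
        by (rule re_mono) (use a g 1 in simp_all)
      then show "dle D X \<alpha> (dre D (cbang C X) \<gamma>)" using a g by simp
    next
      assume 1: "dle D X \<alpha> (dre D (cbang C X) \<gamma>)"
      have "dle D (cdom C (cpr2 C ?T X)) (dre D (cpr2 C ?T X) \<alpha>) (dre D (cpr2 C ?T X) (dre D (cbang C X) \<gamma>))"
        by (rule re_mono) (use a g 1 in simp_all)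
      then show "dle D ?T ?\<beta> \<gamma>" using a g ch pr1_term[of X] by simp
    qed
  qed
  have "exL C D (cbang C X) \<alpha> = ?\<beta>" unfolding exL_def[of C D "cbang C X"] by (rule THE_ex) (use a ch eq in simp_all)
  then show ?thesis using ch eq by simp
qed

lemma allbang_char: "X \<in> cObj C \<Longrightarrow> \<alpha> \<in> dPr D X \<Longrightarrow>
   allL C D (cbang C X) \<alpha> \<in> dPr D (cterm C) \<and> (\<forall>\<gamma>\<in>dPr D (cterm C). dle D (cterm C) \<gamma> (allL C D (cbang C X) \<alpha>) \<longleftrightarrow> dle D X (dre D (cbang C X) \<gamma>) \<alpha>)"
proof -
  assume a: "X \<in> cObj C" "\<alpha> \<in> dPr D X"
  let ?T = "cterm C"
  let ?\<beta> = "allL C D (cpr1 C ?T X) (dre D (cpr2 C ?T X) \<alpha>)"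
  have ch: "?\<beta> \<in> dPr D ?T" "\<forall>\<gamma>\<in>dPr D ?T. dle D ?T \<gamma> ?\<beta> \<longleftrightarrow> dle D (cprod C ?T X) (dre D (cpr1 C ?T X) \<gamma>) (dre D (cpr2 C ?T X) \<alpha>)"
    using all1_char[of ?T X "dre D (cpr2 C ?T X) \<alpha>"] a by simp_all
  have eq: "\<forall>\<gamma>\<in>dPr D ?T. dle D ?T \<gamma> ?\<beta> \<longleftrightarrow> dle D X (dre D (cbang C X) \<gamma>) \<alpha>"
  proof
    fix \<gamma> assume g: "\<gamma> \<in> dPr D ?T"
    show "dle D ?T \<gamma> ?\<beta> \<longleftrightarrow> dle D X (dre D (cbang C X) \<gamma>) \<alpha>"
    proof
      assume "dle D ?T \<gamma> ?\<beta>"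
      then have 1: "dle D (cprod C ?T X) (dre D (cpr1 C ?T X) \<gamma>) (dre D (cpr2 C ?T X) \<alpha>)" using ch g by simp
      let ?n = "cpair C (cbang C X) (cid C X)"
      have "dle D (cdom C ?n) (dre D ?n (dre D (cpr1 C ?T X) \<gamma>)) (dre D ?n (dre D (cpr2 C ?T X) \<alpha>))"
        by (rule re_mono) (use a g 1 in simp_all)
      then show "dle D X (dre D (cbang C X) \<gamma>) \<alpha>" using a g by simp
    next
      assume 1: "dle D X (dre D (cbang C X) \<gamma>) \<alpha>"
      have "dle D (cdom C (cpr2 C ?T X)) (dre D (cpr2 C ?T X) (dre D (cbang C X) \<gamma>)) (dre D (cpr2 C ?T X) \<alpha>)"
        by (rule re_mono) (use a g 1 in simp_all)
      then show "dle D ?T \<gamma> ?\<beta>" using a g ch pr1_term[of X] by simp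
    qed
  qed
  have "allL C D (cbang C X) \<alpha> = ?\<beta>" unfolding allL_def[of C D "cbang C X"] by (rule THE_all) (use a ch eq in simp_all)
  then show ?thesis using ch eq by simp
qed

end



context WH begin

lemma qobjs_iff[simp]: "(A, \<rho>) \<in> qobjs C D \<longleftrightarrow> A \<in> cObj C \<and> per_equiv C D A \<rho>"
  unfolding qobjs_def by simp

lemma qrel_unf: "qrel C D (A,\<rho>) (B,\<sigma>) f g \<longleftrightarrow>
   dle D (cprod C A A) \<rho> (dre D (cpair C (ccomp C f (cpr1 C A A)) (ccomp C g (cpr2 C A A))) \<sigma>)"
  unfolding qrel_def ptimes_def by simp

lemma qrel_gen: "A \<in> cObj C \<Longrightarrow> B \<in> cObj C \<Longrightarrow> \<rho> \<in> dPr D (cprod C A A) \<Longrightarrow> \<sigma> \<in> dPr D (cprod C B B) \<Longrightarrow>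
  f \<in> hom C A B \<Longrightarrow> g \<in> hom C A B \<Longrightarrow> qrel C D (A,\<rho>) (B,\<sigma>) f g \<Longrightarrow>
  x \<in> cArr C \<Longrightarrow> x' \<in> cArr C \<Longrightarrow> cdom C x' = cdom C x \<Longrightarrow> ccod C x = A \<Longrightarrow> ccod C x' = A \<Longrightarrow>
  dle D (cdom C x) (dre D (cpair C x x') \<rho>) (dre D (cpair C (ccomp C f x) (ccomp C g x')) \<sigma>)"
proof -
  assume a: "A \<in> cObj C" "B \<in> cObj C" "\<rho> \<in> dPr D (cprod C A A)" "\<sigma> \<in> dPr D (cprod C B B)"
  "f \<in> hom C A B" "g \<in> hom C A B" "qrel C D (A,\<rho>) (B,\<sigma>) f g"
  "x \<in> cArr C" "x' \<in> cArr C" "cdom C x' = cdom C x" "ccod C x = A" "ccod C x' = A"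
  have h: "f \<in> cArr C" "cdom C f = A" "ccod C f = B" "g \<in> cArr C" "cdom C g = A" "ccod C g = B"
    using a(5,6) by (auto simp: hom_def)
  have q: "dle D (cprod C A A) \<rho> (dre D (cpair C (ccomp C f (cpr1 C A A)) (ccomp C g (cpr2 C A A))) \<sigma>)"
    using a(7) qrel_unf by simp
  have "dle D (cdom C (cpair C x x')) (dre D (cpair C x x') \<rho>)
       (dre D (cpair C x x') (dre D (cpair C (ccomp C f (cpr1 C A A)) (ccomp C g (cpr2 C A A))) \<sigma>))"
    by (rule re_mono) (use a h q in simp_all)
  then show ?thesis using a h by simp
qed

lemma qrel_sym: "A \<in> cObj C \<Longrightarrow> B \<in> cObj C \<Longrightarrow> per_equiv C D A \<rho> \<Longrightarrow> per_equiv C D B \<sigma> \<Longrightarrow>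
  f \<in> hom C A B \<Longrightarrow> g \<in> hom C A B \<Longrightarrow> qrel C D (A,\<rho>) (B,\<sigma>) f g \<Longrightarrow> qrel C D (A,\<rho>) (B,\<sigma>) g f"
proof -
  assume a: "A \<in> cObj C" "B \<in> cObj C" "per_equiv C D A \<rho>" "per_equiv C D B \<sigma>"
  "f \<in> hom C A B" "g \<in> hom C A B" "qrel C D (A,\<rho>) (B,\<sigma>) f g"
  have h: "f \<in> cArr C" "cdom C f = A" "ccod C f = B" "g \<in> cArr C" "cdom C g = A" "ccod C g = B"
    using a(5,6) by (auto simp: hom_def)
  note P = pe_Pr[OF a(3)] pe_Pr[OF a(4)]
  let ?p1 = "cpr1 C A A" and ?p2 = "cpr2 C A A" and ?AA = "cprod C A A"
  have 1: "dle D ?AA \<rho> (dre D (cpair C ?p2 ?p1) \<rho>)" using pe_sym[OF a(3) a(1), of ?p1 ?p2] a P by simp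
  have 2: "dle D ?AA (dre D (cpair C ?p2 ?p1) \<rho>) (dre D (cpair C (ccomp C f ?p2) (ccomp C g ?p1)) \<sigma>)"
    using qrel_gen[OF a(1,2) P a(5,6,7), of ?p2 ?p1] a by simp
  have 3: "dle D ?AA (dre D (cpair C (ccomp C f ?p2) (ccomp C g ?p1)) \<sigma>) (dre D (cpair C (ccomp C g ?p1) (ccomp C f ?p2)) \<sigma>)"
    using pe_sym[OF a(4) a(2), of "ccomp C f ?p2" "ccomp C g ?p1"] a h by simp
  have "dle D ?AA \<rho> (dre D (cpair C (ccomp C g ?p1) (ccomp C f ?p2)) \<sigma>)"
    using le_trans[OF _ _ _ _ 1 2] le_trans[OF _ _ _ _ _ 3] a h P by simp
  then show ?thesis unfolding qrel_unf .
qed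

lemma qrel_trans: "A \<in> cObj C \<Longrightarrow> B \<in> cObj C \<Longrightarrow> per_equiv C D A \<rho> \<Longrightarrow> per_equiv C D B \<sigma> \<Longrightarrow>
  f \<in> hom C A B \<Longrightarrow> g \<in> hom C A B \<Longrightarrow> h \<in> hom C A B \<Longrightarrow>
  qrel C D (A,\<rho>) (B,\<sigma>) f g \<Longrightarrow> qrel C D (A,\<rho>) (B,\<sigma>) g h \<Longrightarrow> qrel C D (A,\<rho>) (B,\<sigma>) f h"
proof -
  assume a: "A \<in> cObj C" "B \<in> cObj C" "per_equiv C D A \<rho>" "per_equiv C D B \<sigma>"
  "f \<in> hom C A B" "g \<in> hom C A B" "h \<in> hom C A B" "qrel C D (A,\<rho>) (B,\<sigma>) f g" "qrel C D (A,\<rho>) (B,\<sigma>) g h"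
  have hh: "f \<in> cArr C" "cdom C f = A" "ccod C f = B" "g \<in> cArr C" "cdom C g = A" "ccod C g = B"
    "h \<in> cArr C" "cdom C h = A" "ccod C h = B"
    using a(5,6,7) by (auto simp: hom_def)
  note P = pe_Pr[OF a(3)] pe_Pr[OF a(4)]
  let ?p1 = "cpr1 C A A" and ?p2 = "cpr2 C A A" and ?AA = "cprod C A A"
  have r: "dle D ?AA (ptop D ?AA) (dre D (cpair C ?p1 ?p1) \<rho>)" using pe_refl[OF a(3) a(1), of ?p1] a by simp
  have 1: "dle D ?AA (dre D (cpair C ?p1 ?p1) \<rho>) (dre D (cpair C (ccomp C f ?p1) (ccomp C g ?p1)) \<sigma>)"
    using qrel_gen[OF a(1,2) P a(5,6,8), of ?p1 ?p1] a by simp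
  have 2: "dle D ?AA \<rho> (dre D (cpair C (ccomp C g ?p1) (ccomp C h ?p2)) \<sigma>)"
    using qrel_gen[OF a(1,2) P a(6,7,9), of ?p1 ?p2] a P by simp
  have 3: "dle D ?AA (pmeet D ?AA (dre D (cpair C (ccomp C f ?p1) (ccomp C g ?p1)) \<sigma>) (dre D (cpair C (ccomp C g ?p1) (ccomp C h ?p2)) \<sigma>))
      (dre D (cpair C (ccomp C f ?p1) (ccomp C h ?p2)) \<sigma>)"
    using pe_trans[OF a(4) a(2), of "ccomp C f ?p1" "ccomp C g ?p1" "ccomp C h ?p2"] a hh by simp
  have 4: "dle D ?AA \<rho> (dre D (cpair C (ccomp C f ?p1) (ccomp C g ?p1)) \<sigma>)"
    using le_trans[OF _ _ _ _ le_top r] le_trans[OF _ _ _ _ _ 1] a hh P by simp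
  have "dle D ?AA \<rho> (dre D (cpair C (ccomp C f ?p1) (ccomp C h ?p2)) \<sigma>)"
    by (rule le_trans_meet[OF _ _ _ _ _ 4 2 3]) (use a hh P in simp_all)
  then show ?thesis unfolding qrel_unf .
qed

lemma qrel_comp: "A \<in> cObj C \<Longrightarrow> B \<in> cObj C \<Longrightarrow> E \<in> cObj C \<Longrightarrow> \<rho> \<in> dPr D (cprod C A A) \<Longrightarrow> \<sigma> \<in> dPr D (cprod C B B) \<Longrightarrow>
  \<tau> \<in> dPr D (cprod C E E) \<Longrightarrow>
  f \<in> hom C A B \<Longrightarrow> f' \<in> hom C A B \<Longrightarrow> g \<in> hom C B E \<Longrightarrow> g' \<in> hom C B E \<Longrightarrow>
  qrel C D (A,\<rho>) (B,\<sigma>) f f' \<Longrightarrow> qrel C D (B,\<sigma>) (E,\<tau>) g g' \<Longrightarrow> qrel C D (A,\<rho>) (E,\<tau>) (ccomp C g f) (ccomp C g' f')"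
proof -
  assume a: "A \<in> cObj C" "B \<in> cObj C" "E \<in> cObj C" "\<rho> \<in> dPr D (cprod C A A)" "\<sigma> \<in> dPr D (cprod C B B)"
  "\<tau> \<in> dPr D (cprod C E E)" "f \<in> hom C A B" "f' \<in> hom C A B" "g \<in> hom C B E" "g' \<in> hom C B E"
  "qrel C D (A,\<rho>) (B,\<sigma>) f f'" "qrel C D (B,\<sigma>) (E,\<tau>) g g'"
  have hh: "f \<in> cArr C" "cdom C f = A" "ccod C f = B" "f' \<in> cArr C" "cdom C f' = A" "ccod C f' = B"
    "g \<in> cArr C" "cdom C g = B" "ccod C g = E" "g' \<in> cArr C" "cdom C g' = B" "ccod C g' = E"
    using a(7-10) by (auto simp: hom_def)
  let ?p1 = "cpr1 C A A" and ?p2 = "cpr2 C A A" and ?AA = "cprod C A A"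
  have 1: "dle D ?AA \<rho> (dre D (cpair C (ccomp C f ?p1) (ccomp C f' ?p2)) \<sigma>)" using a(11) qrel_unf by simp
  have 2: "dle D ?AA (dre D (cpair C (ccomp C f ?p1) (ccomp C f' ?p2)) \<sigma>) (dre D (cpair C (ccomp C g (ccomp C f ?p1)) (ccomp C g' (ccomp C f' ?p2))) \<tau>)"
    using qrel_gen[OF a(2,3,5,6,9,10,12), of "ccomp C f ?p1" "ccomp C f' ?p2"] a hh by simp
  have "dle D ?AA \<rho> (dre D (cpair C (ccomp C g (ccomp C f ?p1)) (ccomp C g' (ccomp C f' ?p2))) \<tau>)"
    using le_trans[OF _ _ _ _ 1 2] a hh by simp
  then show ?thesis unfolding qrel_unf using a hh by simp
qed

lemma qrel_pair: "A \<in> cObj C \<Longrightarrow> B \<in> cObj C \<Longrightarrow> E \<in> cObj C \<Longrightarrow> \<rho> \<in> dPr D (cprod C A A) \<Longrightarrow> \<sigma> \<in> dPr D (cprod C B B) \<Longrightarrow>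
  \<tau> \<in> dPr D (cprod C E E) \<Longrightarrow>
  f \<in> hom C A B \<Longrightarrow> f' \<in> hom C A B \<Longrightarrow> g \<in> hom C A E \<Longrightarrow> g' \<in> hom C A E \<Longrightarrow>
  qrel C D (A,\<rho>) (B,\<sigma>) f f' \<Longrightarrow> qrel C D (A,\<rho>) (E,\<tau>) g g' \<Longrightarrow>
  qrel C D (A,\<rho>) (qprod C D (B,\<sigma>) (E,\<tau>)) (cpair C f g) (cpair C f' g')"
proof -
  assume a: "A \<in> cObj C" "B \<in> cObj C" "E \<in> cObj C" "\<rho> \<in> dPr D (cprod C A A)" "\<sigma> \<in> dPr D (cprod C B B)"
  "\<tau> \<in> dPr D (cprod C E E)" "f \<in> hom C A B" "f' \<in> hom C A B" "g \<in> hom C A E" "g' \<in> hom C A E"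
  "qrel C D (A,\<rho>) (B,\<sigma>) f f'" "qrel C D (A,\<rho>) (E,\<tau>) g g'"
  have hh: "f \<in> cArr C" "cdom C f = A" "ccod C f = B" "f' \<in> cArr C" "cdom C f' = A" "ccod C f' = B"
    "g \<in> cArr C" "cdom C g = A" "ccod C g = E" "g' \<in> cArr C" "cdom C g' = A" "ccod C g' = E"
    using a(7-10) by (auto simp: hom_def)
  let ?p1 = "cpr1 C A A" and ?p2 = "cpr2 C A A" and ?AA = "cprod C A A"
  have 1: "dle D ?AA \<rho> (dre D (cpair C (ccomp C f ?p1) (ccomp C f' ?p2)) \<sigma>)" using a(11) qrel_unf by simp
  have 2: "dle D ?AA \<rho> (dre D (cpair C (ccomp C g ?p1) (ccomp C g' ?p2)) \<tau>)" using a(12) qrel_unf by simp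
  have "qrel C D (A, \<rho>) (cprod C B E, qprodrel C D B E \<sigma> \<tau>) (cpair C f g) (cpair C f' g')"
    unfolding qrel_unf using a hh 1 2 by (simp add: qprodrel_gen le_meetI)
  then show ?thesis by (simp add: qprod_def)
qed

lemma qcat_sel[simp]: "cObj (qcat C D) = qobjs C D" "cArr (qcat C D) = qarrs C D" "cdom (qcat C D) = fst"
  "ccod (qcat C D) = (\<lambda>F. fst (snd F))" "ccomp (qcat C D) = qcomp C D" "cid (qcat C D) = qid C D"
  "cprod (qcat C D) = qprod C D" "cpr1 (qcat C D) = qpr1 C D" "cpr2 (qcat C D) = qpr2 C D"
  "cpair (qcat C D) = qpair C D" "cterm (qcat C D) = qterm C D" "cbang (qcat C D) = qbang C D"
  by (simp_all add: qcat_def)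

lemma qdoc_sel[simp]: "dle (qdoc C D) X = dle D (fst X)" "dre (qdoc C D) F = dre D (qrep F)" "deq (qdoc C D) = snd"
  by (simp_all add: qdoc_def)
lemma qdoc_Pr: "dPr (qdoc C D) X = {\<alpha>. desc (fst X) (snd X) \<alpha>}"
  by (auto simp: qdoc_def desc_def)

lemma qpres_unf: "qpres C D (A,\<rho>) (B,\<sigma>) f \<longleftrightarrow> f \<in> hom C A B \<and> qrel C D (A,\<rho>) (B,\<sigma>) f f"
  unfolding qpres_def by simp
lemma qclass_mem: "g \<in> qclass C D X Y f \<longleftrightarrow> qpres C D X Y g \<and> qrel C D X Y g f"
  unfolding qclass_def by simp
lemma qclass_self: "qpres C D X Y f \<Longrightarrow> f \<in> qclass C D X Y f"
  unfolding qclass_def qpres_def by simp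
lemma qrep_in: "qpres C D X Y f \<Longrightarrow> qrep (X', Y', qclass C D X Y f) \<in> qclass C D X Y f"
  unfolding qrep_def snd_conv by (rule someI[of _ f]) (rule qclass_self)

lemma qclass_eq: "(A,\<rho>) \<in> qobjs C D \<Longrightarrow> (B,\<sigma>) \<in> qobjs C D \<Longrightarrow>
  qpres C D (A,\<rho>) (B,\<sigma>) f \<Longrightarrow> qpres C D (A,\<rho>) (B,\<sigma>) f' \<Longrightarrow> qrel C D (A,\<rho>) (B,\<sigma>) f f' \<Longrightarrow>
  qclass C D (A,\<rho>) (B,\<sigma>) f = qclass C D (A,\<rho>) (B,\<sigma>) f'"
proof -
  assume a: "(A,\<rho>) \<in> qobjs C D" "(B,\<sigma>) \<in> qobjs C D" "qpres C D (A,\<rho>) (B,\<sigma>) f" "qpres C D (A,\<rho>) (B,\<sigma>) f'"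
    "qrel C D (A,\<rho>) (B,\<sigma>) f f'"
  have o: "A \<in> cObj C" "per_equiv C D A \<rho>" "B \<in> cObj C" "per_equiv C D B \<sigma>" using a by auto
  have h: "f \<in> hom C A B" "f' \<in> hom C A B" using a qpres_unf by auto
  have s: "qrel C D (A,\<rho>) (B,\<sigma>) f' f" using qrel_sym[OF o(1,3,2,4) h a(5)] .
  show ?thesis
  proof (rule set_eqI)
    fix g show "g \<in> qclass C D (A,\<rho>) (B,\<sigma>) f \<longleftrightarrow> g \<in> qclass C D (A,\<rho>) (B,\<sigma>) f'"
      unfolding qclass_mem using qrel_trans[OF o(1,3,2,4), of g] h a(5) s qpres_unf by blast
  qed
qed

lemma qhom: "F \<in> hom (qcat C D) X Y \<longleftrightarrow> X \<in> qobjs C D \<and> Y \<in> qobjs C D \<and> (\<exists>f. qpres C D X Y f \<and> F = (X, Y, qclass C D X Y f))"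
  unfolding hom_def by (cases F rule: prod_cases3) (auto simp: qarrs_def)

lemma qterm_obj[simp]: "qterm C D \<in> qobjs C D"
  unfolding qterm_def using deq_pe by simp
lemma qprod_obj[simp]: "(A,\<rho>) \<in> qobjs C D \<Longrightarrow> (B,\<sigma>) \<in> qobjs C D \<Longrightarrow> qprod C D (A,\<rho>) (B,\<sigma>) \<in> qobjs C D"
  unfolding qprod_def using qprodrel_pe by simp

lemma qprodrel_canon: "qprodrel C D A B \<rho> \<sigma> = pmeet D (cprod C (cprod C A B) (cprod C A B))
  (dre D (cpair C (ccomp C (cpr1 C A B) (cpr1 C (cprod C A B) (cprod C A B))) (ccomp C (cpr1 C A B) (cpr2 C (cprod C A B) (cprod C A B)))) \<rho>)
  (dre D (cpair C (ccomp C (cpr2 C A B) (cpr1 C (cprod C A B) (cprod C A B))) (ccomp C (cpr2 C A B) (cpr2 C (cprod C A B) (cprod C A B)))) \<sigma>)"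
  unfolding qprodrel_def Let_def ptimes_def by simp

lemma qpres_id: "(A,\<rho>) \<in> qobjs C D \<Longrightarrow> qpres C D (A,\<rho>) (A,\<rho>) (cid C A)"
  unfolding qpres_unf qrel_unf using pe_Pr[of A \<rho>] by (simp add: hom_def)

lemma qpres_pr1: "(A,\<rho>) \<in> qobjs C D \<Longrightarrow> (B,\<sigma>) \<in> qobjs C D \<Longrightarrow> qpres C D (qprod C D (A,\<rho>) (B,\<sigma>)) (A,\<rho>) (cpr1 C A B)"
  unfolding qprod_def using pe_Pr[of A \<rho>] pe_Pr[of B \<sigma>]
  by (simp add: qpres_unf qrel_unf hom_def qprodrel_canon meet_le1)
lemma qpres_pr2: "(A,\<rho>) \<in> qobjs C D \<Longrightarrow> (B,\<sigma>) \<in> qobjs C D \<Longrightarrow> qpres C D (qprod C D (A,\<rho>) (B,\<sigma>)) (B,\<sigma>) (cpr2 C A B)"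
  unfolding qprod_def using pe_Pr[of A \<rho>] pe_Pr[of B \<sigma>]
  by (simp add: qpres_unf qrel_unf hom_def qprodrel_canon meet_le2)

lemma qpres_bang: "(A,\<rho>) \<in> qobjs C D \<Longrightarrow> qpres C D (A,\<rho>) (qterm C D) (cbang C A)"
proof -
  assume a: "(A,\<rho>) \<in> qobjs C D"
  have o: "A \<in> cObj C" "\<rho> \<in> dPr D (cprod C A A)" using a pe_Pr by auto
  have "dle D (cprod C A A) (ptop D (cprod C A A)) (dre D (cpair C (cbang C (cprod C A A)) (cbang C (cprod C A A))) (deq D (cterm C)))"
    using eq_refl[of "cbang C (cprod C A A)" "cterm C"] o by simp
  then have "dle D (cprod C A A) \<rho> (dre D (cpair C (cbang C (cprod C A A)) (cbang C (cprod C A A))) (deq D (cterm C)))"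
    using le_trans[OF _ _ _ _ le_top] o by simp
  then show ?thesis unfolding qterm_def qpres_unf qrel_unf using o by (simp add: hom_def)
qed

lemma qpres_comp: "(A,\<rho>) \<in> qobjs C D \<Longrightarrow> (B,\<sigma>) \<in> qobjs C D \<Longrightarrow> (E,\<tau>) \<in> qobjs C D \<Longrightarrow>
  qpres C D (A,\<rho>) (B,\<sigma>) f \<Longrightarrow> qpres C D (B,\<sigma>) (E,\<tau>) g \<Longrightarrow> qpres C D (A,\<rho>) (E,\<tau>) (ccomp C g f)"
  unfolding qpres_unf using qrel_comp[of A B E \<rho> \<sigma> \<tau> f f g g] pe_Pr[of A \<rho>] pe_Pr[of B \<sigma>] pe_Pr[of E \<tau>]
  by (auto simp: hom_def)

lemma qpres_pair: "(A,\<rho>) \<in> qobjs C D \<Longrightarrow> (B,\<sigma>) \<in> qobjs C D \<Longrightarrow> (E,\<tau>) \<in> qobjs C D \<Longrightarrow>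
  qpres C D (A,\<rho>) (B,\<sigma>) f \<Longrightarrow> qpres C D (A,\<rho>) (E,\<tau>) g \<Longrightarrow> qpres C D (A,\<rho>) (qprod C D (B,\<sigma>) (E,\<tau>)) (cpair C f g)"
proof -
  assume a: "(A,\<rho>) \<in> qobjs C D" "(B,\<sigma>) \<in> qobjs C D" "(E,\<tau>) \<in> qobjs C D"
   "qpres C D (A,\<rho>) (B,\<sigma>) f" "qpres C D (A,\<rho>) (E,\<tau>) g"
  have "qrel C D (A,\<rho>) (qprod C D (B,\<sigma>) (E,\<tau>)) (cpair C f g) (cpair C f g)"
    using qrel_pair[of A B E \<rho> \<sigma> \<tau> f f g g] a pe_Pr[of A \<rho>] pe_Pr[of B \<sigma>] pe_Pr[of E \<tau>] by (auto simp: qpres_unf)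
  moreover have "cpair C f g \<in> hom C A (cprod C B E)" using a by (auto simp: qpres_unf hom_def)
  ultimately show ?thesis unfolding qprod_def qpres_def by simp
qed

lemma re_equiv: "(A,\<rho>) \<in> qobjs C D \<Longrightarrow> (B,\<sigma>) \<in> qobjs C D \<Longrightarrow> f \<in> hom C A B \<Longrightarrow> g \<in> hom C A B \<Longrightarrow>
  qrel C D (A,\<rho>) (B,\<sigma>) f g \<Longrightarrow> desc B \<sigma> \<alpha> \<Longrightarrow> dre D f \<alpha> = dre D g \<alpha>"
proof -
  assume a: "(A,\<rho>) \<in> qobjs C D" "(B,\<sigma>) \<in> qobjs C D" "f \<in> hom C A B" "g \<in> hom C A B"
   "qrel C D (A,\<rho>) (B,\<sigma>) f g" "desc B \<sigma> \<alpha>"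
  have o: "A \<in> cObj C" "per_equiv C D A \<rho>" "B \<in> cObj C" "per_equiv C D B \<sigma>" using a by auto
  note P = pe_Pr[OF o(2)] pe_Pr[OF o(4)]
  have h: "f \<in> cArr C" "cdom C f = A" "ccod C f = B" "g \<in> cArr C" "cdom C g = A" "ccod C g = B"
    using a(3,4) by (auto simp: hom_def)
  have al: "\<alpha> \<in> dPr D B" using a(6) desc_def by auto
  have s: "qrel C D (A,\<rho>) (B,\<sigma>) g f" using qrel_sym[OF o(1,3,2,4) a(3,4,5)] .
  have key: "dle D A (dre D u \<alpha>) (dre D v \<alpha>)" if u: "u \<in> hom C A B" "v \<in> hom C A B" "qrel C D (A,\<rho>) (B,\<sigma>) u v" for u v
  proof -
    have uu: "u \<in> cArr C" "cdom C u = A" "ccod C u = B" "v \<in> cArr C" "cdom C v = A" "ccod C v = B"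
      using u by (auto simp: hom_def)
    have 1: "dle D A (ptop D A) (dre D (cpair C (cid C A) (cid C A)) \<rho>)" using pe_refl[OF o(2,1), of "cid C A"] o by simp
    have 2: "dle D A (dre D (cpair C (cid C A) (cid C A)) \<rho>) (dre D (cpair C u v) \<sigma>)"
      using qrel_gen[OF o(1,3) P u, of "cid C A" "cid C A"] o uu by simp
    have 3: "dle D A (pmeet D A (dre D u \<alpha>) (dre D (cpair C u v) \<sigma>)) (dre D v \<alpha>)"
      using desc_gen[OF a(6) o(3) P(2), of u v] uu by simp
    have 4: "dle D A (dre D u \<alpha>) (dre D (cpair C u v) \<sigma>)"
      using le_trans[OF _ _ _ _ le_top 1] le_trans[OF _ _ _ _ _ 2] o uu al P by simp
    show ?thesis by (rule le_trans_meet[where d="dre D u \<alpha>", OF _ _ _ _ _ _ 4 3]) (use o uu al P in simp_all)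
  qed
  show ?thesis using key[OF a(3,4,5)] key[OF a(4,3) s] le_antisym o h al by simp
qed

lemma re_desc: "(A,\<rho>) \<in> qobjs C D \<Longrightarrow> (B,\<sigma>) \<in> qobjs C D \<Longrightarrow> qpres C D (A,\<rho>) (B,\<sigma>) f \<Longrightarrow>
  desc B \<sigma> \<alpha> \<Longrightarrow> desc A \<rho> (dre D f \<alpha>)"
proof -
  assume a: "(A,\<rho>) \<in> qobjs C D" "(B,\<sigma>) \<in> qobjs C D" "qpres C D (A,\<rho>) (B,\<sigma>) f" "desc B \<sigma> \<alpha>"
  have o: "A \<in> cObj C" "per_equiv C D A \<rho>" "B \<in> cObj C" "per_equiv C D B \<sigma>" using a by auto
  note P = pe_Pr[OF o(2)] pe_Pr[OF o(4)]
  have f: "f \<in> hom C A B" "qrel C D (A,\<rho>) (B,\<sigma>) f f" using a(3) qpres_unf by auto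
  have h: "f \<in> cArr C" "cdom C f = A" "ccod C f = B" using f by (auto simp: hom_def)
  have al: "\<alpha> \<in> dPr D B" using a(4) desc_def by auto
  let ?p1 = "cpr1 C A A" and ?p2 = "cpr2 C A A" and ?AA = "cprod C A A"
  have 1: "dle D ?AA \<rho> (dre D (cpair C (ccomp C f ?p1) (ccomp C f ?p2)) \<sigma>)" using f qrel_unf by simp
  have 2: "dle D ?AA (pmeet D ?AA (dre D (ccomp C f ?p1) \<alpha>) (dre D (cpair C (ccomp C f ?p1) (ccomp C f ?p2)) \<sigma>)) (dre D (ccomp C f ?p2) \<alpha>)"
    using desc_gen[OF a(4) o(3) P(2), of "ccomp C f ?p1" "ccomp C f ?p2"] h o by simp
  have 3: "dle D ?AA (pmeet D ?AA (dre D (ccomp C f ?p1) \<alpha>) \<rho>) (dre D (ccomp C f ?p2) \<alpha>)"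
    by (rule le_trans[OF _ _ _ _ meet_mono[OF _ _ _ _ _ le_refl 1] 2]) (use o h al P in simp_all)
  show ?thesis by (rule desc_intro) (use o h al P 3 in simp_all)
qed

lemma rep_deq: "(A,\<rho>) \<in> qobjs C D \<Longrightarrow> B \<in> cObj C \<Longrightarrow> f \<in> hom C A B \<Longrightarrow> g \<in> hom C A B \<Longrightarrow>
  qrel C D (A,\<rho>) (B, deq D B) f g \<Longrightarrow> f = g"
proof -
  assume a: "(A,\<rho>) \<in> qobjs C D" "B \<in> cObj C" "f \<in> hom C A B" "g \<in> hom C A B" "qrel C D (A,\<rho>) (B, deq D B) f g"
  have o: "A \<in> cObj C" "per_equiv C D A \<rho>" using a by auto
  note P = pe_Pr[OF o(2)]
  have h: "f \<in> cArr C" "cdom C f = A" "ccod C f = B" "g \<in> cArr C" "cdom C g = A" "ccod C g = B"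
    using a(3,4) by (auto simp: hom_def)
  have 1: "dle D A (ptop D A) (dre D (cpair C (cid C A) (cid C A)) \<rho>)" using pe_refl[OF o(2,1), of "cid C A"] o by simp
  have 2: "dle D A (dre D (cpair C (cid C A) (cid C A)) \<rho>) (dre D (cpair C f g) (deq D B))"
    using qrel_gen[OF o(1) a(2) P _ a(3,4,5), of "cid C A" "cid C A"] o h a(2) by simp
  have "dle D A (ptop D A) (dre D (cpair C f g) (deq D B))" using le_trans[OF _ _ _ _ 1 2] o h a(2) P by simp
  then show ?thesis using CD a(3,4) unfolding comprehensive_diagonals_def by blast
qed

end



context WH begin

lemma desc_Pr: "desc A \<rho> \<alpha> \<Longrightarrow> \<alpha> \<in> dPr D A" unfolding desc_def by simp

lemma allL_q_char: "fst (ccod (qcat C D) F) \<in> cObj C \<Longrightarrow> \<beta> \<in> dPr (qdoc C D) (ccod (qcat C D) F) \<Longrightarrow>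
  (\<forall>\<gamma>\<in>dPr (qdoc C D) (ccod (qcat C D) F). dle (qdoc C D) (ccod (qcat C D) F) \<gamma> \<beta> \<longleftrightarrow> dle (qdoc C D) (cdom (qcat C D) F) (dre (qdoc C D) F \<gamma>) \<alpha>)
  \<Longrightarrow> allL (qcat C D) (qdoc C D) F \<alpha> = \<beta>"
  unfolding allL_def[of "qcat C D"]
proof (rule the_equality)
  fix b assume a: "fst (ccod (qcat C D) F) \<in> cObj C" "\<beta> \<in> dPr (qdoc C D) (ccod (qcat C D) F)"
    "\<forall>\<gamma>\<in>dPr (qdoc C D) (ccod (qcat C D) F). dle (qdoc C D) (ccod (qcat C D) F) \<gamma> \<beta> \<longleftrightarrow> dle (qdoc C D) (cdom (qcat C D) F) (dre (qdoc C D) F \<gamma>) \<alpha>"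
    and b: "b \<in> dPr (qdoc C D) (ccod (qcat C D) F) \<and> (\<forall>\<gamma>\<in>dPr (qdoc C D) (ccod (qcat C D) F). dle (qdoc C D) (ccod (qcat C D) F) \<gamma> b \<longleftrightarrow> dle (qdoc C D) (cdom (qcat C D) F) (dre (qdoc C D) F \<gamma>) \<alpha>)"
  let ?Y = "fst (ccod (qcat C D) F)"
  have m: "\<beta> \<in> dPr D ?Y" "b \<in> dPr D ?Y" using a b by (auto simp: qdoc_Pr desc_def)
  have "dle D ?Y b b" "dle D ?Y \<beta> \<beta>" using m a by simp_all
  then have "dle D ?Y b \<beta>" "dle D ?Y \<beta> b" using a b by auto
  then show "b = \<beta>" using le_antisym a m by blast
qed auto

lemma exL_q_char: "fst (ccod (qcat C D) F) \<in> cObj C \<Longrightarrow> \<beta> \<in> dPr (qdoc C D) (ccod (qcat C D) F) \<Longrightarrow>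
  (\<forall>\<gamma>\<in>dPr (qdoc C D) (ccod (qcat C D) F). dle (qdoc C D) (ccod (qcat C D) F) \<beta> \<gamma> \<longleftrightarrow> dle (qdoc C D) (cdom (qcat C D) F) \<alpha> (dre (qdoc C D) F \<gamma>))
  \<Longrightarrow> exL (qcat C D) (qdoc C D) F \<alpha> = \<beta>"
  unfolding exL_def[of "qcat C D"]
proof (rule the_equality)
  fix b assume a: "fst (ccod (qcat C D) F) \<in> cObj C" "\<beta> \<in> dPr (qdoc C D) (ccod (qcat C D) F)"
    "\<forall>\<gamma>\<in>dPr (qdoc C D) (ccod (qcat C D) F). dle (qdoc C D) (ccod (qcat C D) F) \<beta> \<gamma> \<longleftrightarrow> dle (qdoc C D) (cdom (qcat C D) F) \<alpha> (dre (qdoc C D) F \<gamma>)"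
    and b: "b \<in> dPr (qdoc C D) (ccod (qcat C D) F) \<and> (\<forall>\<gamma>\<in>dPr (qdoc C D) (ccod (qcat C D) F). dle (qdoc C D) (ccod (qcat C D) F) b \<gamma> \<longleftrightarrow> dle (qdoc C D) (cdom (qcat C D) F) \<alpha> (dre (qdoc C D) F \<gamma>))"
  let ?Y = "fst (ccod (qcat C D) F)"
  have m: "\<beta> \<in> dPr D ?Y" "b \<in> dPr D ?Y" using a b by (auto simp: qdoc_Pr desc_def)
  have "dle D ?Y b b" "dle D ?Y \<beta> \<beta>" using m a by simp_all
  then have "dle D ?Y b \<beta>" "dle D ?Y \<beta> b" using a b by auto
  then show "b = \<beta>" using le_antisym a m by blast
qed auto

lemma qdoc_Pr_deq: "A \<in> cObj C \<Longrightarrow> dPr (qdoc C D) (A, deq D A) = dPr D A"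
  unfolding qdoc_Pr using desc_deq desc_Pr by auto

lemma qrep_qbang: "(A,\<rho>) \<in> qobjs C D \<Longrightarrow> qrep (qbang C D (A,\<rho>)) = cbang C A"
proof -
  assume a: "(A,\<rho>) \<in> qobjs C D"
  have "qrep (qbang C D (A,\<rho>)) \<in> qclass C D (A,\<rho>) (qterm C D) (cbang C A)"
    unfolding qbang_def using qrep_in[OF qpres_bang[OF a]] by simp
  then have "qrep (qbang C D (A,\<rho>)) \<in> hom C A (cterm C)" by (simp add: qclass_mem qpres_def qterm_def)
  then have h: "qrep (qbang C D (A,\<rho>)) \<in> cArr C" "cdom C (qrep (qbang C D (A,\<rho>))) = A"
     "ccod C (qrep (qbang C D (A,\<rho>))) = cterm C" by (simp_all add: hom_def)
  show ?thesis using bang_uniq[OF h(1,3)] h(2) by simp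
qed

lemma qrep_qpr1_deq: "A \<in> cObj C \<Longrightarrow> (B,\<sigma>) \<in> qobjs C D \<Longrightarrow> qrep (qpr1 C D (A, deq D A) (B,\<sigma>)) = cpr1 C A B"
proof -
  assume a: "A \<in> cObj C" "(B,\<sigma>) \<in> qobjs C D"
  have A: "(A, deq D A) \<in> qobjs C D" using a deq_pe by simp
  have "qrep (qpr1 C D (A, deq D A) (B,\<sigma>)) \<in> qclass C D (qprod C D (A, deq D A) (B,\<sigma>)) (A, deq D A) (cpr1 C A B)"
    unfolding qpr1_def using qrep_in[OF qpres_pr1[OF A a(2)]] by simp
  then have 1: "qpres C D (qprod C D (A, deq D A) (B,\<sigma>)) (A, deq D A) (qrep (qpr1 C D (A, deq D A) (B,\<sigma>)))"
    "qrel C D (qprod C D (A, deq D A) (B,\<sigma>)) (A, deq D A) (qrep (qpr1 C D (A, deq D A) (B,\<sigma>))) (cpr1 C A B)"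
    by (auto simp: qclass_mem)
  show ?thesis
    by (rule rep_deq[of "cprod C A B" "qprodrel C D A B (deq D A) \<sigma>" A])
       (use 1 a A qprod_obj[OF A a(2)] in \<open>auto simp: qprod_def qpres_def hom_def\<close>)
qed

lemma qrep_qpr2_deq: "(W,\<omega>) \<in> qobjs C D \<Longrightarrow> A \<in> cObj C \<Longrightarrow> qrep (qpr2 C D (W,\<omega>) (A, deq D A)) = cpr2 C W A"
proof -
  assume a: "(W,\<omega>) \<in> qobjs C D" "A \<in> cObj C"
  have A: "(A, deq D A) \<in> qobjs C D" using a deq_pe by simp
  have "qrep (qpr2 C D (W,\<omega>) (A, deq D A)) \<in> qclass C D (qprod C D (W,\<omega>) (A, deq D A)) (A, deq D A) (cpr2 C W A)"
    unfolding qpr2_def using qrep_in[OF qpres_pr2[OF a(1) A]] by simp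
  then have 1: "qpres C D (qprod C D (W,\<omega>) (A, deq D A)) (A, deq D A) (qrep (qpr2 C D (W,\<omega>) (A, deq D A)))"
    "qrel C D (qprod C D (W,\<omega>) (A, deq D A)) (A, deq D A) (qrep (qpr2 C D (W,\<omega>) (A, deq D A))) (cpr2 C W A)"
    by (auto simp: qclass_mem)
  show ?thesis
    by (rule rep_deq[of "cprod C W A" "qprodrel C D W A \<omega> (deq D A)" A])
       (use 1 a A qprod_obj[OF a(1) A] in \<open>auto simp: qprod_def qpres_def hom_def\<close>)
qed

lemma LHS_id: "A \<in> cObj C \<Longrightarrow> (B,\<sigma>) \<in> qobjs C D \<Longrightarrow> R \<in> dPr D (cprod C A B) \<Longrightarrow>
  allL (qcat C D) (qdoc C D) (qbang C D (A, deq D A)) (exL (qcat C D) (qdoc C D) (qpr1 C D (A, deq D A) (B,\<sigma>)) R)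
  = allL C D (cbang C A) (exL C D (cpr1 C A B) R)"
proof -
  assume a: "A \<in> cObj C" "(B,\<sigma>) \<in> qobjs C D" "R \<in> dPr D (cprod C A B)"
  have B: "B \<in> cObj C" using a by simp
  have A: "(A, deq D A) \<in> qobjs C D" using a deq_pe by simp
  have e: "exL (qcat C D) (qdoc C D) (qpr1 C D (A, deq D A) (B,\<sigma>)) R = exL C D (cpr1 C A B) R"
  proof (rule exL_q_char)
    show "fst (ccod (qcat C D) (qpr1 C D (A, deq D A) (B, \<sigma>))) \<in> cObj C" using a by (simp add: qpr1_def)
    show "exL C D (cpr1 C A B) R \<in> dPr (qdoc C D) (ccod (qcat C D) (qpr1 C D (A, deq D A) (B, \<sigma>)))"
      using a B qdoc_Pr_deq ex1_Pr by (simp add: qpr1_def)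
    show "\<forall>\<gamma>\<in>dPr (qdoc C D) (ccod (qcat C D) (qpr1 C D (A, deq D A) (B, \<sigma>))).
       dle (qdoc C D) (ccod (qcat C D) (qpr1 C D (A, deq D A) (B, \<sigma>))) (exL C D (cpr1 C A B) R) \<gamma> =
       dle (qdoc C D) (cdom (qcat C D) (qpr1 C D (A, deq D A) (B, \<sigma>))) R (dre (qdoc C D) (qpr1 C D (A, deq D A) (B, \<sigma>)) \<gamma>)"
      using ex1_char[OF a(1) B a(3)] qrep_qpr1_deq[OF a(1,2)] a B qdoc_Pr_deq
      by (simp add: qpr1_def qprod_def)
  qed
  have ex: "exL C D (cpr1 C A B) R \<in> dPr D A" using a B by simp
  show ?thesis unfolding e
  proof (rule allL_q_char)
    show "fst (ccod (qcat C D) (qbang C D (A, deq D A))) \<in> cObj C" by (simp add: qbang_def qterm_def)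
    show "allL C D (cbang C A) (exL C D (cpr1 C A B) R) \<in> dPr (qdoc C D) (ccod (qcat C D) (qbang C D (A, deq D A)))"
      using allbang_char[OF a(1) ex] qdoc_Pr_deq[of "cterm C"] by (simp add: qbang_def qterm_def)
    show "\<forall>\<gamma>\<in>dPr (qdoc C D) (ccod (qcat C D) (qbang C D (A, deq D A))).
       dle (qdoc C D) (ccod (qcat C D) (qbang C D (A, deq D A))) \<gamma> (allL C D (cbang C A) (exL C D (cpr1 C A B) R)) =
       dle (qdoc C D) (cdom (qcat C D) (qbang C D (A, deq D A))) (dre (qdoc C D) (qbang C D (A, deq D A)) \<gamma>) (exL C D (cpr1 C A B) R)"
      using allbang_char[OF a(1) ex] qdoc_Pr_deq[of "cterm C"] qrep_qbang[OF A] by (simp add: qbang_def qterm_def)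
  qed
qed

lemma all_desc: "W \<in> cObj C \<Longrightarrow> A \<in> cObj C \<Longrightarrow> per_equiv C D W \<omega> \<Longrightarrow>
  desc (cprod C W A) (qprodrel C D W A \<omega> (deq D A)) R' \<Longrightarrow> desc W \<omega> (allL C D (cpr1 C W A) R')"
proof -
  assume a: "W \<in> cObj C" "A \<in> cObj C" "per_equiv C D W \<omega>" "desc (cprod C W A) (qprodrel C D W A \<omega> (deq D A)) R'"
  have P: "\<omega> \<in> dPr D (cprod C W W)" using pe_Pr[OF a(3)] .
  have R: "R' \<in> dPr D (cprod C W A)" using desc_Pr[OF a(4)] .
  let ?\<Phi> = "allL C D (cpr1 C W A) R'"
  have Phi: "?\<Phi> \<in> dPr D W" using a R by simp
  let ?WW = "cprod C W W"
  let ?q = "cpr1 C ?WW A" and ?a = "cpr2 C ?WW A"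
  let ?u1 = "ccomp C (cpr1 C W W) ?q" and ?u2 = "ccomp C (cpr2 C W W) ?q"
  let ?y = "cpair C ?u1 ?a" and ?y' = "cpair C ?u2 ?a"
  let ?X = "cprod C ?WW A"
  have 1: "dle D ?X (dre D ?u1 ?\<Phi>) (dre D ?y R')"
    using all_elim[OF a(1,2) R, of ?u1 ?a] a by simp
  have 2: "dle D ?X (pmeet D ?X (dre D ?y R') (dre D (cpair C ?y ?y') (qprodrel C D W A \<omega> (deq D A)))) (dre D ?y' R')"
    using desc_gen[OF a(4), of ?y ?y'] a P by simp
  have 3: "dre D (cpair C ?y ?y') (qprodrel C D W A \<omega> (deq D A)) = pmeet D ?X (dre D (cpair C ?u1 ?u2) \<omega>) (dre D (cpair C ?a ?a) (deq D A))"
    using qprodrel_gen[of W A \<omega> "deq D A" ?y ?y'] a P by simp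
  have 4: "dle D ?X (ptop D ?X) (dre D (cpair C ?a ?a) (deq D A))" using eq_refl[of ?a A] a by simp
  have 5: "dle D ?X (dre D ?q (pmeet D ?WW (dre D (cpr1 C W W) ?\<Phi>) \<omega>)) (dre D ?y' R')"
  proof -
    have e: "dre D ?q (pmeet D ?WW (dre D (cpr1 C W W) ?\<Phi>) \<omega>) = pmeet D ?X (dre D ?u1 ?\<Phi>) (dre D (cpair C ?u1 ?u2) \<omega>)"
      using a P Phi by simp
    have "dle D ?X (pmeet D ?X (dre D ?u1 ?\<Phi>) (dre D (cpair C ?u1 ?u2) \<omega>))
           (pmeet D ?X (dre D ?y R') (dre D (cpair C ?y ?y') (qprodrel C D W A \<omega> (deq D A))))"
      unfolding 3
      apply (rule le_meetI)
      using a P Phi R 1 4 le_trans[OF _ _ _ _ meet_le1 1] meet_le2 le_trans[OF _ _ _ _ le_top 4]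
      by (auto intro!: le_meetI meet_le2)
    then show ?thesis unfolding e using le_trans[OF _ _ _ _ _ 2] a P Phi R by simp
  qed
  have 6: "dle D ?WW (pmeet D ?WW (dre D (cpr1 C W W) ?\<Phi>) \<omega>) (dre D (cpr2 C W W) ?\<Phi>)"
    using all_intro[OF a(1,2) R, of "cpr2 C W W" "pmeet D ?WW (dre D (cpr1 C W W) ?\<Phi>) \<omega>"] a P Phi 5 by simp
  show ?thesis by (rule desc_intro) (use a P Phi 6 in simp_all)
qed

lemma RHS_id: "A \<in> cObj C \<Longrightarrow> (W,\<omega>) \<in> qobjs C D \<Longrightarrow> (B,\<sigma>) \<in> qobjs C D \<Longrightarrow>
  ev \<in> hom (qcat C D) (qprod C D (W,\<omega>) (A, deq D A)) (B,\<sigma>) \<Longrightarrow>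
  R \<in> dPr (qdoc C D) (qprod C D (A, deq D A) (B,\<sigma>)) \<Longrightarrow>
  exL (qcat C D) (qdoc C D) (qbang C D (W,\<omega>)) (allL (qcat C D) (qdoc C D) (qpr1 C D (W,\<omega>) (A, deq D A))
      (dre (qdoc C D) (qpair C D (qpr2 C D (W,\<omega>) (A, deq D A)) ev) R))
  = exL C D (cbang C W) (allL C D (cpr1 C W A) (dre D (cpair C (cpr2 C W A) (qrep ev)) R))
  \<and> qpres C D (qprod C D (W,\<omega>) (A, deq D A)) (B,\<sigma>) (qrep ev)"
proof -
  assume a: "A \<in> cObj C" "(W,\<omega>) \<in> qobjs C D" "(B,\<sigma>) \<in> qobjs C D"
    "ev \<in> hom (qcat C D) (qprod C D (W,\<omega>) (A, deq D A)) (B,\<sigma>)"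
    "R \<in> dPr (qdoc C D) (qprod C D (A, deq D A) (B,\<sigma>))"
  have o: "W \<in> cObj C" "per_equiv C D W \<omega>" "B \<in> cObj C" "per_equiv C D B \<sigma>" using a by auto
  have Ah: "(A, deq D A) \<in> qobjs C D" using a deq_pe by simp
  note P = pe_Pr[OF o(2)] pe_Pr[OF o(4)]
  let ?X = "(cprod C W A, qprodrel C D W A \<omega> (deq D A))"
  let ?Y = "(cprod C A B, qprodrel C D A B (deq D A) \<sigma>)"
  have qX: "qprod C D (W,\<omega>) (A, deq D A) = ?X" and qY: "qprod C D (A, deq D A) (B,\<sigma>) = ?Y"
    by (simp_all add: qprod_def)
  have Xo: "?X \<in> qobjs C D" using qprod_obj[OF a(2) Ah] qX by simp
  have Yo: "?Y \<in> qobjs C D" using qprod_obj[OF Ah a(3)] qY by simp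
  obtain e0 where e0: "qpres C D ?X (B,\<sigma>) e0" "ev = (?X, (B,\<sigma>), qclass C D ?X (B,\<sigma>) e0)"
    using a(4) unfolding qhom qX by blast
  have e: "qpres C D ?X (B,\<sigma>) (qrep ev)" using qrep_in[OF e0(1), of ?X "(B,\<sigma>)"] e0(2) by (simp add: qclass_mem)
  have eh: "qrep ev \<in> cArr C" "cdom C (qrep ev) = cprod C W A" "ccod C (qrep ev) = B"
    using e by (auto simp: qpres_unf hom_def)
  have Rd: "desc (cprod C A B) (qprodrel C D A B (deq D A) \<sigma>) R" using a(5) qY by (simp add: qdoc_Pr)
  have RP: "R \<in> dPr D (cprod C A B)" using desc_Pr[OF Rd] .
  let ?k = "cpair C (cpr2 C W A) (qrep ev)"
  have kp: "qpres C D ?X ?Y ?k"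
    using qpres_pair[OF Xo Ah a(3) _ e] qpres_pr2[OF a(2) Ah] qX qY by simp
  have kh: "?k \<in> hom C (cprod C W A) (cprod C A B)" using kp by (simp add: qpres_unf)
  have pq: "qpair C D (qpr2 C D (W,\<omega>) (A, deq D A)) ev = (?X, ?Y, qclass C D ?X ?Y ?k)"
    unfolding qpair_def Let_def using qrep_qpr2_deq[OF a(2) a(1)] e0(2) qX qY by (simp add: qpr2_def)
  have r1: "qrep (qpair C D (qpr2 C D (W,\<omega>) (A, deq D A)) ev) \<in> qclass C D ?X ?Y ?k"
    unfolding pq by (rule qrep_in[OF kp])
  have R1: "dre (qdoc C D) (qpair C D (qpr2 C D (W,\<omega>) (A, deq D A)) ev) R = dre D ?k R"
    using re_equiv[OF Xo Yo _ kh _ Rd] r1 by (simp add: qclass_mem qpres_unf)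
  let ?R' = "dre D ?k R"
  have R'd: "desc (cprod C W A) (qprodrel C D W A \<omega> (deq D A)) ?R'" using re_desc[OF Xo Yo kp Rd] .
  have R'P: "?R' \<in> dPr D (cprod C W A)" using desc_Pr[OF R'd] .
  let ?\<Phi> = "allL C D (cpr1 C W A) ?R'"
  have Phid: "desc W \<omega> ?\<Phi>" using all_desc[OF o(1) a(1) o(2) R'd] .
  have PhiP: "?\<Phi> \<in> dPr D W" using desc_Pr[OF Phid] .
  have r2: "qrep (qpr1 C D (W,\<omega>) (A, deq D A)) \<in> qclass C D ?X (W,\<omega>) (cpr1 C W A)"
    using qrep_in[OF qpres_pr1[OF a(2) Ah]] qX by (simp add: qpr1_def)
  have r2h: "qrep (qpr1 C D (W,\<omega>) (A, deq D A)) \<in> hom C (cprod C W A) W"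
    "qrel C D ?X (W,\<omega>) (qrep (qpr1 C D (W,\<omega>) (A, deq D A))) (cpr1 C W A)"
    using r2 by (auto simp: qclass_mem qpres_unf)
  have p1h: "cpr1 C W A \<in> hom C (cprod C W A) W" using o a by (simp add: hom_def)
  have R2: "allL (qcat C D) (qdoc C D) (qpr1 C D (W,\<omega>) (A, deq D A)) ?R' = ?\<Phi>"
  proof (rule allL_q_char)
    show "fst (ccod (qcat C D) (qpr1 C D (W, \<omega>) (A, deq D A))) \<in> cObj C" using o by (simp add: qpr1_def)
    show "?\<Phi> \<in> dPr (qdoc C D) (ccod (qcat C D) (qpr1 C D (W, \<omega>) (A, deq D A)))"
      using Phid by (simp add: qpr1_def qdoc_Pr)
    show "\<forall>\<gamma>\<in>dPr (qdoc C D) (ccod (qcat C D) (qpr1 C D (W, \<omega>) (A, deq D A))).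
       dle (qdoc C D) (ccod (qcat C D) (qpr1 C D (W, \<omega>) (A, deq D A))) \<gamma> ?\<Phi> =
       dle (qdoc C D) (cdom (qcat C D) (qpr1 C D (W, \<omega>) (A, deq D A))) (dre (qdoc C D) (qpr1 C D (W, \<omega>) (A, deq D A)) \<gamma>) ?R'"
    proof
      fix \<gamma> assume g: "\<gamma> \<in> dPr (qdoc C D) (ccod (qcat C D) (qpr1 C D (W, \<omega>) (A, deq D A)))"
      have gd: "desc W \<omega> \<gamma>" using g by (simp add: qpr1_def qdoc_Pr)
      have gP: "\<gamma> \<in> dPr D W" using desc_Pr[OF gd] .
      have eq: "dre D (qrep (qpr1 C D (W,\<omega>) (A, deq D A))) \<gamma> = dre D (cpr1 C W A) \<gamma>"
        using re_equiv[OF Xo a(2) r2h(1) p1h r2h(2) gd] .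
      show "dle (qdoc C D) (ccod (qcat C D) (qpr1 C D (W, \<omega>) (A, deq D A))) \<gamma> ?\<Phi> =
       dle (qdoc C D) (cdom (qcat C D) (qpr1 C D (W, \<omega>) (A, deq D A))) (dre (qdoc C D) (qpr1 C D (W, \<omega>) (A, deq D A)) \<gamma>) ?R'"
        using all1_char[OF o(1) a(1) R'P] gP eq qX by (simp add: qpr1_def)
    qed
  qed
  have R3: "exL (qcat C D) (qdoc C D) (qbang C D (W,\<omega>)) ?\<Phi> = exL C D (cbang C W) ?\<Phi>"
  proof (rule exL_q_char)
    show "fst (ccod (qcat C D) (qbang C D (W,\<omega>))) \<in> cObj C" by (simp add: qbang_def qterm_def)
    show "exL C D (cbang C W) ?\<Phi> \<in> dPr (qdoc C D) (ccod (qcat C D) (qbang C D (W,\<omega>)))"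
      using exbang_char[OF o(1) PhiP] qdoc_Pr_deq[of "cterm C"] by (simp add: qbang_def qterm_def)
    show "\<forall>\<gamma>\<in>dPr (qdoc C D) (ccod (qcat C D) (qbang C D (W,\<omega>))).
       dle (qdoc C D) (ccod (qcat C D) (qbang C D (W,\<omega>))) (exL C D (cbang C W) ?\<Phi>) \<gamma> =
       dle (qdoc C D) (cdom (qcat C D) (qbang C D (W,\<omega>))) ?\<Phi> (dre (qdoc C D) (qbang C D (W,\<omega>)) \<gamma>)"
      using exbang_char[OF o(1) PhiP] qdoc_Pr_deq[of "cterm C"] qrep_qbang[OF a(2)] by (simp add: qbang_def qterm_def)
  qed
  show ?thesis using R1 R2 R3 e qX by simp
qed

end



context WH begin

lemma transfer: "W0 \<in> cObj C \<Longrightarrow> W \<in> cObj C \<Longrightarrow> A \<in> cObj C \<Longrightarrow> B \<in> cObj C \<Longrightarrow> R \<in> dPr D (cprod C A B) \<Longrightarrow>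
  e0 \<in> hom C (cprod C W0 A) B \<Longrightarrow> e \<in> hom C (cprod C W A) B \<Longrightarrow> g \<in> hom C W0 W \<Longrightarrow>
  dre D (cpair C (cpr2 C W0 A) e0) R = dre D (cpair C (cpr2 C W0 A) (ccomp C e (cpair C (ccomp C g (cpr1 C W0 A)) (cpr2 C W0 A)))) R \<Longrightarrow>
  dle D (cterm C) (exL C D (cbang C W0) (allL C D (cpr1 C W0 A) (dre D (cpair C (cpr2 C W0 A) e0) R)))
     (exL C D (cbang C W) (allL C D (cpr1 C W A) (dre D (cpair C (cpr2 C W A) e) R)))"
proof -
  assume a: "W0 \<in> cObj C" "W \<in> cObj C" "A \<in> cObj C" "B \<in> cObj C" "R \<in> dPr D (cprod C A B)"
   "e0 \<in> hom C (cprod C W0 A) B" "e \<in> hom C (cprod C W A) B" "g \<in> hom C W0 W"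
   "dre D (cpair C (cpr2 C W0 A) e0) R = dre D (cpair C (cpr2 C W0 A) (ccomp C e (cpair C (ccomp C g (cpr1 C W0 A)) (cpr2 C W0 A)))) R"
  have h: "e0 \<in> cArr C" "cdom C e0 = cprod C W0 A" "ccod C e0 = B" "e \<in> cArr C" "cdom C e = cprod C W A" "ccod C e = B"
    "g \<in> cArr C" "cdom C g = W0" "ccod C g = W" using a(6-8) by (auto simp: hom_def)
  let ?\<Psi> = "dre D (cpair C (cpr2 C W A) e) R"
  let ?\<Phi> = "allL C D (cpr1 C W A) ?\<Psi>"
  have Psi: "?\<Psi> \<in> dPr D (cprod C W A)" using a h by simp
  have Phi: "?\<Phi> \<in> dPr D W" using a Psi by simp
  have bc: "dre D g ?\<Phi> = allL C D (cpr1 C W0 A) (dre D (cpair C (cpr2 C W0 A) e0) R)"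
    using BC_all[OF a(2,3) h(7,9) Psi] a h by simp
  let ?E = "exL C D (cbang C W) ?\<Phi>"
  note ec = exbang_char[OF a(2) Phi]
  have E1: "?E \<in> dPr D (cterm C)" using ec by blast
  have E: "?E \<in> dPr D (cterm C)" "dle D W ?\<Phi> (dre D (cbang C W) ?E)"
    using E1 ec[THEN conjunct2, rule_format, OF E1] le_refl[OF term_obj E1] by simp_all
  have "dle D (cdom C g) (dre D g ?\<Phi>) (dre D g (dre D (cbang C W) ?E))"
    by (rule re_mono) (use h E Phi a in simp_all)
  then have 1: "dle D W0 (dre D g ?\<Phi>) (dre D (cbang C W0) ?E)" using h E a by simp
  have gP: "dre D g ?\<Phi> \<in> dPr D W0" using h Phi by simp
  have "dle D (cterm C) (exL C D (cbang C W0) (dre D g ?\<Phi>)) ?E"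
    using exbang_char[OF a(1) gP] E 1 by blast
  then show ?thesis unfolding bc .
qed

lemma K_lemma: "(Z0,\<rho>) \<in> qobjs C D \<Longrightarrow> (W,\<omega>) \<in> qobjs C D \<Longrightarrow> A \<in> cObj C \<Longrightarrow> G \<in> hom (qcat C D) (Z0,\<rho>) (W,\<omega>) \<Longrightarrow>
  fst (ptimes (qcat C D) (Z0,\<rho>) (A, deq D A) G (qid C D (A, deq D A))) = qprod C D (Z0,\<rho>) (A, deq D A) \<and>
  qpres C D (Z0,\<rho>) (W,\<omega>) (qrep G) \<and>
  qpres C D (qprod C D (Z0,\<rho>) (A, deq D A)) (qprod C D (W,\<omega>) (A, deq D A)) (qrep (ptimes (qcat C D) (Z0,\<rho>) (A, deq D A) G (qid C D (A, deq D A)))) \<and>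
  qpres C D (qprod C D (Z0,\<rho>) (A, deq D A)) (qprod C D (W,\<omega>) (A, deq D A)) (cpair C (ccomp C (qrep G) (cpr1 C Z0 A)) (cpr2 C Z0 A)) \<and>
  qrel C D (qprod C D (Z0,\<rho>) (A, deq D A)) (qprod C D (W,\<omega>) (A, deq D A))
     (qrep (ptimes (qcat C D) (Z0,\<rho>) (A, deq D A) G (qid C D (A, deq D A)))) (cpair C (ccomp C (qrep G) (cpr1 C Z0 A)) (cpr2 C Z0 A))"
proof -
  assume a: "(Z0,\<rho>) \<in> qobjs C D" "(W,\<omega>) \<in> qobjs C D" "A \<in> cObj C" "G \<in> hom (qcat C D) (Z0,\<rho>) (W,\<omega>)"
  have o: "Z0 \<in> cObj C" "per_equiv C D Z0 \<rho>" "W \<in> cObj C" "per_equiv C D W \<omega>" using a by auto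
  have Ah: "(A, deq D A) \<in> qobjs C D" using a deq_pe by simp
  let ?Z = "(Z0,\<rho>)" and ?W = "(W,\<omega>)" and ?Ah = "(A, deq D A)"
  let ?X = "(cprod C Z0 A, qprodrel C D Z0 A \<rho> (deq D A))"
  let ?Y = "(cprod C W A, qprodrel C D W A \<omega> (deq D A))"
  have qX: "qprod C D ?Z ?Ah = ?X" and qY: "qprod C D ?W ?Ah = ?Y" by (simp_all add: qprod_def)
  have Xo: "?X \<in> qobjs C D" using qprod_obj[OF a(1) Ah] qX by simp
  have Yo: "?Y \<in> qobjs C D" using qprod_obj[OF a(2) Ah] qY by simp
  have XP: "qprodrel C D Z0 A \<rho> (deq D A) \<in> dPr D (cprod C (cprod C Z0 A) (cprod C Z0 A))" using Xo pe_Pr by simp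
  have YP: "qprodrel C D W A \<omega> (deq D A) \<in> dPr D (cprod C (cprod C W A) (cprod C W A))" using Yo pe_Pr by simp
  obtain g0 where g0: "qpres C D ?Z ?W g0" "G = (?Z, ?W, qclass C D ?Z ?W g0)" using a(4) unfolding qhom by blast
  let ?g = "qrep G"
  have g: "qpres C D ?Z ?W ?g" using qrep_in[OF g0(1), of ?Z ?W] g0(2) by (simp add: qclass_mem)
  have gh: "?g \<in> cArr C" "cdom C ?g = Z0" "ccod C ?g = W" using g by (auto simp: qpres_unf hom_def)
  let ?r1 = "qrep (qpr1 C D ?Z ?Ah)"
  have r1: "?r1 \<in> qclass C D ?X ?Z (cpr1 C Z0 A)" using qrep_in[OF qpres_pr1[OF a(1) Ah]] qX by (simp add: qpr1_def)
  have r1p: "qpres C D ?X ?Z ?r1" "qrel C D ?X ?Z ?r1 (cpr1 C Z0 A)" using r1 by (auto simp: qclass_mem)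
  have r1h: "?r1 \<in> cArr C" "cdom C ?r1 = cprod C Z0 A" "ccod C ?r1 = Z0" using r1p by (auto simp: qpres_unf hom_def)
  have p1p: "qpres C D ?X ?Z (cpr1 C Z0 A)" using qpres_pr1[OF a(1) Ah] qX by simp
  have c1p: "qpres C D ?X ?W (ccomp C ?g ?r1)" using qpres_comp[OF Xo a(1) a(2) r1p(1) g] .
  have qc1: "qcomp C D G (qpr1 C D ?Z ?Ah) = (?X, ?W, qclass C D ?X ?W (ccomp C ?g ?r1))"
    unfolding qcomp_def using g0(2) qX by (simp add: qpr1_def)
  let ?c1 = "qrep (qcomp C D G (qpr1 C D ?Z ?Ah))"
  have c1: "?c1 \<in> qclass C D ?X ?W (ccomp C ?g ?r1)" unfolding qc1 by (rule qrep_in[OF c1p])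
  have c1r: "qpres C D ?X ?W ?c1" "qrel C D ?X ?W ?c1 (ccomp C ?g ?r1)" using c1 by (auto simp: qclass_mem)
  have gp1p: "qpres C D ?X ?W (ccomp C ?g (cpr1 C Z0 A))" using qpres_comp[OF Xo a(1) a(2) p1p g] .
  have rel1: "qrel C D ?X ?W (ccomp C ?g ?r1) (ccomp C ?g (cpr1 C Z0 A))"
    using qrel_comp[of "cprod C Z0 A" Z0 W "qprodrel C D Z0 A \<rho> (deq D A)" \<rho> \<omega> ?r1 "cpr1 C Z0 A" ?g ?g]
      r1p p1p g Xo XP o pe_Pr[OF o(2)] pe_Pr[OF o(4)] by (auto simp: qpres_unf)
  have c1rel: "qrel C D ?X ?W ?c1 (ccomp C ?g (cpr1 C Z0 A))"
    using qrel_trans[of "cprod C Z0 A" W "qprodrel C D Z0 A \<rho> (deq D A)" \<omega> ?c1 "ccomp C ?g ?r1" "ccomp C ?g (cpr1 C Z0 A)"]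
      c1r rel1 c1p gp1p Xo o by (auto simp: qpres_unf)
  have r2: "qrep (qpr2 C D ?Z ?Ah) = cpr2 C Z0 A" using qrep_qpr2_deq[OF a(1) a(3)] .
  have p2p: "qpres C D ?X ?Ah (cpr2 C Z0 A)" using qpres_pr2[OF a(1) Ah] qX by simp
  have ridA: "qrep (qid C D ?Ah) = cid C A"
  proof -
    have "qrep (qid C D ?Ah) \<in> qclass C D ?Ah ?Ah (cid C A)" unfolding qid_def using qrep_in[OF qpres_id[OF Ah]] by simp
    then have 1: "qpres C D ?Ah ?Ah (qrep (qid C D ?Ah))" "qrel C D ?Ah ?Ah (qrep (qid C D ?Ah)) (cid C A)" by (auto simp: qclass_mem)
    show ?thesis by (rule rep_deq[OF Ah a(3)]) (use 1 a(3) in \<open>auto simp: qpres_unf hom_def\<close>)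
  qed
  have qc2: "qcomp C D (qid C D ?Ah) (qpr2 C D ?Z ?Ah) = (?X, ?Ah, qclass C D ?X ?Ah (cpr2 C Z0 A))"
    unfolding qcomp_def using r2 ridA qX a(3) o by (simp add: qpr2_def qid_def)
  let ?c2 = "qrep (qcomp C D (qid C D ?Ah) (qpr2 C D ?Z ?Ah))"
  have c2: "?c2 \<in> qclass C D ?X ?Ah (cpr2 C Z0 A)" unfolding qc2 by (rule qrep_in[OF p2p])
  have c2e: "?c2 = cpr2 C Z0 A"
    by (rule rep_deq[OF Xo a(3)]) (use c2 a(3) p2p in \<open>auto simp: qclass_mem qpres_unf\<close>)
  have K: "ptimes (qcat C D) ?Z ?Ah G (qid C D ?Ah) = (?X, qprod C D ?W ?Ah, qclass C D ?X (qprod C D ?W ?Ah) (cpair C ?c1 ?c2))"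
    unfolding ptimes_def qcat_sel qpair_def Let_def using qc1 qc2 by simp
  have pp: "qpres C D ?X ?Y (cpair C ?c1 ?c2)"
    using qpres_pair[OF Xo a(2) Ah c1r(1)] p2p c2e qY by simp
  let ?k = "qrep (ptimes (qcat C D) ?Z ?Ah G (qid C D ?Ah))"
  have k: "?k \<in> qclass C D ?X ?Y (cpair C ?c1 ?c2)" unfolding K qY by (rule qrep_in[OF pp])
  have kr: "qpres C D ?X ?Y ?k" "qrel C D ?X ?Y ?k (cpair C ?c1 ?c2)" using k by (auto simp: qclass_mem)
  let ?t = "cpair C (ccomp C ?g (cpr1 C Z0 A)) (cpr2 C Z0 A)"
  have tp: "qpres C D ?X ?Y ?t" using qpres_pair[OF Xo a(2) Ah gp1p p2p] qY by simp
  have rel2: "qrel C D ?X ?Y (cpair C ?c1 ?c2) ?t"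
    using qrel_pair[of "cprod C Z0 A" W A "qprodrel C D Z0 A \<rho> (deq D A)" \<omega> "deq D A" ?c1 "ccomp C ?g (cpr1 C Z0 A)" ?c2 "cpr2 C Z0 A"]
      c1r c1rel gp1p p2p c2e Xo XP o a(3) pe_Pr[OF o(4)] qY by (auto simp: qpres_unf)
  have krel: "qrel C D ?X ?Y ?k ?t"
    using qrel_trans[of "cprod C Z0 A" "cprod C W A" "qprodrel C D Z0 A \<rho> (deq D A)" "qprodrel C D W A \<omega> (deq D A)" ?k "cpair C ?c1 ?c2" ?t]
      kr rel2 pp tp Xo Yo by (auto simp: qpres_unf)
  show ?thesis using K kr(1) krel tp g qX qY by simp
qed

lemma qpres_deqprod: "W0 \<in> cObj C \<Longrightarrow> A \<in> cObj C \<Longrightarrow> (B,\<sigma>) \<in> qobjs C D \<Longrightarrow> f \<in> hom C (cprod C W0 A) B \<Longrightarrow>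
  qpres C D (qprod C D (W0, deq D W0) (A, deq D A)) (B,\<sigma>) f"
proof -
  assume a: "W0 \<in> cObj C" "A \<in> cObj C" "(B,\<sigma>) \<in> qobjs C D" "f \<in> hom C (cprod C W0 A) B"
  have o: "B \<in> cObj C" "per_equiv C D B \<sigma>" using a by auto
  have sP: "\<sigma> \<in> dPr D (cprod C B B)" using pe_Pr[OF o(2)] .
  have fh: "f \<in> cArr C" "cdom C f = cprod C W0 A" "ccod C f = B" using a(4) by (auto simp: hom_def)
  let ?P = "cprod C W0 A"
  let ?Q = "cprod C ?P ?P"
  let ?x = "cpr1 C ?P ?P" and ?x' = "cpr2 C ?P ?P"
  let ?w = "ccomp C (cpr1 C W0 A) ?x" and ?v = "ccomp C (cpr2 C W0 A) ?x"
  let ?w' = "ccomp C (cpr1 C W0 A) ?x'" and ?v' = "ccomp C (cpr2 C W0 A) ?x'"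
  let ?d1 = "dre D (cpair C ?w ?w') (deq D W0)" and ?d2 = "dre D (cpair C ?v ?v') (deq D A)"
  have rel: "qprodrel C D W0 A (deq D W0) (deq D A) = pmeet D ?Q ?d1 ?d2" unfolding qprodrel_canon ..
  let ?\<pi>1 = "cpr1 C ?Q W0" and ?\<pi>2 = "cpr2 C ?Q W0"
  let ?\<phi>1 = "dre D (cpair C (ccomp C f (ccomp C ?x ?\<pi>1)) (ccomp C f (cpair C ?\<pi>2 (ccomp C ?v ?\<pi>1)))) \<sigma>"
  have s1: "dle D ?Q (pmeet D ?Q (dre D (cpair C (cid C ?Q) ?w) ?\<phi>1) ?d1) (dre D (cpair C (cid C ?Q) ?w') ?\<phi>1)"
    using leib[of ?Q W0 ?\<phi>1 "cid C ?Q" ?w ?w'] a fh sP by simp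
  have e1: "dre D (cpair C (cid C ?Q) ?w) ?\<phi>1 = dre D (cpair C (ccomp C f ?x) (ccomp C f ?x)) \<sigma>"
    "dre D (cpair C (cid C ?Q) ?w') ?\<phi>1 = dre D (cpair C (ccomp C f ?x) (ccomp C f (cpair C ?w' ?v))) \<sigma>"
    using a fh sP by simp_all
  have r1: "dle D ?Q (ptop D ?Q) (dre D (cpair C (ccomp C f ?x) (ccomp C f ?x)) \<sigma>)"
    using pe_refl[OF o(2,1), of "ccomp C f ?x"] a fh by simp
  let ?\<tau>1 = "cpr1 C ?Q A" and ?\<tau>2 = "cpr2 C ?Q A"
  let ?\<phi>2 = "dre D (cpair C (ccomp C f (ccomp C ?x ?\<tau>1)) (ccomp C f (cpair C (ccomp C ?w' ?\<tau>1) ?\<tau>2))) \<sigma>"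
  have s2: "dle D ?Q (pmeet D ?Q (dre D (cpair C (cid C ?Q) ?v) ?\<phi>2) ?d2) (dre D (cpair C (cid C ?Q) ?v') ?\<phi>2)"
    using leib[of ?Q A ?\<phi>2 "cid C ?Q" ?v ?v'] a fh sP by simp
  have e2: "dre D (cpair C (cid C ?Q) ?v) ?\<phi>2 = dre D (cpair C (ccomp C f ?x) (ccomp C f (cpair C ?w' ?v))) \<sigma>"
    "dre D (cpair C (cid C ?Q) ?v') ?\<phi>2 = dre D (cpair C (ccomp C f ?x) (ccomp C f ?x')) \<sigma>"
    using a fh sP by simp_all
  let ?m = "dre D (cpair C (ccomp C f ?x) (ccomp C f (cpair C ?w' ?v))) \<sigma>"
  have mP: "?m \<in> dPr D ?Q" using a fh sP by simp
  have d1P: "?d1 \<in> dPr D ?Q" and d2P: "?d2 \<in> dPr D ?Q" using a by simp_all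
  have t1: "dle D ?Q (pmeet D ?Q ?d1 ?d2) ?m"
  proof -
    have "dle D ?Q (pmeet D ?Q ?d1 ?d2) (pmeet D ?Q (dre D (cpair C (ccomp C f ?x) (ccomp C f ?x)) \<sigma>) ?d1)"
      by (rule le_meetI) (use a fh sP r1 le_trans[OF _ _ _ _ le_top r1] meet_le1 in \<open>simp_all\<close>)
    then show ?thesis using le_trans[OF _ _ _ _ _ s1[unfolded e1]] a fh sP by simp
  qed
  have t2: "dle D ?Q (pmeet D ?Q ?d1 ?d2) (pmeet D ?Q ?m ?d2)"
    using t1 a fh sP by (simp add: le_meetI meet_le2)
  have "dle D ?Q (pmeet D ?Q ?d1 ?d2) (dre D (cpair C (ccomp C f ?x) (ccomp C f ?x')) \<sigma>)"
    using le_trans[OF _ _ _ _ t2 s2[unfolded e2]] a fh sP by simp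
  then show ?thesis unfolding qpres_unf qprod_def qrel_unf rel fst_conv snd_conv using a(4) by simp
qed

lemma dir1: "A \<in> cObj C \<Longrightarrow> AC C D A \<Longrightarrow> AC (qcat C D) (qdoc C D) (A, deq D A)"
proof -
  assume A: "A \<in> cObj C" and ac: "AC C D A"
  have Ah: "(A, deq D A) \<in> qobjs C D" using A deq_pe by simp
  show ?thesis unfolding AC_def[of "qcat C D"] qcat_sel
  proof (intro ballI allI impI)
    fix Bh R W' ev'
    assume Bh: "Bh \<in> qobjs C D" and R: "R \<in> dPr (qdoc C D) (qprod C D (A, deq D A) Bh)"
      and we: "weak_eval (qcat C D) (A, deq D A) Bh W' ev'"
    obtain B \<sigma> where Bs: "Bh = (B,\<sigma>)" by (cases Bh)
    obtain W \<omega> where Ws: "W' = (W,\<omega>)" by (cases W')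
    have B: "(B,\<sigma>) \<in> qobjs C D" using Bh Bs by simp
    have Bo: "B \<in> cObj C" "per_equiv C D B \<sigma>" using B by auto
    have weu: "(W,\<omega>) \<in> qobjs C D" "ev' \<in> hom (qcat C D) (qprod C D (W,\<omega>) (A, deq D A)) (B,\<sigma>)"
      "\<forall>Z\<in>qobjs C D. \<forall>h\<in>hom (qcat C D) (qprod C D Z (A, deq D A)) (B,\<sigma>). \<exists>g\<in>hom (qcat C D) Z (W,\<omega>).
          h = qcomp C D ev' (ptimes (qcat C D) Z (A, deq D A) g (qid C D (A, deq D A)))"
      using we unfolding weak_eval_def Bs Ws qcat_sel by auto
    have Wo: "W \<in> cObj C" "per_equiv C D W \<omega>" using weu(1) by auto
    have R': "R \<in> dPr (qdoc C D) (qprod C D (A, deq D A) (B,\<sigma>))" using R Bs by simp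
    have Rd: "desc (cprod C A B) (qprodrel C D A B (deq D A) \<sigma>) R" using R' by (simp add: qdoc_Pr qprod_def)
    have RP: "R \<in> dPr D (cprod C A B)" using desc_Pr[OF Rd] .
    note rhs = RHS_id[OF A weu(1) B weu(2) R']
    let ?e = "qrep ev'"
    have ep: "qpres C D (qprod C D (W,\<omega>) (A, deq D A)) (B,\<sigma>) ?e" using rhs by simp
    have eh: "?e \<in> hom C (cprod C W A) B" using ep by (simp add: qpres_def qprod_def)
    obtain W0 ev0 where we0: "weak_eval C A B W0 ev0" using wcc A Bo unfolding weakly_cc_def by blast
    have W0: "W0 \<in> cObj C" "ev0 \<in> hom C (cprod C W0 A) B" using we0 unfolding weak_eval_def by auto
    have H1: "dle D (cterm C) (allL C D (cbang C A) (exL C D (cpr1 C A B) R))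
       (exL C D (cbang C W0) (allL C D (cpr1 C W0 A) (dre D (cpair C (cpr2 C W0 A) ev0) R)))"
      using ac A Bo RP we0 unfolding AC_def by blast
    let ?Zh = "(W0, deq D W0)"
    have Zh: "?Zh \<in> qobjs C D" using W0 deq_pe by simp
    let ?X = "(cprod C W0 A, qprodrel C D W0 A (deq D W0) (deq D A))"
    have qX: "qprod C D ?Zh (A, deq D A) = ?X" by (simp add: qprod_def)
    have Xo: "?X \<in> qobjs C D" using qprod_obj[OF Zh Ah] qX by simp
    have XP: "qprodrel C D W0 A (deq D W0) (deq D A) \<in> dPr D (cprod C (cprod C W0 A) (cprod C W0 A))" using Xo pe_Pr by simp
    have ev0p: "qpres C D ?X (B,\<sigma>) ev0" using qpres_deqprod[OF W0(1) A B W0(2)] qX by simp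
    let ?Hq = "(?X, (B,\<sigma>), qclass C D ?X (B,\<sigma>) ev0)"
    have Hq: "?Hq \<in> hom (qcat C D) (qprod C D ?Zh (A, deq D A)) (B,\<sigma>)"
      unfolding qhom qX using Xo B ev0p by blast
    obtain G where G: "G \<in> hom (qcat C D) ?Zh (W,\<omega>)"
       "?Hq = qcomp C D ev' (ptimes (qcat C D) ?Zh (A, deq D A) G (qid C D (A, deq D A)))"
      using weu(3) Zh Hq by blast
    note KL = K_lemma[OF Zh weu(1) A G(1)]
    let ?K = "ptimes (qcat C D) ?Zh (A, deq D A) G (qid C D (A, deq D A))"
    let ?k = "qrep ?K" and ?g = "qrep G"
    let ?t = "cpair C (ccomp C ?g (cpr1 C W0 A)) (cpr2 C W0 A)"
    let ?Y = "(cprod C W A, qprodrel C D W A \<omega> (deq D A))"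
    have qY: "qprod C D (W,\<omega>) (A, deq D A) = ?Y" by (simp add: qprod_def)
    have Yo: "?Y \<in> qobjs C D" using qprod_obj[OF weu(1) Ah] qY by simp
    have YP: "qprodrel C D W A \<omega> (deq D A) \<in> dPr D (cprod C (cprod C W A) (cprod C W A))" using Yo pe_Pr by simp
    have K1: "fst ?K = ?X" using KL qX by simp
    have gp: "qpres C D ?Zh (W,\<omega>) ?g" using KL by simp
    have gh: "?g \<in> hom C W0 W" using gp by (simp add: qpres_def)
    have kp: "qpres C D ?X ?Y ?k" and tp: "qpres C D ?X ?Y ?t" and kt: "qrel C D ?X ?Y ?k ?t"
      using KL qX qY by simp_all
    have ev'2: "fst (snd ev') = (B,\<sigma>)" using weu(2) by (simp add: hom_def)
    have cls: "qclass C D ?X (B,\<sigma>) ev0 = qclass C D ?X (B,\<sigma>) (ccomp C ?e ?k)"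
      using G(2) K1 ev'2 unfolding qcomp_def by simp
    have "ev0 \<in> qclass C D ?X (B,\<sigma>) (ccomp C ?e ?k)" using qclass_self[OF ev0p] cls by simp
    then have r1: "qrel C D ?X (B,\<sigma>) ev0 (ccomp C ?e ?k)" by (simp add: qclass_mem)
    have ep': "qpres C D ?Y (B,\<sigma>) ?e" using ep qY by simp
    have r2: "qrel C D ?X (B,\<sigma>) (ccomp C ?e ?k) (ccomp C ?e ?t)"
      using qrel_comp[of "cprod C W0 A" "cprod C W A" B "qprodrel C D W0 A (deq D W0) (deq D A)" "qprodrel C D W A \<omega> (deq D A)" \<sigma> ?k ?t ?e ?e]
        kp tp kt ep' A W0 Wo Bo XP YP pe_Pr[OF Bo(2)] by (simp add: qpres_unf)
    have ekp: "qpres C D ?X (B,\<sigma>) (ccomp C ?e ?k)" using qpres_comp[OF Xo Yo B kp ep'] .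
    have etp: "qpres C D ?X (B,\<sigma>) (ccomp C ?e ?t)" using qpres_comp[OF Xo Yo B tp ep'] .
    have r3: "qrel C D ?X (B,\<sigma>) ev0 (ccomp C ?e ?t)"
      using qrel_trans[of "cprod C W0 A" B "qprodrel C D W0 A (deq D W0) (deq D A)" \<sigma> ev0 "ccomp C ?e ?k" "ccomp C ?e ?t"]
        r1 r2 ev0p ekp etp Xo Bo by (simp add: qpres_unf)
    let ?Yr = "(cprod C A B, qprodrel C D A B (deq D A) \<sigma>)"
    have Yro: "?Yr \<in> qobjs C D" using qprod_obj[OF Ah B] by (simp add: qprod_def)
    have p2p: "qpres C D ?X (A, deq D A) (cpr2 C W0 A)" using qpres_pr2[OF Zh Ah] qX by simp
    have pr1: "qpres C D ?X ?Yr (cpair C (cpr2 C W0 A) ev0)" using qpres_pair[OF Xo Ah B p2p ev0p] by (simp add: qprod_def)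
    have pr2: "qpres C D ?X ?Yr (cpair C (cpr2 C W0 A) (ccomp C ?e ?t))" using qpres_pair[OF Xo Ah B p2p etp] by (simp add: qprod_def)
    have r4: "qrel C D ?X ?Yr (cpair C (cpr2 C W0 A) ev0) (cpair C (cpr2 C W0 A) (ccomp C ?e ?t))"
      using qrel_pair[of "cprod C W0 A" A B "qprodrel C D W0 A (deq D W0) (deq D A)" "deq D A" \<sigma> "cpr2 C W0 A" "cpr2 C W0 A" ev0 "ccomp C ?e ?t"]
        r3 p2p ev0p etp A Bo XP W0 pe_Pr[OF Bo(2)] by (simp add: qpres_unf qprod_def)
    have req: "dre D (cpair C (cpr2 C W0 A) ev0) R = dre D (cpair C (cpr2 C W0 A) (ccomp C ?e ?t)) R"
      using re_equiv[OF Xo Yro _ _ r4 Rd] pr1 pr2 by (simp add: qpres_unf)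
    have H2: "dle D (cterm C) (exL C D (cbang C W0) (allL C D (cpr1 C W0 A) (dre D (cpair C (cpr2 C W0 A) ev0) R)))
       (exL C D (cbang C W) (allL C D (cpr1 C W A) (dre D (cpair C (cpr2 C W A) ?e) R)))"
      by (rule transfer[OF W0(1) Wo(1) A Bo(1) RP W0(2) eh gh req])
    have fin: "dle D (cterm C) (allL C D (cbang C A) (exL C D (cpr1 C A B) R))
       (exL C D (cbang C W) (allL C D (cpr1 C W A) (dre D (cpair C (cpr2 C W A) ?e) R)))"
    proof (rule le_trans[OF _ _ _ _ H1 H2])
      show "cterm C \<in> cObj C" by simp
      show "allL C D (cbang C A) (exL C D (cpr1 C A B) R) \<in> dPr D (cterm C)"
        using allbang_char[OF A, of "exL C D (cpr1 C A B) R"] A Bo RP by simp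
      have "allL C D (cpr1 C W0 A) (dre D (cpair C (cpr2 C W0 A) ev0) R) \<in> dPr D W0"
        using W0 A Bo RP by (simp add: hom_def)
      then show "exL C D (cbang C W0) (allL C D (cpr1 C W0 A) (dre D (cpair C (cpr2 C W0 A) ev0) R)) \<in> dPr D (cterm C)"
        using exbang_char[OF W0(1)] by blast
      have "allL C D (cpr1 C W A) (dre D (cpair C (cpr2 C W A) ?e) R) \<in> dPr D W"
        using Wo A Bo RP eh by (simp add: hom_def)
      then show "exL C D (cbang C W) (allL C D (cpr1 C W A) (dre D (cpair C (cpr2 C W A) ?e) R)) \<in> dPr D (cterm C)"
        using exbang_char[OF Wo(1)] by blast
    qed
    show "dle (qdoc C D) (qterm C D)
        (allL (qcat C D) (qdoc C D) (qbang C D (A, deq D A)) (exL (qcat C D) (qdoc C D) (qpr1 C D (A, deq D A) Bh) R))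
        (exL (qcat C D) (qdoc C D) (qbang C D W') (allL (qcat C D) (qdoc C D) (qpr1 C D W' (A, deq D A))
          (dre (qdoc C D) (qpair C D (qpr2 C D W' (A, deq D A)) ev') R)))"
      using fin LHS_id[OF A B RP] rhs Bs Ws by (simp add: qterm_def)
  qed
qed

end



context WH begin

definition om :: "'o \<Rightarrow> 'o \<Rightarrow> 'o \<Rightarrow> 'a \<Rightarrow> 'p" where
  "om W A B ev = allL C D (cpr1 C (cprod C W W) A)
     (dre D (cpair C (ccomp C ev (cpair C (ccomp C (cpr1 C W W) (cpr1 C (cprod C W W) A)) (cpr2 C (cprod C W W) A)))
                     (ccomp C ev (cpair C (ccomp C (cpr2 C W W) (cpr1 C (cprod C W W) A)) (cpr2 C (cprod C W W) A)))) (deq D B))"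

lemma om_Pr: "W \<in> cObj C \<Longrightarrow> A \<in> cObj C \<Longrightarrow> B \<in> cObj C \<Longrightarrow> ev \<in> hom C (cprod C W A) B \<Longrightarrow>
  om W A B ev \<in> dPr D (cprod C W W)"
  unfolding om_def by (simp add: hom_def)

lemma om_elim: "W \<in> cObj C \<Longrightarrow> A \<in> cObj C \<Longrightarrow> B \<in> cObj C \<Longrightarrow> ev \<in> hom C (cprod C W A) B \<Longrightarrow>
  y \<in> cArr C \<Longrightarrow> y' \<in> cArr C \<Longrightarrow> a \<in> cArr C \<Longrightarrow> cdom C y' = cdom C y \<Longrightarrow> cdom C a = cdom C y \<Longrightarrow>
  ccod C y = W \<Longrightarrow> ccod C y' = W \<Longrightarrow> ccod C a = A \<Longrightarrow>
  dle D (cdom C y) (dre D (cpair C y y') (om W A B ev)) (dre D (cpair C (ccomp C ev (cpair C y a)) (ccomp C ev (cpair C y' a))) (deq D B))"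
proof -
  assume h: "W \<in> cObj C" "A \<in> cObj C" "B \<in> cObj C" "ev \<in> hom C (cprod C W A) B"
  "y \<in> cArr C" "y' \<in> cArr C" "a \<in> cArr C" "cdom C y' = cdom C y" "cdom C a = cdom C y"
  "ccod C y = W" "ccod C y' = W" "ccod C a = A"
  have e: "ev \<in> cArr C" "cdom C ev = cprod C W A" "ccod C ev = B" using h(4) by (auto simp: hom_def)
  let ?\<Phi> = "dre D (cpair C (ccomp C ev (cpair C (ccomp C (cpr1 C W W) (cpr1 C (cprod C W W) A)) (cpr2 C (cprod C W W) A)))
                     (ccomp C ev (cpair C (ccomp C (cpr2 C W W) (cpr1 C (cprod C W W) A)) (cpr2 C (cprod C W W) A)))) (deq D B)"
  have P: "?\<Phi> \<in> dPr D (cprod C (cprod C W W) A)" using h e by simp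
  show ?thesis unfolding om_def using all_elim[OF _ h(2) P, of "cpair C y y'" a] h e by simp
qed

lemma om_intro: "W \<in> cObj C \<Longrightarrow> A \<in> cObj C \<Longrightarrow> B \<in> cObj C \<Longrightarrow> ev \<in> hom C (cprod C W A) B \<Longrightarrow>
  y \<in> cArr C \<Longrightarrow> y' \<in> cArr C \<Longrightarrow> cdom C y' = cdom C y \<Longrightarrow> ccod C y = W \<Longrightarrow> ccod C y' = W \<Longrightarrow>
  \<psi> \<in> dPr D (cdom C y) \<Longrightarrow>
  dle D (cprod C (cdom C y) A) (dre D (cpr1 C (cdom C y) A) \<psi>)
    (dre D (cpair C (ccomp C ev (cpair C (ccomp C y (cpr1 C (cdom C y) A)) (cpr2 C (cdom C y) A)))
                    (ccomp C ev (cpair C (ccomp C y' (cpr1 C (cdom C y) A)) (cpr2 C (cdom C y) A)))) (deq D B)) \<Longrightarrow>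
  dle D (cdom C y) \<psi> (dre D (cpair C y y') (om W A B ev))"
proof -
  assume h: "W \<in> cObj C" "A \<in> cObj C" "B \<in> cObj C" "ev \<in> hom C (cprod C W A) B"
  "y \<in> cArr C" "y' \<in> cArr C" "cdom C y' = cdom C y" "ccod C y = W" "ccod C y' = W" "\<psi> \<in> dPr D (cdom C y)"
  and H: "dle D (cprod C (cdom C y) A) (dre D (cpr1 C (cdom C y) A) \<psi>)
    (dre D (cpair C (ccomp C ev (cpair C (ccomp C y (cpr1 C (cdom C y) A)) (cpr2 C (cdom C y) A)))
                    (ccomp C ev (cpair C (ccomp C y' (cpr1 C (cdom C y) A)) (cpr2 C (cdom C y) A)))) (deq D B))"
  have e: "ev \<in> cArr C" "cdom C ev = cprod C W A" "ccod C ev = B" using h(4) by (auto simp: hom_def)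
  let ?\<Phi> = "dre D (cpair C (ccomp C ev (cpair C (ccomp C (cpr1 C W W) (cpr1 C (cprod C W W) A)) (cpr2 C (cprod C W W) A)))
                     (ccomp C ev (cpair C (ccomp C (cpr2 C W W) (cpr1 C (cprod C W W) A)) (cpr2 C (cprod C W W) A)))) (deq D B)"
  have P: "?\<Phi> \<in> dPr D (cprod C (cprod C W W) A)" using h e by simp
  show ?thesis unfolding om_def using all_intro[OF _ h(2) P, of "cpair C y y'" \<psi>] h e H by simp
qed

lemma om_pe: "W \<in> cObj C \<Longrightarrow> A \<in> cObj C \<Longrightarrow> B \<in> cObj C \<Longrightarrow> ev \<in> hom C (cprod C W A) B \<Longrightarrow>
  per_equiv C D W (om W A B ev)"
proof -
  assume h: "W \<in> cObj C" "A \<in> cObj C" "B \<in> cObj C" "ev \<in> hom C (cprod C W A) B"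
  have e: "ev \<in> cArr C" "cdom C ev = cprod C W A" "ccod C ev = B" using h(4) by (auto simp: hom_def)
  note oP = om_Pr[OF h]
  show ?thesis
  proof (rule pe_intro[OF h(1) oP])
    fix y assume y: "y \<in> cArr C" "ccod C y = W"
    let ?t = "ccomp C ev (cpair C (ccomp C y (cpr1 C (cdom C y) A)) (cpr2 C (cdom C y) A))"
    have "dle D (cdom C ?t) (ptop D (cdom C ?t)) (dre D (cpair C ?t ?t) (deq D B))"
      by (rule eq_refl) (use y h e in simp_all)
    then show "dle D (cdom C y) (ptop D (cdom C y)) (dre D (cpair C y y) (om W A B ev))"
      using om_intro[OF h y(1) y(1) refl y(2) y(2), of "ptop D (cdom C y)"] y h e by simp
  next
    fix y y' assume y: "y \<in> cArr C" "y' \<in> cArr C" "cdom C y' = cdom C y" "ccod C y = W" "ccod C y' = W"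
    let ?X = "cdom C y"
    let ?p1 = "cpr1 C ?X A" and ?p2 = "cpr2 C ?X A"
    let ?t = "ccomp C ev (cpair C (ccomp C y ?p1) ?p2)" and ?t' = "ccomp C ev (cpair C (ccomp C y' ?p1) ?p2)"
    have 1: "dle D (cprod C ?X A) (dre D (cpair C (ccomp C y ?p1) (ccomp C y' ?p1)) (om W A B ev)) (dre D (cpair C ?t ?t') (deq D B))"
      using om_elim[OF h, of "ccomp C y ?p1" "ccomp C y' ?p1" ?p2] y h e by simp
    have 2: "dle D (cprod C ?X A) (dre D (cpair C ?t ?t') (deq D B)) (dre D (cpair C ?t' ?t) (deq D B))"
      using eq_sym[of ?t ?t' B] y h e by simp
    have 3: "dle D (cprod C ?X A) (dre D ?p1 (dre D (cpair C y y') (om W A B ev))) (dre D (cpair C ?t' ?t) (deq D B))"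
      using le_trans[OF _ _ _ _ 1 2] y h e oP by simp
    show "dle D (cdom C y) (dre D (cpair C y y') (om W A B ev)) (dre D (cpair C y' y) (om W A B ev))"
      using om_intro[OF h y(2) y(1) _ y(5) y(4), of "dre D (cpair C y y') (om W A B ev)"] 3 y h e oP by simp
  next
    fix y1 y2 y3 assume y: "y1 \<in> cArr C" "y2 \<in> cArr C" "y3 \<in> cArr C"
      "cdom C y2 = cdom C y1" "cdom C y3 = cdom C y1" "ccod C y1 = W" "ccod C y2 = W" "ccod C y3 = W"
    let ?X = "cdom C y1"
    let ?p1 = "cpr1 C ?X A" and ?p2 = "cpr2 C ?X A"
    let ?t1 = "ccomp C ev (cpair C (ccomp C y1 ?p1) ?p2)" and ?t2 = "ccomp C ev (cpair C (ccomp C y2 ?p1) ?p2)"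
      and ?t3 = "ccomp C ev (cpair C (ccomp C y3 ?p1) ?p2)"
    let ?XA = "cprod C ?X A"
    have 1: "dle D ?XA (dre D (cpair C (ccomp C y1 ?p1) (ccomp C y2 ?p1)) (om W A B ev)) (dre D (cpair C ?t1 ?t2) (deq D B))"
      using om_elim[OF h, of "ccomp C y1 ?p1" "ccomp C y2 ?p1" ?p2] y h e by simp
    have 2: "dle D ?XA (dre D (cpair C (ccomp C y2 ?p1) (ccomp C y3 ?p1)) (om W A B ev)) (dre D (cpair C ?t2 ?t3) (deq D B))"
      using om_elim[OF h, of "ccomp C y2 ?p1" "ccomp C y3 ?p1" ?p2] y h e by simp
    have 3: "dle D ?XA (pmeet D ?XA (dre D (cpair C ?t1 ?t2) (deq D B)) (dre D (cpair C ?t2 ?t3) (deq D B))) (dre D (cpair C ?t1 ?t3) (deq D B))"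
      using eq_trans[of ?t1 ?t2 ?t3 B] y h e by simp
    have 4: "dle D ?XA (pmeet D ?XA (dre D (cpair C (ccomp C y1 ?p1) (ccomp C y2 ?p1)) (om W A B ev)) (dre D (cpair C (ccomp C y2 ?p1) (ccomp C y3 ?p1)) (om W A B ev)))
       (dre D (cpair C ?t1 ?t3) (deq D B))"
      by (rule le_trans[OF _ _ _ _ meet_mono[OF _ _ _ _ _ 1 2] 3]) (use y h e oP in simp_all)
    show "dle D ?X (pmeet D ?X (dre D (cpair C y1 y2) (om W A B ev)) (dre D (cpair C y2 y3) (om W A B ev))) (dre D (cpair C y1 y3) (om W A B ev))"
      using om_intro[OF h y(1) y(3) y(5) y(6) y(8), of "pmeet D ?X (dre D (cpair C y1 y2) (om W A B ev)) (dre D (cpair C y2 y3) (om W A B ev))"] 4 y h e oP by simp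
  qed
qed

lemma ev_pres: "W \<in> cObj C \<Longrightarrow> A \<in> cObj C \<Longrightarrow> B \<in> cObj C \<Longrightarrow> ev \<in> hom C (cprod C W A) B \<Longrightarrow>
  qpres C D (qprod C D (W, om W A B ev) (A, deq D A)) (B, deq D B) ev"
proof -
  assume h: "W \<in> cObj C" "A \<in> cObj C" "B \<in> cObj C" "ev \<in> hom C (cprod C W A) B"
  have e: "ev \<in> cArr C" "cdom C ev = cprod C W A" "ccod C ev = B" using h(4) by (auto simp: hom_def)
  note oP = om_Pr[OF h]
  let ?P = "cprod C W A"
  let ?Q = "cprod C ?P ?P"
  let ?x = "cpr1 C ?P ?P" and ?x' = "cpr2 C ?P ?P"
  let ?w = "ccomp C (cpr1 C W A) ?x" and ?v = "ccomp C (cpr2 C W A) ?x"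
  let ?w' = "ccomp C (cpr1 C W A) ?x'" and ?v' = "ccomp C (cpr2 C W A) ?x'"
  let ?d1 = "dre D (cpair C ?w ?w') (om W A B ev)" and ?d2 = "dre D (cpair C ?v ?v') (deq D A)"
  have rel: "qprodrel C D W A (om W A B ev) (deq D A) = pmeet D ?Q ?d1 ?d2" unfolding qprodrel_canon ..
  let ?m = "dre D (cpair C (ccomp C ev ?x) (ccomp C ev (cpair C ?w' ?v))) (deq D B)"
  have s1: "dle D ?Q ?d1 ?m" using om_elim[OF h, of ?w ?w' ?v] h e by simp
  let ?\<tau>1 = "cpr1 C ?Q A" and ?\<tau>2 = "cpr2 C ?Q A"
  let ?\<phi>2 = "dre D (cpair C (ccomp C ev (ccomp C ?x ?\<tau>1)) (ccomp C ev (cpair C (ccomp C ?w' ?\<tau>1) ?\<tau>2))) (deq D B)"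
  have s2: "dle D ?Q (pmeet D ?Q (dre D (cpair C (cid C ?Q) ?v) ?\<phi>2) ?d2) (dre D (cpair C (cid C ?Q) ?v') ?\<phi>2)"
    using leib[of ?Q A ?\<phi>2 "cid C ?Q" ?v ?v'] h e by simp
  have e2: "dre D (cpair C (cid C ?Q) ?v) ?\<phi>2 = ?m"
    "dre D (cpair C (cid C ?Q) ?v') ?\<phi>2 = dre D (cpair C (ccomp C ev ?x) (ccomp C ev ?x')) (deq D B)"
    using h e by simp_all
  have mP: "?m \<in> dPr D ?Q" using h e by simp
  have t2: "dle D ?Q (pmeet D ?Q ?d1 ?d2) (pmeet D ?Q ?m ?d2)"
    by (rule meet_mono[OF _ _ _ _ _ s1]) (use h e oP in simp_all)
  have "dle D ?Q (pmeet D ?Q ?d1 ?d2) (dre D (cpair C (ccomp C ev ?x) (ccomp C ev ?x')) (deq D B))"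
    using le_trans[OF _ _ _ _ t2 s2[unfolded e2]] h e oP by simp
  then show ?thesis unfolding qpres_unf qprod_def qrel_unf rel fst_conv snd_conv using h(4) by simp
qed

lemma g_pres: "W \<in> cObj C \<Longrightarrow> A \<in> cObj C \<Longrightarrow> B \<in> cObj C \<Longrightarrow> ev \<in> hom C (cprod C W A) B \<Longrightarrow>
  (Z0,\<rho>) \<in> qobjs C D \<Longrightarrow> g \<in> hom C Z0 W \<Longrightarrow>
  qpres C D (qprod C D (Z0,\<rho>) (A, deq D A)) (B, deq D B) (ccomp C ev (cpair C (ccomp C g (cpr1 C Z0 A)) (cpr2 C Z0 A))) \<Longrightarrow>
  qpres C D (Z0,\<rho>) (W, om W A B ev) g"
proof -
  assume h: "W \<in> cObj C" "A \<in> cObj C" "B \<in> cObj C" "ev \<in> hom C (cprod C W A) B"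
    and Z: "(Z0,\<rho>) \<in> qobjs C D" and g: "g \<in> hom C Z0 W"
    and hp: "qpres C D (qprod C D (Z0,\<rho>) (A, deq D A)) (B, deq D B) (ccomp C ev (cpair C (ccomp C g (cpr1 C Z0 A)) (cpr2 C Z0 A)))"
  have e: "ev \<in> cArr C" "cdom C ev = cprod C W A" "ccod C ev = B" using h(4) by (auto simp: hom_def)
  have gg: "g \<in> cArr C" "cdom C g = Z0" "ccod C g = W" using g by (auto simp: hom_def)
  have Zo: "Z0 \<in> cObj C" "per_equiv C D Z0 \<rho>" using Z by auto
  have rP: "\<rho> \<in> dPr D (cprod C Z0 Z0)" using pe_Pr[OF Zo(2)] .
  let ?h0 = "ccomp C ev (cpair C (ccomp C g (cpr1 C Z0 A)) (cpr2 C Z0 A))"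
  have h0: "?h0 \<in> hom C (cprod C Z0 A) B" "qrel C D (cprod C Z0 A, qprodrel C D Z0 A \<rho> (deq D A)) (B, deq D B) ?h0 ?h0"
    using hp by (simp_all add: qpres_unf qprod_def)
  let ?ZZ = "cprod C Z0 Z0"
  let ?q = "cpr1 C ?ZZ A" and ?a = "cpr2 C ?ZZ A"
  let ?x = "cpair C (ccomp C (cpr1 C Z0 Z0) ?q) ?a" and ?x' = "cpair C (ccomp C (cpr2 C Z0 Z0) ?q) ?a"
  let ?E = "cprod C ?ZZ A"
  have QP: "qprodrel C D Z0 A \<rho> (deq D A) \<in> dPr D (cprod C (cprod C Z0 A) (cprod C Z0 A))" using Zo h rP by simp
  have 1: "dle D ?E (dre D (cpair C ?x ?x') (qprodrel C D Z0 A \<rho> (deq D A))) (dre D (cpair C (ccomp C ?h0 ?x) (ccomp C ?h0 ?x')) (deq D B))"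
    using qrel_gen[OF _ h(3) QP _ h0(1) h0(1) h0(2), of ?x ?x'] Zo h e gg by simp
  have 2: "dre D (cpair C ?x ?x') (qprodrel C D Z0 A \<rho> (deq D A)) = pmeet D ?E (dre D ?q \<rho>) (dre D (cpair C ?a ?a) (deq D A))"
    using qprodrel_gen[OF Zo(1) h(2) rP _ , of "deq D A" ?x ?x'] Zo h by simp
  have 3: "dle D ?E (ptop D ?E) (dre D (cpair C ?a ?a) (deq D A))" using eq_refl[of ?a A] Zo h by simp
  have 4: "dle D ?E (dre D ?q \<rho>) (pmeet D ?E (dre D ?q \<rho>) (dre D (cpair C ?a ?a) (deq D A)))"
    by (rule le_meetI) (use Zo h rP 3 le_trans[OF _ _ _ _ le_top 3] in simp_all)
  have 5: "dle D ?E (dre D ?q \<rho>) (dre D (cpair C (ccomp C ?h0 ?x) (ccomp C ?h0 ?x')) (deq D B))"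
    using le_trans[OF _ _ _ _ 4 1[unfolded 2]] Zo h e gg rP by simp
  have 6: "dle D ?ZZ \<rho> (dre D (cpair C (ccomp C g (cpr1 C Z0 Z0)) (ccomp C g (cpr2 C Z0 Z0))) (om W A B ev))"
    using om_intro[OF h, of "ccomp C g (cpr1 C Z0 Z0)" "ccomp C g (cpr2 C Z0 Z0)" \<rho>] 5 Zo h e gg rP by simp
  show ?thesis unfolding qpres_unf qrel_unf using 6 g by simp
qed

lemma desc_prod_deq: "A \<in> cObj C \<Longrightarrow> B \<in> cObj C \<Longrightarrow> R \<in> dPr D (cprod C A B) \<Longrightarrow>
  desc (cprod C A B) (qprodrel C D A B (deq D A) (deq D B)) R"
proof -
  assume a: "A \<in> cObj C" "B \<in> cObj C" "R \<in> dPr D (cprod C A B)"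
  let ?P = "cprod C A B"
  have Po: "(?P, deq D ?P) \<in> qobjs C D" using a deq_pe by simp
  have "qpres C D (qprod C D (A, deq D A) (B, deq D B)) (?P, deq D ?P) (cid C ?P)"
    by (rule qpres_deqprod) (use a Po in \<open>simp_all add: hom_def\<close>)
  then have 1: "dle D (cprod C ?P ?P) (qprodrel C D A B (deq D A) (deq D B)) (deq D ?P)"
    using a by (simp add: qpres_unf qprod_def qrel_unf)
  have 2: "dle D (cprod C ?P ?P) (pmeet D (cprod C ?P ?P) (dre D (cpr1 C ?P ?P) R) (deq D ?P)) (dre D (cpr2 C ?P ?P) R)"
    using desc_deq[of ?P R] a unfolding desc_def by simp
  have "dle D (cprod C ?P ?P) (pmeet D (cprod C ?P ?P) (dre D (cpr1 C ?P ?P) R) (qprodrel C D A B (deq D A) (deq D B))) (dre D (cpr2 C ?P ?P) R)"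
    by (rule le_trans[OF _ _ _ _ meet_mono[OF _ _ _ _ _ le_refl 1] 2]) (use a in simp_all)
  then show ?thesis unfolding desc_def using a by simp
qed

lemma dir2: "A \<in> cObj C \<Longrightarrow> AC (qcat C D) (qdoc C D) (A, deq D A) \<Longrightarrow> AC C D A"
proof -
  assume A: "A \<in> cObj C" and acq: "AC (qcat C D) (qdoc C D) (A, deq D A)"
  have Ah: "(A, deq D A) \<in> qobjs C D" using A deq_pe by simp
  show ?thesis unfolding AC_def[of C]
  proof (intro ballI allI impI)
    fix B R W ev assume B: "B \<in> cObj C" and RP: "R \<in> dPr D (cprod C A B)" and we: "weak_eval C A B W ev"
    have W: "W \<in> cObj C" "ev \<in> hom C (cprod C W A) B" using we unfolding weak_eval_def by auto
    have weC: "\<forall>Z\<in>cObj C. \<forall>h\<in>hom C (cprod C Z A) B. \<exists>g\<in>hom C Z W. h = ccomp C ev (ptimes C Z A g (cid C A))"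
      using we unfolding weak_eval_def by auto
    have eh: "ev \<in> cArr C" "cdom C ev = cprod C W A" "ccod C ev = B" using W(2) by (auto simp: hom_def)
    let ?\<omega> = "om W A B ev"
    have Wh: "(W, ?\<omega>) \<in> qobjs C D" using om_pe[OF W(1) A B W(2)] W by simp
    have Bh: "(B, deq D B) \<in> qobjs C D" using B deq_pe by simp
    let ?X = "(cprod C W A, qprodrel C D W A ?\<omega> (deq D A))"
    have qX: "qprod C D (W, ?\<omega>) (A, deq D A) = ?X" by (simp add: qprod_def)
    have Xo: "?X \<in> qobjs C D" using qprod_obj[OF Wh Ah] qX by simp
    have XP: "qprodrel C D W A ?\<omega> (deq D A) \<in> dPr D (cprod C (cprod C W A) (cprod C W A))" using Xo pe_Pr by simp
    have evp: "qpres C D ?X (B, deq D B) ev" using ev_pres[OF W(1) A B W(2)] qX by simp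
    let ?ev' = "(?X, (B, deq D B), qclass C D ?X (B, deq D B) ev)"
    have ev'h: "?ev' \<in> hom (qcat C D) (qprod C D (W, ?\<omega>) (A, deq D A)) (B, deq D B)"
      unfolding qhom qX using Xo Bh evp by blast
    let ?e = "qrep ?ev'"
    have e: "?e \<in> qclass C D ?X (B, deq D B) ev" by (rule qrep_in[OF evp])
    have ep: "qpres C D ?X (B, deq D B) ?e" "qrel C D ?X (B, deq D B) ?e ev" using e by (auto simp: qclass_mem)
    have BP: "deq D B \<in> dPr D (cprod C B B)" using B by simp
    have ev_e: "qrel C D ?X (B, deq D B) ev ?e"
      using qrel_sym[of "cprod C W A" B "qprodrel C D W A ?\<omega> (deq D A)" "deq D B" ?e ev] ep evp Xo Bh W A B
      by (simp add: qpres_unf)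
    have weq: "weak_eval (qcat C D) (A, deq D A) (B, deq D B) (W, ?\<omega>) ?ev'"
      unfolding weak_eval_def qcat_sel
    proof (intro conjI ballI)
      show "(W, ?\<omega>) \<in> qobjs C D" by (rule Wh)
      show "?ev' \<in> hom (qcat C D) (qprod C D (W, ?\<omega>) (A, deq D A)) (B, deq D B)" by (rule ev'h)
    next
      fix Z H assume Z: "Z \<in> qobjs C D" and H: "H \<in> hom (qcat C D) (qprod C D Z (A, deq D A)) (B, deq D B)"
      obtain Z0 \<rho> where Zs: "Z = (Z0, \<rho>)" by (cases Z)
      have Z': "(Z0,\<rho>) \<in> qobjs C D" using Z Zs by simp
      have Zo: "Z0 \<in> cObj C" "per_equiv C D Z0 \<rho>" using Z' by auto
      let ?XZ = "(cprod C Z0 A, qprodrel C D Z0 A \<rho> (deq D A))"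
      have qXZ: "qprod C D (Z0,\<rho>) (A, deq D A) = ?XZ" by (simp add: qprod_def)
      have XZo: "?XZ \<in> qobjs C D" using qprod_obj[OF Z' Ah] qXZ by simp
      have XZP: "qprodrel C D Z0 A \<rho> (deq D A) \<in> dPr D (cprod C (cprod C Z0 A) (cprod C Z0 A))" using XZo pe_Pr by simp
      obtain h0 where h0: "qpres C D ?XZ (B, deq D B) h0" "H = (?XZ, (B, deq D B), qclass C D ?XZ (B, deq D B) h0)"
        using H unfolding qhom Zs qXZ by blast
      have h0h: "h0 \<in> hom C (cprod C Z0 A) B" using h0(1) by (simp add: qpres_unf)
      obtain g where g: "g \<in> hom C Z0 W" "h0 = ccomp C ev (ptimes C Z0 A g (cid C A))"
        using weC Zo h0h by blast
      have gg: "g \<in> cArr C" "cdom C g = Z0" "ccod C g = W" using g(1) by (auto simp: hom_def)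
      let ?tz = "cpair C (ccomp C g (cpr1 C Z0 A)) (cpr2 C Z0 A)"
      have h0e: "h0 = ccomp C ev ?tz" using g(2) gg A Zo by (simp add: ptimes_def)
      have gp: "qpres C D (Z0,\<rho>) (W, ?\<omega>) g"
        using g_pres[OF W(1) A B W(2) Z' g(1)] h0(1) h0e qXZ by simp
      let ?G = "((Z0,\<rho>), (W, ?\<omega>), qclass C D (Z0,\<rho>) (W, ?\<omega>) g)"
      have Gh: "?G \<in> hom (qcat C D) (Z0,\<rho>) (W, ?\<omega>)" unfolding qhom using Z' Wh gp by blast
      note KL = K_lemma[OF Z' Wh A Gh]
      let ?K = "ptimes (qcat C D) (Z0,\<rho>) (A, deq D A) ?G (qid C D (A, deq D A))"
      let ?k = "qrep ?K" and ?gr = "qrep ?G"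
      let ?t = "cpair C (ccomp C ?gr (cpr1 C Z0 A)) (cpr2 C Z0 A)"
      have K1: "fst ?K = ?XZ" using KL qXZ by simp
      have kp: "qpres C D ?XZ ?X ?k" using KL[THEN conjunct2, THEN conjunct2, THEN conjunct1] unfolding qXZ qX .
      have kt: "qrel C D ?XZ ?X ?k ?t" using KL[THEN conjunct2, THEN conjunct2, THEN conjunct2, THEN conjunct2] unfolding qXZ qX .
      have gr: "?gr \<in> qclass C D (Z0,\<rho>) (W, ?\<omega>) g" by (rule qrep_in[OF gp])
      have grp: "qpres C D (Z0,\<rho>) (W, ?\<omega>) ?gr" "qrel C D (Z0,\<rho>) (W, ?\<omega>) ?gr g" using gr by (auto simp: qclass_mem)
      have p1p: "qpres C D ?XZ (Z0,\<rho>) (cpr1 C Z0 A)" using qpres_pr1[OF Z' Ah] qXZ by simp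
      have p2p: "qpres C D ?XZ (A, deq D A) (cpr2 C Z0 A)" using qpres_pr2[OF Z' Ah] qXZ by simp
      have gp1: "qpres C D ?XZ (W, ?\<omega>) (ccomp C g (cpr1 C Z0 A))" using qpres_comp[OF XZo Z' Wh p1p gp] .
      have grp1: "qpres C D ?XZ (W, ?\<omega>) (ccomp C ?gr (cpr1 C Z0 A))" using qpres_comp[OF XZo Z' Wh p1p grp(1)] .
      have t0p: "qpres C D ?XZ ?X ?tz" using qpres_pair[OF XZo Wh Ah gp1 p2p] qX by simp
      have tp: "qpres C D ?XZ ?X ?t" using qpres_pair[OF XZo Wh Ah grp1 p2p] qX by simp
      have oP: "?\<omega> \<in> dPr D (cprod C W W)" using om_Pr[OF W(1) A B W(2)] .
      have rP: "\<rho> \<in> dPr D (cprod C Z0 Z0)" using pe_Pr[OF Zo(2)] .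
      have c1: "qrel C D ?XZ (W, ?\<omega>) (ccomp C ?gr (cpr1 C Z0 A)) (ccomp C g (cpr1 C Z0 A))"
        using qrel_comp[of "cprod C Z0 A" Z0 W "qprodrel C D Z0 A \<rho> (deq D A)" \<rho> ?\<omega> "cpr1 C Z0 A" "cpr1 C Z0 A" ?gr g]
          p1p grp gp XZP oP rP Zo W A by (simp add: qpres_unf)
      have tt0: "qrel C D ?XZ ?X ?t ?tz"
        using qrel_pair[of "cprod C Z0 A" W A "qprodrel C D Z0 A \<rho> (deq D A)" ?\<omega> "deq D A"
            "ccomp C ?gr (cpr1 C Z0 A)" "ccomp C g (cpr1 C Z0 A)" "cpr2 C Z0 A" "cpr2 C Z0 A"]
          c1 grp1 gp1 p2p XZP oP Zo W A qX by (simp add: qpres_unf)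
      have kt0: "qrel C D ?XZ ?X ?k ?tz"
        using qrel_trans[of "cprod C Z0 A" "cprod C W A" "qprodrel C D Z0 A \<rho> (deq D A)" "qprodrel C D W A ?\<omega> (deq D A)" ?k ?t ?tz]
          kt tt0 kp tp t0p XZo Xo by (simp add: qpres_unf)
      have t0k: "qrel C D ?XZ ?X ?tz ?k"
        using qrel_sym[of "cprod C Z0 A" "cprod C W A" "qprodrel C D Z0 A \<rho> (deq D A)" "qprodrel C D W A ?\<omega> (deq D A)" ?k ?tz]
          kt0 kp t0p XZo Xo by (simp add: qpres_unf)
      have rr: "qrel C D ?XZ (B, deq D B) (ccomp C ev ?tz) (ccomp C ?e ?k)"
        using qrel_comp[of "cprod C Z0 A" "cprod C W A" B "qprodrel C D Z0 A \<rho> (deq D A)" "qprodrel C D W A ?\<omega> (deq D A)" "deq D B" ?tz ?k ev ?e]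
          t0k ev_e t0p kp evp ep XZP XP Zo W A B by (simp add: qpres_unf)
      have ekp: "qpres C D ?XZ (B, deq D B) (ccomp C ?e ?k)" using qpres_comp[OF XZo Xo Bh kp ep(1)] .
      have cls: "qclass C D ?XZ (B, deq D B) h0 = qclass C D ?XZ (B, deq D B) (ccomp C ?e ?k)"
        using qclass_eq[OF XZo Bh h0(1) ekp] rr h0e by simp
      have "H = qcomp C D ?ev' ?K"
        unfolding qcomp_def using h0(2) K1 cls by simp
      then show "\<exists>G\<in>hom (qcat C D) Z (W, ?\<omega>). H = qcomp C D ?ev' (ptimes (qcat C D) Z (A, deq D A) G (qid C D (A, deq D A)))"
        using Gh Zs by blast
    qed
    have Rd: "desc (cprod C A B) (qprodrel C D A B (deq D A) (deq D B)) R" using desc_prod_deq[OF A B RP] .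
    have Rq: "R \<in> dPr (qdoc C D) (qprod C D (A, deq D A) (B, deq D B))" using Rd by (simp add: qdoc_Pr qprod_def)
    have I: "dle (qdoc C D) (qterm C D)
        (allL (qcat C D) (qdoc C D) (qbang C D (A, deq D A)) (exL (qcat C D) (qdoc C D) (qpr1 C D (A, deq D A) (B, deq D B)) R))
        (exL (qcat C D) (qdoc C D) (qbang C D (W, ?\<omega>)) (allL (qcat C D) (qdoc C D) (qpr1 C D (W, ?\<omega>) (A, deq D A))
          (dre (qdoc C D) (qpair C D (qpr2 C D (W, ?\<omega>) (A, deq D A)) ?ev') R)))"
      using acq[unfolded AC_def qcat_sel] Bh Rq weq by blast
    note rhs = RHS_id[OF A Wh Bh ev'h Rq]
    let ?Y = "(cprod C A B, qprodrel C D A B (deq D A) (deq D B))"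
    have Yo: "?Y \<in> qobjs C D" using qprod_obj[OF Ah Bh] by (simp add: qprod_def)
    have p2p: "qpres C D ?X (A, deq D A) (cpr2 C W A)" using qpres_pr2[OF Wh Ah] qX by simp
    have pe: "qpres C D ?X ?Y (cpair C (cpr2 C W A) ?e)" using qpres_pair[OF Xo Ah Bh p2p ep(1)] by (simp add: qprod_def)
    have pv: "qpres C D ?X ?Y (cpair C (cpr2 C W A) ev)" using qpres_pair[OF Xo Ah Bh p2p evp] by (simp add: qprod_def)
    have r4: "qrel C D ?X ?Y (cpair C (cpr2 C W A) ?e) (cpair C (cpr2 C W A) ev)"
      using qrel_pair[of "cprod C W A" A B "qprodrel C D W A ?\<omega> (deq D A)" "deq D A" "deq D B" "cpr2 C W A" "cpr2 C W A" ?e ev]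
        ep p2p evp XP A B W by (simp add: qpres_unf qprod_def)
    have req: "dre D (cpair C (cpr2 C W A) ?e) R = dre D (cpair C (cpr2 C W A) ev) R"
      using re_equiv[OF Xo Yo _ _ r4 Rd] pe pv by (simp add: qpres_unf)
    show "dle D (cterm C) (allL C D (cbang C A) (exL C D (cpr1 C A B) R))
       (exL C D (cbang C W) (allL C D (cpr1 C W A) (dre D (cpair C (cpr2 C W A) ev) R)))"
      using I LHS_id[OF A Bh RP] rhs req by (simp add: qterm_def)
  qed
qed

theorem main: "A \<in> cObj C \<Longrightarrow> AC C D A \<longleftrightarrow> AC (qcat C D) (qdoc C D) (A, deq D A)"
  using dir1 dir2 by blast

end


theorem proposition3p12:
  fixes C :: "('o,'a) cat" and D :: "('o,'a,'p) doctrine" and A :: 'o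
  assumes "weak_hyperdoctrine C D"
    and "comprehensive_diagonals C D"
    and "A \<in> cObj C"
  shows "AC C D A \<longleftrightarrow> AC (qcat C D) (qdoc C D) (A, deq D A)"
proof -
  interpret WH C D using assms(1,2) by unfold_locales
  show ?thesis using main[OF assms(3)] .
qed

end
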